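(* (i) $\boldsymbol{\beta}_G\circ\boldsymbol{\beta}_G=0$. (ii) For all homogeneous $[a],[b]\in\mathrm{H}^*(G,\mathbb{F}_pG)$, with the cup product taken with respect to the pairing given by the multiplication $\mu$ of $\mathbb{F}_pG$, $$\boldsymbol{\beta}_G([a]\cup[b])=\boldsymbol{\beta}_G([a])\cup[b]+(-1)^{\deg[a]}[a]\cup\boldsymbol{\beta}_G([b]).$$ In particular $\mathrm{H}^*(G,\mathbb{F}_pG)$ is a DG-algebra with differential $\boldsymbol{\beta}_G$. (iii) For any field $k$ of characteristic $p$ there is a $k$-linear map $\boldsymbol{\beta}_G:\mathrm{H}^r(G,kG)\to\mathrm{H}^{r+1}(G,kG)$ (for all $r\ge0$), namely $\boldsymbol{\beta}_G(\gamma_i([f_i]))=\gamma_i(\beta_{G_i}([f_i]))$ for $[f_i]\in\mathrm{H}^*(G_i,k)$, which is a differential and satisfies the graded Leibniz rule, so that $\mathrm{H}^*(G,kG)$ is also a DG-algebra.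
   Context: Let $G$ be a finite group, $p$ a prime dividing $|G|$, $\mathbb{F}_p$ the field with $p$ elements; $G$ acts on its group algebras by conjugation. $\boldsymbol{\beta}_G:\mathrm{H}^r(G,\mathbb{F}_pG)\to\mathrm{H}^{r+1}(G,\mathbb{F}_pG)$ is the connecting homomorphism of the short exact sequence of $\mathbb{Z}G$-modules $0\to\mathbb{F}_pG\to\mathbb{Z}/p^2[G]\to\mathbb{F}_pG\to0$ (first map $\widehat ag\mapsto\overline{pa}g$, second map reduction of coefficients mod $p$). Let $g_1=1,\ldots,g_s$ be representatives of the conjugacy classes of $G$, $G_i=C_G(g_i)$, $\theta_{g_i}:k\to kG$, $\lambda\mapsto\lambda g_i$, and $\gamma_i=\mathrm{tr}_{G_i}^G\circ\theta_{g_i}^*:\mathrm{H}^*(G_i,k)\to\mathrm{H}^*(G,kG)$; by Siegel–Witherspoon the $\gamma_i$ induce an isomorphism of graded vector spaces $\bigoplus_i\mathrm{H}^*(G_i,k)\cong\mathrm{H}^*(G,kG)$. For a subgroup $H$, $\beta_H$ is the Bockstein of $\mathrm{H}^*(H,\mathbb{F}_p)$, extended to $\mathrm{H}^*(H,k)\cong\mathrm{H}^*(H,\mathbb{F}_p)\otimes_{\mathbb{F}_p}k$ as $\beta_H\otimes\mathrm{id}_k$. *)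

theory Defs
  imports "HOL-Algebra.Coset" "HOL-Library.Function_Algebras" "HOL-Computational_Algebra.Primes"
begin

text \<open>An n-cochain of a subgroup H of G with coefficients in an H-module (action act,
value carrier M) is an H-equivariant map on (n+1)-tuples of elements of G
(homogeneous standard resolution of G restricted to H), extended by 0 off the tuples.\<close>

definition tuples :: "('g,'b) monoid_scheme \<Rightarrow> nat \<Rightarrow> 'g list set" where
  "tuples G n = {xs. length xs = n \<and> set xs \<subseteq> carrier G}"

definition cochains ::
  "('g,'b) monoid_scheme \<Rightarrow> 'g set \<Rightarrow> ('g \<Rightarrow> 'm \<Rightarrow> 'm) \<Rightarrow> 'm::zero set \<Rightarrow> nat \<Rightarrow> ('g list \<Rightarrow> 'm) set" where
  "cochains G H act M n =
     {f. (\<forall>xs. xs \<notin> tuples G (Suc n) \<longrightarrow> f xs = 0)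
       \<and> (\<forall>xs\<in>tuples G (Suc n). f xs \<in> M)
       \<and> (\<forall>h\<in>H. \<forall>xs\<in>tuples G (Suc n). f (map (\<lambda>x. h \<otimes>\<^bsub>G\<^esub> x) xs) = act h (f xs))}"

definition del_at :: "nat \<Rightarrow> 'a list \<Rightarrow> 'a list" where
  "del_at i xs = take i xs @ drop (Suc i) xs"

definition cobound :: "('g,'b) monoid_scheme \<Rightarrow> nat \<Rightarrow> ('g list \<Rightarrow> 'm::ab_group_add) \<Rightarrow> 'g list \<Rightarrow> 'm" where
  "cobound G n f xs =
     (if xs \<in> tuples G (n + 2)
      then (\<Sum>i\<le>n+1. (if even i then f (del_at i xs) else - f (del_at i xs)))
      else 0)"

definition cobs ::
  "('g,'b) monoid_scheme \<Rightarrow> 'g set \<Rightarrow> ('g \<Rightarrow> 'm \<Rightarrow> 'm) \<Rightarrow> 'm::ab_group_add set \<Rightarrow> nat \<Rightarrow> ('g list \<Rightarrow> 'm) set" where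
  "cobs G H act M n = (case n of 0 \<Rightarrow> {0} | Suc m \<Rightarrow> cobound G m ` cochains G H act M m)"

section \<open>Group algebras R G (as canonical functions G \<rightarrow> R) with conjugation action\<close>

definition galg :: "('g,'b) monoid_scheme \<Rightarrow> ('g \<Rightarrow> 'r::zero) set" where
  "galg G = {a. \<forall>y. y \<notin> carrier G \<longrightarrow> a y = 0}"

text \<open>conjugation: \<open>h\<cdot>(\<Sum> a\<^sub>y y) = \<Sum> a\<^sub>y h y h\<inverse>\<close>\<close>
definition cact :: "('g,'b) monoid_scheme \<Rightarrow> 'g \<Rightarrow> ('g \<Rightarrow> 'r::zero) \<Rightarrow> 'g \<Rightarrow> 'r" where
  "cact G h a = (\<lambda>y. if y \<in> carrier G then a (inv\<^bsub>G\<^esub> h \<otimes>\<^bsub>G\<^esub> y \<otimes>\<^bsub>G\<^esub> h) else 0)"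

definition gmult :: "('g,'b) monoid_scheme \<Rightarrow> ('g \<Rightarrow> 'r::comm_ring_1) \<Rightarrow> ('g \<Rightarrow> 'r) \<Rightarrow> 'g \<Rightarrow> 'r" where
  "gmult G a b = (\<lambda>z. if z \<in> carrier G then (\<Sum>y\<in>carrier G. a y * b (inv\<^bsub>G\<^esub> y \<otimes>\<^bsub>G\<^esub> z)) else 0)"

definition cupc :: "('g,'b) monoid_scheme \<Rightarrow> ('m1 \<Rightarrow> 'm2 \<Rightarrow> 'm3::zero) \<Rightarrow> nat \<Rightarrow> nat
   \<Rightarrow> ('g list \<Rightarrow> 'm1) \<Rightarrow> ('g list \<Rightarrow> 'm2) \<Rightarrow> 'g list \<Rightarrow> 'm3" where
  "cupc G mu m n f g xs =
     (if xs \<in> tuples G (m + n + 1) then mu (f (take (m + 1) xs)) (g (drop m xs)) else 0)"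

text \<open>An \<open>\<bbbF>\<^sub>pG\<close>-valued n-cochain is represented by an equivariant \<open>\<int>G\<close>-valued lift;
two lifts are identified when they agree mod p.\<close>

definition Cint :: "('g,'b) monoid_scheme \<Rightarrow> nat \<Rightarrow> ('g list \<Rightarrow> 'g \<Rightarrow> int) set" where
  "Cint G n = cochains G (carrier G) (cact G) (galg G) n"

definition congp :: "int \<Rightarrow> ('g list \<Rightarrow> 'g \<Rightarrow> int) \<Rightarrow> ('g list \<Rightarrow> 'g \<Rightarrow> int) \<Rightarrow> bool" where
  "congp p f g \<longleftrightarrow> (\<forall>xs y. p dvd (f xs y - g xs y))"

definition Zp :: "('g,'b) monoid_scheme \<Rightarrow> int \<Rightarrow> nat \<Rightarrow> ('g list \<Rightarrow> 'g \<Rightarrow> int) set" where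
  "Zp G p n = {f \<in> Cint G n. congp p (cobound G n f) 0}"

definition clsp :: "('g,'b) monoid_scheme \<Rightarrow> int \<Rightarrow> nat \<Rightarrow> ('g list \<Rightarrow> 'g \<Rightarrow> int) \<Rightarrow> ('g list \<Rightarrow> 'g \<Rightarrow> int) set" where
  "clsp G p n f = {g \<in> Cint G n. \<exists>b\<in>cobs G (carrier G) (cact G) (galg G) n. congp p (g - f) b}"

definition Hp :: "('g,'b) monoid_scheme \<Rightarrow> int \<Rightarrow> nat \<Rightarrow> ('g list \<Rightarrow> 'g \<Rightarrow> int) set set" where
  "Hp G p n = clsp G p n ` Zp G p n"

definition rep :: "'a set \<Rightarrow> 'a" where
  "rep X = (SOME f. f \<in> X)"

text \<open>Connecting homomorphism of \<open>0\<rightarrow>\<bbbF>\<^sub>pG\<rightarrow>\<int>/p\<^sup>2[G]\<rightarrow>\<bbbF>\<^sub>pG\<rightarrow>0\<close> on cochain level: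
lift to \<open>\<int>/p\<^sup>2\<close> (the integer lift), apply \<open>\<delta>\<close>, pull back along \<open>x \<mapsto> px\<close>.\<close>
definition bockc :: "('g,'b) monoid_scheme \<Rightarrow> int \<Rightarrow> nat \<Rightarrow> ('g list \<Rightarrow> 'g \<Rightarrow> int) \<Rightarrow> 'g list \<Rightarrow> 'g \<Rightarrow> int" where
  "bockc G p n f = (\<lambda>xs y. cobound G n f xs y div p)"

definition BockG :: "('g,'b) monoid_scheme \<Rightarrow> int \<Rightarrow> nat \<Rightarrow> ('g list \<Rightarrow> 'g \<Rightarrow> int) set \<Rightarrow> ('g list \<Rightarrow> 'g \<Rightarrow> int) set" where
  "BockG G p n X = clsp G p (Suc n) (bockc G p n (rep X))"

definition Cup_p :: "('g,'b) monoid_scheme \<Rightarrow> int \<Rightarrow> nat \<Rightarrow> nat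
   \<Rightarrow> ('g list \<Rightarrow> 'g \<Rightarrow> int) set \<Rightarrow> ('g list \<Rightarrow> 'g \<Rightarrow> int) set \<Rightarrow> ('g list \<Rightarrow> 'g \<Rightarrow> int) set" where
  "Cup_p G p m n X Y = clsp G p (m + n) (cupc G (gmult G) m n (rep X) (rep Y))"

definition Add_p :: "('g,'b) monoid_scheme \<Rightarrow> int \<Rightarrow> nat
   \<Rightarrow> ('g list \<Rightarrow> 'g \<Rightarrow> int) set \<Rightarrow> ('g list \<Rightarrow> 'g \<Rightarrow> int) set \<Rightarrow> ('g list \<Rightarrow> 'g \<Rightarrow> int) set" where
  "Add_p G p n X Y = clsp G p n (rep X + rep Y)"

definition Smul_p :: "('g,'b) monoid_scheme \<Rightarrow> int \<Rightarrow> nat \<Rightarrow> int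
   \<Rightarrow> ('g list \<Rightarrow> 'g \<Rightarrow> int) set \<Rightarrow> ('g list \<Rightarrow> 'g \<Rightarrow> int) set" where
  "Smul_p G p n c X = clsp G p n (\<lambda>xs y. c * rep X xs y)"

definition Ck :: "('g,'b) monoid_scheme \<Rightarrow> nat \<Rightarrow> ('g list \<Rightarrow> 'g \<Rightarrow> 'k::field) set" where
  "Ck G n = cochains G (carrier G) (cact G) (galg G) n"

definition clsk :: "('g,'b) monoid_scheme \<Rightarrow> nat \<Rightarrow> ('g list \<Rightarrow> 'g \<Rightarrow> 'k::field) \<Rightarrow> ('g list \<Rightarrow> 'g \<Rightarrow> 'k) set" where
  "clsk G n f = {g \<in> Ck G n. g - f \<in> cobs G (carrier G) (cact G) (galg G) n}"

definition Hk :: "('g,'b) monoid_scheme \<Rightarrow> nat \<Rightarrow> ('g list \<Rightarrow> 'g \<Rightarrow> 'k::field) set set" where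
  "Hk G n = clsk G n ` {f \<in> Ck G n. cobound G n f = 0}"

definition Add_k :: "('g,'b) monoid_scheme \<Rightarrow> nat
   \<Rightarrow> ('g list \<Rightarrow> 'g \<Rightarrow> 'k::field) set \<Rightarrow> ('g list \<Rightarrow> 'g \<Rightarrow> 'k) set \<Rightarrow> ('g list \<Rightarrow> 'g \<Rightarrow> 'k) set" where
  "Add_k G n X Y = clsk G n (rep X + rep Y)"

definition Smul_k :: "('g,'b) monoid_scheme \<Rightarrow> nat \<Rightarrow> 'k::field
   \<Rightarrow> ('g list \<Rightarrow> 'g \<Rightarrow> 'k) set \<Rightarrow> ('g list \<Rightarrow> 'g \<Rightarrow> 'k) set" where
  "Smul_k G n c X = clsk G n (\<lambda>xs y. c * rep X xs y)"

definition Cup_k :: "('g,'b) monoid_scheme \<Rightarrow> nat \<Rightarrow> nat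
   \<Rightarrow> ('g list \<Rightarrow> 'g \<Rightarrow> 'k::field) set \<Rightarrow> ('g list \<Rightarrow> 'g \<Rightarrow> 'k) set \<Rightarrow> ('g list \<Rightarrow> 'g \<Rightarrow> 'k) set" where
  "Cup_k G m n X Y = clsk G (m + n) (cupc G (gmult G) m n (rep X) (rep Y))"

definition centralizer :: "('g,'b) monoid_scheme \<Rightarrow> 'g \<Rightarrow> 'g set" where
  "centralizer G g = {h \<in> carrier G. h \<otimes>\<^bsub>G\<^esub> g = g \<otimes>\<^bsub>G\<^esub> h}"

definition Ct :: "('g,'b) monoid_scheme \<Rightarrow> 'g set \<Rightarrow> nat \<Rightarrow> ('g list \<Rightarrow> 'k::field) set" where
  "Ct G H n = cochains G H (\<lambda>h a. a) UNIV n"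

definition clst :: "('g,'b) monoid_scheme \<Rightarrow> 'g set \<Rightarrow> nat \<Rightarrow> ('g list \<Rightarrow> 'k::field) \<Rightarrow> ('g list \<Rightarrow> 'k) set" where
  "clst G H n f = {g \<in> Ct G H n. g - f \<in> cobs G H (\<lambda>h a. a) UNIV n}"

definition Ht :: "('g,'b) monoid_scheme \<Rightarrow> 'g set \<Rightarrow> nat \<Rightarrow> ('g list \<Rightarrow> 'k::field) set set" where
  "Ht G H n = clst G H n ` {f \<in> Ct G H n. cobound G n f = 0}"

text \<open>\<open>\<bbbF>\<^sub>p\<close>-cocycles of H with trivial coefficients (integer lifts), and the Bockstein
\<open>\<beta>\<^sub>H\<close> on them; \<open>\<beta>\<^sub>H \<otimes> id\<^sub>k\<close> on \<open>H\<^sup>*(H,k) = H\<^sup>*(H,\<bbbF>\<^sub>p)\<otimes>k\<close> is given by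
\<open>[\<Sum> \<lambda>\<^sub>j \<phi>\<^sub>j] \<mapsto> [\<Sum> \<lambda>\<^sub>j \<beta>\<^sub>H \<phi>\<^sub>j]\<close>.\<close>
definition Ztp :: "('g,'b) monoid_scheme \<Rightarrow> 'g set \<Rightarrow> int \<Rightarrow> nat \<Rightarrow> ('g list \<Rightarrow> int) set" where
  "Ztp G H p n = {f \<in> cochains G H (\<lambda>h a. a) UNIV n. \<forall>xs. p dvd cobound G n f xs}"

definition kcomb :: "('k::field \<times> ('g list \<Rightarrow> int)) list \<Rightarrow> 'g list \<Rightarrow> 'k" where
  "kcomb L = (\<lambda>xs. \<Sum>j<length L. fst (L ! j) * of_int (snd (L ! j) xs))"

definition BockH :: "('g,'b) monoid_scheme \<Rightarrow> 'g set \<Rightarrow> int \<Rightarrow> nat \<Rightarrow> ('g list \<Rightarrow> 'k::field) set \<Rightarrow> ('g list \<Rightarrow> 'k) set" where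
  "BockH G H p n X =
     (let L = (SOME L. (\<forall>j<length L. snd (L ! j) \<in> Ztp G H p n) \<and> clst G H n (kcomb L) = X)
      in clst G H (Suc n) (kcomb (map (\<lambda>(c, \<phi>). (c, \<lambda>xs. cobound G n \<phi> xs div p)) L)))"

definition thetac :: "('g,'b) monoid_scheme \<Rightarrow> 'g \<Rightarrow> ('g list \<Rightarrow> 'k::field) \<Rightarrow> 'g list \<Rightarrow> 'g \<Rightarrow> 'k" where
  "thetac G g f = (\<lambda>xs y. if y = g then f xs else 0)"

definition ltransversal :: "('g,'b) monoid_scheme \<Rightarrow> 'g set \<Rightarrow> 'g set" where
  "ltransversal G H = (SOME T. T \<subseteq> carrier G \<and> (\<forall>x\<in>carrier G. \<exists>!t. t \<in> T \<and> x \<in> t <#\<^bsub>G\<^esub> H))"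

definition trc :: "('g,'b) monoid_scheme \<Rightarrow> 'g set \<Rightarrow> ('g list \<Rightarrow> 'g \<Rightarrow> 'k::field) \<Rightarrow> 'g list \<Rightarrow> 'g \<Rightarrow> 'k" where
  "trc G H f = (\<lambda>xs. if set xs \<subseteq> carrier G
      then (\<Sum>t\<in>ltransversal G H. cact G t (f (map (\<lambda>x. inv\<^bsub>G\<^esub> t \<otimes>\<^bsub>G\<^esub> x) xs)))
      else 0)"

definition gamma :: "('g,'b) monoid_scheme \<Rightarrow> 'g \<Rightarrow> nat \<Rightarrow> ('g list \<Rightarrow> 'k::field) set \<Rightarrow> ('g list \<Rightarrow> 'g \<Rightarrow> 'k) set" where
  "gamma G g n X = clsk G n (trc G (centralizer G g) (thetac G g (rep X)))"

end

theory Submission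
  imports Defs
begin

definition sg :: "nat \<Rightarrow> 'a::ab_group_add \<Rightarrow> 'a" where
  "sg i a = (if even i then a else - a)"

lemma sg_Suc: "sg (Suc i) a = - sg i a" by (simp add: sg_def)
lemma sg_add: "sg i (a + b) = sg i a + sg i b" by (simp add: sg_def)
lemma sg_neg: "sg i (- a) = - sg i a" by (simp add: sg_def)
lemma sg_sg: "sg i (sg j a) = sg (i + j) a" by (simp add: sg_def)
lemma sg_0[simp]: "sg i 0 = 0" by (simp add: sg_def)

lemma cobound_sg: "cobound G n f xs = (if xs \<in> tuples G (n + 2) then (\<Sum>i\<le>n+1. sg i (f (del_at i xs))) else 0)"
  by (simp add: cobound_def sg_def)

lemma tuples_iff: "xs \<in> tuples G n \<longleftrightarrow> length xs = n \<and> set xs \<subseteq> carrier G"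
  by (simp add: tuples_def)

lemma length_del_at: "i < length xs \<Longrightarrow> length (del_at i xs) = length xs - 1"
  by (simp add: del_at_def)

lemma set_del_at: "set (del_at i xs) \<subseteq> set xs"
  unfolding del_at_def by (auto dest: in_set_takeD in_set_dropD)

lemma del_at_tuples: "xs \<in> tuples G (Suc n) \<Longrightarrow> i \<le> n \<Longrightarrow> del_at i xs \<in> tuples G n"
  using set_del_at[of i xs] by (auto simp: tuples_iff length_del_at)

lemma del_at_map: "del_at i (map f xs) = map f (del_at i xs)"
  by (simp add: del_at_def take_map drop_map)

lemma del_at_del_at: "a \<le> b \<Longrightarrow> Suc b < length xs \<Longrightarrow> del_at a (del_at (Suc b) xs) = del_at b (del_at a xs)"
proof (induction xs arbitrary: a b)
  case Nil then show ?case by simp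
next
  case (Cons x xs)
  show ?case
  proof (cases a)
    case 0
    then show ?thesis using Cons.prems by (cases b) (auto simp: del_at_def)
  next
    case (Suc a')
    then obtain b' where b: "b = Suc b'" using Cons.prems by (cases b) auto
    have "del_at a' (del_at (Suc b') xs) = del_at b' (del_at a' xs)"
      using Cons.prems Suc b by (intro Cons.IH) auto
    then show ?thesis using Suc b by (simp add: del_at_def)
  qed
qed

lemma cobound_add: "cobound G n (f + g) = cobound G n f + cobound G n g"
  by (rule ext) (simp add: cobound_sg sg_add sum.distrib)

lemma cobound_neg: "cobound G n (- f) = - cobound G n f"
  by (rule ext) (simp add: cobound_sg sg_neg sum_negf)

lemma cobound_diff: "cobound G n (f - g) = cobound G n f - cobound G n g"
proof -
  have "f - g = f + (- g)" by simp
  then show ?thesis by (simp only: cobound_add cobound_neg) simp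
qed

lemma cobound_zero[simp]: "cobound G n 0 = 0"
  by (rule ext) (simp add: cobound_sg)

lemma additive_sum:
  assumes "\<And>a b. \<phi> (a + b) = \<phi> a + (\<phi> b :: 'b::ab_group_add)" 
  shows "\<phi> (\<Sum>i\<in>A. (F i :: 'a::ab_group_add)) = (\<Sum>i\<in>A. \<phi> (F i))"
proof -
  have z: "\<phi> 0 = 0" using assms[of 0 0] by simp
  show ?thesis
  proof (induction A rule: infinite_finite_induct)
    case (infinite A) then show ?case using z by simp
  next
    case empty then show ?case using z by simp
  next
    case (insert x F) then show ?case using assms by simp
  qed
qed

lemma additive_neg:
  assumes "\<And>a b. \<phi> (a + b) = \<phi> a + (\<phi> b :: 'b::ab_group_add)" 
  shows "\<phi> (- a) = - \<phi> (a :: 'a::ab_group_add)"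
proof -
  have "\<phi> (- a) + \<phi> a = \<phi> 0" using assms[of "-a" a] by simp
  moreover have "\<phi> 0 = 0" using assms[of 0 0] by simp
  ultimately show ?thesis by (simp add: eq_neg_iff_add_eq_0)
qed

lemma sg_sum: "sg i (\<Sum>j\<in>A. F j) = (\<Sum>j\<in>A. sg i (F j))"
  by (rule additive_sum) (rule sg_add)

lemma cobound_additive:
  assumes "\<And>a b. \<phi> (a + b) = \<phi> a + (\<phi> b :: 'b::ab_group_add)"
  shows "cobound G n (\<lambda>xs. \<phi> (f xs :: 'a::ab_group_add)) = (\<lambda>xs. \<phi> (cobound G n f xs))"
proof (rule ext)
  fix xs
  have z: "\<phi> 0 = 0" using assms[of 0 0] by simp
  have s: "\<phi> (sg i a) = sg i (\<phi> a)" for i a using additive_neg[OF assms] by (simp add: sg_def)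
  show "cobound G n (\<lambda>xs. \<phi> (f xs)) xs = \<phi> (cobound G n f xs)"
    unfolding cobound_sg by (simp add: z s additive_sum[of \<phi>, OF assms] del: sum.atMost_Suc)
qed

lemma cobound_cobound: "cobound G (Suc n) (cobound G n f) = 0"
proof (rule ext)
  fix xs
  show "cobound G (Suc n) (cobound G n f) xs = 0 xs"
  proof (cases "xs \<in> tuples G (n + 3)")
    case False then show ?thesis by (simp add: cobound_sg[of G "Suc n"] numeral_3_eq_3 del: sum.atMost_Suc)
  next
    case True
    hence len: "length xs = n + 3" by (simp add: tuples_iff)
    define t where "t = (\<lambda>(i,j). sg (i + j) (f (del_at j (del_at i xs))))"
    have inner: "cobound G n f (del_at i xs) = (\<Sum>j\<le>n+1. sg j (f (del_at j (del_at i xs))))" if "i \<le> n + 2" for i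
    proof -
      have "xs \<in> tuples G (Suc (n+2))" using True by (simp add: numeral_3_eq_3)
      then have "del_at i xs \<in> tuples G (n+2)" using del_at_tuples[of xs G "n+2" i] that by simp
      then show ?thesis by (simp add: cobound_sg)
    qed
    have "cobound G (Suc n) (cobound G n f) xs = (\<Sum>i\<le>n+2. sg i (cobound G n f (del_at i xs)))"
      using True by (simp add: cobound_sg[of G "Suc n"] numeral_3_eq_3 del: sum.atMost_Suc)
    also have "\<dots> = (\<Sum>i\<le>n+2. sg i (\<Sum>j\<le>n+1. sg j (f (del_at j (del_at i xs)))))"
      by (rule sum.cong) (simp_all add: inner del: sum.atMost_Suc)
    also have "\<dots> = (\<Sum>i\<le>n+2. \<Sum>j\<le>n+1. t (i, j))"
      by (simp add: sg_sum sg_sg t_def del: sum.atMost_Suc)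
    also have "\<dots> = sum t ({..n+2} \<times> {..n+1})"
      by (simp only: sum.cartesian_product case_prod_eta)
    also have "{..n+2} \<times> {..n+1} = {(i,j). i \<le> j \<and> j \<le> n+1} \<union> {(i,j). j < i \<and> i \<le> n+2}"
      by auto
    also have "sum t \<dots> = sum t {(i,j). i \<le> j \<and> j \<le> n+1} + sum t {(i,j). j < i \<and> i \<le> n+2}"
    proof (rule sum.union_disjoint)
      show "finite {(i, j). i \<le> j \<and> j \<le> n + 1}"
        by (rule finite_subset[of _ "{..n+1} \<times> {..n+1}"]) auto
      show "finite {(i, j). j < i \<and> i \<le> n + 2}"
        by (rule finite_subset[of _ "{..n+2} \<times> {..n+2}"]) auto
    qed auto
    also have "sum t {(i,j). j < i \<and> i \<le> n+2} = sum (\<lambda>(a,b). t (Suc b, a)) {(i,j). i \<le> j \<and> j \<le> n+1}"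
      by (rule sum.reindex_bij_witness[of _ "\<lambda>(a,b). (Suc b, a)" "\<lambda>(i,j). (j, i - 1)"]) auto
    also have "sum (\<lambda>(a,b). t (Suc b, a)) {(i,j). i \<le> j \<and> j \<le> n+1} = sum (\<lambda>x. - t x) {(i,j). i \<le> j \<and> j \<le> n+1}"
    proof (rule sum.cong)
      fix x assume "x \<in> {(i,j). i \<le> j \<and> j \<le> n+1}"
      then obtain a b where x: "x = (a,b)" "a \<le> b" "b \<le> n+1" by auto
      have "del_at a (del_at (Suc b) xs) = del_at b (del_at a xs)"
        using x len by (intro del_at_del_at) auto
      then show "(\<lambda>(a,b). t (Suc b, a)) x = - t x"
        using x by (simp add: t_def sg_Suc add.commute)
    qed simp
    finally show ?thesis by (simp add: sum_negf)
  qed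
qed

lemma length_del_at': "length (del_at i xs) = (if i < length xs then length xs - 1 else length xs)"
  by (simp add: del_at_def)

lemma nth_del_at: "i < length xs \<Longrightarrow> k < length xs - 1 \<Longrightarrow> del_at i xs ! k = (if k < i then xs ! k else xs ! Suc k)"
  by (auto simp: del_at_def nth_append min_def)

lemma take_del_at_lo: "i \<le> m \<Longrightarrow> m + 2 \<le> length xs \<Longrightarrow> take (m+1) (del_at i xs) = del_at i (take (m+2) xs)"
  by (rule nth_equalityI) (auto simp: length_del_at' nth_del_at)

lemma drop_del_at_lo: "i \<le> m \<Longrightarrow> m + 2 \<le> length xs \<Longrightarrow> drop m (del_at i xs) = drop (m+1) xs"
  by (rule nth_equalityI) (auto simp: length_del_at' nth_del_at)

lemma take_del_at_hi: "m < i \<Longrightarrow> i < length xs \<Longrightarrow> take (m+1) (del_at i xs) = take (m+1) xs"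
  by (rule nth_equalityI) (auto simp: length_del_at' nth_del_at)

lemma drop_del_at_hi: "m < i \<Longrightarrow> i < length xs \<Longrightarrow> drop m (del_at i xs) = del_at (i - m) (drop m xs)"
  by (rule nth_equalityI) (auto simp: length_del_at' nth_del_at)

lemma del_at_take_last: "m + 2 \<le> length xs \<Longrightarrow> del_at (m+1) (take (m+2) xs) = take (m+1) xs"
  by (rule nth_equalityI) (auto simp: length_del_at' nth_del_at)

lemma del_at_0_drop: "m < length xs \<Longrightarrow> del_at 0 (drop m xs) = drop (m+1) xs"
  by (simp add: del_at_def)

lemma sum_closed:
  assumes "0 \<in> M" "\<And>a b. a \<in> M \<Longrightarrow> b \<in> M \<Longrightarrow> a + b \<in> M" "\<And>i. i \<in> A \<Longrightarrow> F i \<in> M"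
  shows "sum F A \<in> M"
  using assms(3)
proof (induction A rule: infinite_finite_induct)
  case (insert x F) then show ?case using assms(2) by simp
qed (use assms(1) in simp_all)

lemma map_mult_tuples:
  assumes "group G" "h \<in> carrier G" "xs \<in> tuples G n"
  shows "map (\<lambda>x. h \<otimes>\<^bsub>G\<^esub> x) xs \<in> tuples G n"
  using assms by (auto simp: tuples_iff intro: group.subgroup_self[THEN subgroup.m_closed])

lemma cochainsI:
  assumes "\<And>xs. xs \<notin> tuples G (Suc n) \<Longrightarrow> f xs = 0"
    "\<And>xs. xs \<in> tuples G (Suc n) \<Longrightarrow> f xs \<in> M"
    "\<And>h xs. h \<in> H \<Longrightarrow> xs \<in> tuples G (Suc n) \<Longrightarrow> f (map (\<lambda>x. h \<otimes>\<^bsub>G\<^esub> x) xs) = act h (f xs)"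
  shows "f \<in> cochains G H act M n"
  using assms by (simp add: cochains_def)

lemma cochainsD:
  assumes "f \<in> cochains G H act M n"
  shows "\<And>xs. xs \<notin> tuples G (Suc n) \<Longrightarrow> f xs = 0"
    "\<And>xs. xs \<in> tuples G (Suc n) \<Longrightarrow> f xs \<in> M"
    "\<And>h xs. h \<in> H \<Longrightarrow> xs \<in> tuples G (Suc n) \<Longrightarrow> f (map (\<lambda>x. h \<otimes>\<^bsub>G\<^esub> x) xs) = act h (f xs)"
  using assms by (simp_all add: cochains_def)

lemma cobound_cochains:
  assumes G: "group G" and HG: "H \<subseteq> carrier G" and f: "f \<in> cochains G H act M n"
    and act: "\<And>h a b. h \<in> H \<Longrightarrow> act h (a + b) = act h a + act h b"
    and M0: "0 \<in> M" and Madd: "\<And>a b. a \<in> M \<Longrightarrow> b \<in> M \<Longrightarrow> a + b \<in> M"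
    and Mneg: "\<And>a. a \<in> M \<Longrightarrow> - a \<in> M"
  shows "cobound G n f \<in> cochains G H act M (Suc n)"
proof (rule cochainsI)
  fix xs assume "xs \<notin> tuples G (Suc (Suc n))"
  then show "cobound G n f xs = 0" by (simp add: cobound_sg)
next
  fix xs assume xs: "xs \<in> tuples G (Suc (Suc n))"
  have "sg i (f (del_at i xs)) \<in> M" if "i \<le> n+1" for i
    using cochainsD(2)[OF f, of "del_at i xs"] del_at_tuples[of xs G "Suc n" i] xs that Mneg
    by (simp add: sg_def)
  then have "(\<Sum>i\<le>n+1. sg i (f (del_at i xs))) \<in> M" by (intro sum_closed[OF M0 Madd]) auto
  then show "cobound G n f xs \<in> M"
    using xs by (simp add: cobound_sg del: sum.atMost_Suc)
next
  fix h xs assume h: "h \<in> H" and xs: "xs \<in> tuples G (Suc (Suc n))"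
  have hc: "h \<in> carrier G" using h HG by auto
  have m: "map (\<lambda>x. h \<otimes>\<^bsub>G\<^esub> x) xs \<in> tuples G (Suc (Suc n))" using map_mult_tuples[OF G hc xs] .
  have aneg: "act h (- a) = - act h a" for a using additive_neg[of "act h", OF act[OF h]] by simp
  have e: "f (del_at i (map (\<lambda>x. h \<otimes>\<^bsub>G\<^esub> x) xs)) = act h (f (del_at i xs))" if "i \<le> n + 1" for i
    using cochainsD(3)[OF f h, of "del_at i xs"] del_at_tuples[of xs G "Suc n" i] xs that
    by (simp add: del_at_map)
  have "cobound G n f (map (\<lambda>x. h \<otimes>\<^bsub>G\<^esub> x) xs) = (\<Sum>i\<le>n+1. sg i (act h (f (del_at i xs))))"
    using m e by (simp add: cobound_sg del: sum.atMost_Suc)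
  also have "\<dots> = act h (\<Sum>i\<le>n+1. sg i (f (del_at i xs)))"
  proof -
    have as: "act h (sg i a) = sg i (act h a)" for i a by (simp add: sg_def aneg)
    show ?thesis by (simp add: additive_sum[of "act h", OF act[OF h]] as del: sum.atMost_Suc)
  qed
  finally show "cobound G n f (map (\<lambda>x. h \<otimes>\<^bsub>G\<^esub> x) xs) = act h (cobound G n f xs)"
    using xs by (simp add: cobound_sg del: sum.atMost_Suc)
qed

lemma take_tuples: "xs \<in> tuples G k \<Longrightarrow> j \<le> k \<Longrightarrow> take j xs \<in> tuples G j"
  by (auto simp: tuples_iff dest: in_set_takeD)
lemma drop_tuples: "xs \<in> tuples G k \<Longrightarrow> drop j xs \<in> tuples G (k - j)"
  by (auto simp: tuples_iff dest: in_set_dropD)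

lemma cupc_cochains:
  assumes G: "group G" and HG: "H \<subseteq> carrier G"
    and f: "f \<in> cochains G H act1 M1 m" and g: "g \<in> cochains G H act2 M2 n"
    and mu: "\<And>h a b. h \<in> H \<Longrightarrow> a \<in> M1 \<Longrightarrow> b \<in> M2 \<Longrightarrow> mu (act1 h a) (act2 h b) = act3 h (mu a b)"
    and muM: "\<And>a b. a \<in> M1 \<Longrightarrow> b \<in> M2 \<Longrightarrow> mu a b \<in> M3"
  shows "cupc G mu m n f g \<in> cochains G H act3 M3 (m + n)"
proof (rule cochainsI)
  fix xs assume "xs \<notin> tuples G (Suc (m + n))"
  then show "cupc G mu m n f g xs = 0" by (simp add: cupc_def)
next
  fix xs assume xs: "xs \<in> tuples G (Suc (m + n))"
  have t: "take (m+1) xs \<in> tuples G (Suc m)" using take_tuples[OF xs, of "m+1"] by simp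
  have d: "drop m xs \<in> tuples G (Suc n)" using drop_tuples[OF xs, of m] by simp
  show "cupc G mu m n f g xs \<in> M3"
    using xs t d by (simp add: cupc_def muM cochainsD(2)[OF f] cochainsD(2)[OF g])
next
  fix h xs assume h: "h \<in> H" and xs: "xs \<in> tuples G (Suc (m + n))"
  have hc: "h \<in> carrier G" using h HG by auto
  have t: "take (m+1) xs \<in> tuples G (Suc m)" using take_tuples[OF xs, of "m+1"] by simp
  have d: "drop m xs \<in> tuples G (Suc n)" using drop_tuples[OF xs, of m] by simp
  have mx: "map (\<lambda>x. h \<otimes>\<^bsub>G\<^esub> x) xs \<in> tuples G (Suc (m + n))" using map_mult_tuples[OF G hc xs] .
  show "cupc G mu m n f g (map (\<lambda>x. h \<otimes>\<^bsub>G\<^esub> x) xs) = act3 h (cupc G mu m n f g xs)"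
    using xs mx t d h
    by (simp add: cupc_def take_map drop_map cochainsD(3)[OF f] cochainsD(3)[OF g] mu cochainsD(2)[OF f] cochainsD(2)[OF g])
qed

lemma cup_leibniz:
  fixes mu :: "'a::ab_group_add \<Rightarrow> 'b::ab_group_add \<Rightarrow> 'c::ab_group_add"
  assumes mu1: "\<And>a a' b. mu (a + a') b = mu a b + mu a' b"
    and mu2: "\<And>a b b'. mu a (b + b') = mu a b + mu a b'"
  shows "cobound G (m + n) (cupc G mu m n f g)
       = cupc G mu (Suc m) n (cobound G m f) g + (\<lambda>xs. sg m (cupc G mu m (Suc n) f (cobound G n g) xs))"
proof (rule ext)
  fix xs
  have mun1: "mu (- a) b = - mu a b" for a b using additive_neg[of "\<lambda>a. mu a b"] mu1 by blast
  have mun2: "mu a (- b) = - mu a b" for a b using additive_neg[of "mu a"] mu2 by blast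
  have mus1: "mu (sg i a) b = sg i (mu a b)" for i a b by (simp add: sg_def mun1)
  have mus2: "mu a (sg i b) = sg i (mu a b)" for i a b by (simp add: sg_def mun2)
  have musum1: "mu (\<Sum>i\<in>A. F i) b = (\<Sum>i\<in>A. mu (F i) b)" for A F b
    using additive_sum[of "\<lambda>a. mu a b"] mu1 by blast
  have musum2: "mu a (\<Sum>i\<in>A. F i) = (\<Sum>i\<in>A. mu a (F i))" for A F a
    using additive_sum[of "mu a"] mu2 by blast
  show "cobound G (m + n) (cupc G mu m n f g) xs
       = (cupc G mu (Suc m) n (cobound G m f) g + (\<lambda>xs. sg m (cupc G mu m (Suc n) f (cobound G n g) xs))) xs"
  proof (cases "xs \<in> tuples G (m + n + 2)")
    case False
    then show ?thesis by (simp add: cobound_sg cupc_def del: sum.atMost_Suc)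
  next
    case True
    hence len: "length xs = m + n + 2" and xsT: "xs \<in> tuples G (Suc (Suc (m+n)))" by (auto simp: tuples_iff)
    define T where "T i = sg i (mu (f (take (m+1) (del_at i xs))) (g (drop m (del_at i xs))))" for i
    have "cobound G (m + n) (cupc G mu m n f g) xs = (\<Sum>i\<le>m+n+1. T i)"
    proof -
      have "cupc G mu m n f g (del_at i xs) = mu (f (take (m+1) (del_at i xs))) (g (drop m (del_at i xs)))" if "i \<le> m+n+1" for i
        using del_at_tuples[OF xsT, of i] that by (simp add: cupc_def)
      then show ?thesis using True by (simp add: cobound_sg T_def del: sum.atMost_Suc)
    qed
    also have "{..m+n+1} = {..m} \<union> {m<..m+n+1}" by auto
    also have "sum T \<dots> = sum T {..m} + sum T {m<..m+n+1}" by (rule sum.union_disjoint) auto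
    finally have L: "cobound G (m + n) (cupc G mu m n f g) xs = sum T {..m} + sum T {m<..m+n+1}" .
    define a where "a = f (take (m+1) xs)"
    define b where "b = g (drop (m+1) xs)"
    have tk: "take (m+2) xs \<in> tuples G (m+2)" using take_tuples[OF True, of "m+2"] by simp
    have dr: "drop m xs \<in> tuples G (n+2)" using drop_tuples[OF True, of m] by simp
    have R1: "cupc G mu (Suc m) n (cobound G m f) g xs = sum T {..m} + sg (m+1) (mu a b)"
    proof -
      have "cupc G mu (Suc m) n (cobound G m f) g xs = mu (cobound G m f (take (m+2) xs)) b"
        using True by (simp add: cupc_def b_def)
      also have "\<dots> = (\<Sum>i\<le>m+1. sg i (mu (f (del_at i (take (m+2) xs))) b))"
        using tk by (simp add: cobound_sg musum1 mus1 del: sum.atMost_Suc)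
      also have "\<dots> = (\<Sum>i\<le>m. sg i (mu (f (del_at i (take (m+2) xs))) b)) + sg (m+1) (mu a b)"
      proof -
        have "del_at (Suc m) (take (Suc (Suc m)) xs) = take (Suc m) xs" using del_at_take_last[of m xs] len by simp
        then show ?thesis by (simp add: a_def)
      qed
      also have "(\<Sum>i\<le>m. sg i (mu (f (del_at i (take (m+2) xs))) b)) = sum T {..m}"
      proof (rule sum.cong)
        fix x assume "x \<in> {..m}"
        then have "take (Suc m) (del_at x xs) = del_at x (take (Suc (Suc m)) xs)" "drop m (del_at x xs) = drop (Suc m) xs"
          using take_del_at_lo[of x m xs] drop_del_at_lo[of x m xs] len by simp_all
        then show "sg x (mu (f (del_at x (take (m+2) xs))) b) = T x" by (simp add: T_def b_def)
      qed simp
      finally show ?thesis .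
    qed
    have R2: "cupc G mu m (Suc n) f (cobound G n g) xs = mu a b + sg m (sum T {m<..m+n+1})"
    proof -
      have "cupc G mu m (Suc n) f (cobound G n g) xs = mu a (cobound G n g (drop m xs))"
        using True by (simp add: cupc_def a_def)
      also have "\<dots> = (\<Sum>j\<le>n+1. sg j (mu a (g (del_at j (drop m xs)))))"
        using dr by (simp add: cobound_sg musum2 mus2 del: sum.atMost_Suc)
      also have "\<dots> = sg 0 (mu a (g (del_at 0 (drop m xs)))) + (\<Sum>j\<in>{0<..n+1}. sg j (mu a (g (del_at j (drop m xs)))))"
      proof -
        have "{..n+1} = insert 0 {0<..n+1}" by auto
        then show ?thesis by (simp del: sum.atMost_Suc)
      qed
      also have "sg 0 (mu a (g (del_at 0 (drop m xs)))) = mu a b"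
        using len by (simp add: del_at_0_drop b_def sg_def)
      also have "(\<Sum>j\<in>{0<..n+1}. sg j (mu a (g (del_at j (drop m xs))))) = (\<Sum>i\<in>{m<..m+n+1}. sg m (T i))"
      proof (rule sum.reindex_bij_witness[of _ "\<lambda>i. i - m" "\<lambda>j. j + m"])
        fix j assume j: "j \<in> {0<..n+1}"
        define i where "i = j + m"
        have i: "m < i" "i \<le> m+n+1" using j by (auto simp: i_def)
        have e: "take (m+1) (del_at i xs) = take (m+1) xs" "drop m (del_at i xs) = del_at (i - m) (drop m xs)"
          using len take_del_at_hi[of m i xs] drop_del_at_hi[of m i xs] i by auto
        have "m + i = j + 2*m" by (simp add: i_def)
        then have "even (m+i) = even j" by (metis dvd_add_left_iff dvd_triv_left)
        have ij: "i - m = j" by (simp add: i_def)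
        have "sg m (T i) = sg (m+i) (mu a (g (del_at j (drop m xs))))"
          using e ij by (simp add: T_def sg_sg a_def)
        also have "\<dots> = sg j (mu a (g (del_at j (drop m xs))))"
          using \<open>even (m+i) = even j\<close> by (simp add: sg_def)
        finally show "sg m (T (j + m)) = sg j (mu a (g (del_at j (drop m xs))))"
          by (simp add: i_def)
      qed auto
      finally show ?thesis by (simp add: sg_sum)
    qed
    have "sg (m+1) (mu a b) + sg m (mu a b) = 0" by (simp add: sg_def)
    moreover have "sg m (sg m x) = x" for x :: 'c by (simp add: sg_def)
    ultimately show ?thesis using L R1 R2
      by (simp add: sg_add)
  qed
qed

lemma cact_add: "cact G h ((a::'g\<Rightarrow>'r::ab_group_add) + b) = cact G h a + cact G h b"
  by (rule ext) (simp add: cact_def)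
lemma cact_neg: "cact G h (- (a::'g\<Rightarrow>'r::ab_group_add)) = - cact G h a"
  by (rule ext) (simp add: cact_def)
lemma cact_zero[simp]: "cact G h (0::'g\<Rightarrow>'r::ab_group_add) = 0"
  by (rule ext) (simp add: cact_def)
lemma cact_diff: "cact G h ((a::'g\<Rightarrow>'r::ab_group_add) - b) = cact G h a - cact G h b"
  by (rule ext) (simp add: cact_def)
lemma cact_sum: "cact G h (\<Sum>i\<in>A. (F i::'g\<Rightarrow>'r::ab_group_add)) = (\<Sum>i\<in>A. cact G h (F i))"
  by (rule additive_sum[where \<phi>="cact G h"]) (rule cact_add)
lemma cact_smult: "cact G h (\<lambda>y. (c::'r::comm_ring_1) * a y) = (\<lambda>y. c * cact G h a y)"
  by (rule ext) (simp add: cact_def)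
lemma cact_galg: "cact G h a \<in> galg G"
  by (simp add: cact_def galg_def)
lemma cact_comp: "\<phi> 0 = 0 \<Longrightarrow> cact G h (\<lambda>y. \<phi> (a y)) = (\<lambda>y. \<phi> (cact G h a y))"
  by (rule ext) (simp add: cact_def)

lemma galg_add: "(a::'g\<Rightarrow>'r::ab_group_add) \<in> galg G \<Longrightarrow> b \<in> galg G \<Longrightarrow> a + b \<in> galg G"
  by (simp add: galg_def)
lemma galg_neg: "(a::'g\<Rightarrow>'r::ab_group_add) \<in> galg G \<Longrightarrow> - a \<in> galg G"
  by (simp add: galg_def)
lemma galg_zero[simp]: "(0::'g\<Rightarrow>'r::ab_group_add) \<in> galg G"
  by (simp add: galg_def)
lemma galg_comp: "\<phi> 0 = 0 \<Longrightarrow> a \<in> galg G \<Longrightarrow> (\<lambda>y. \<phi> (a y)) \<in> galg G"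
  by (simp add: galg_def)

context group begin
lemma cancel_left1[simp]: "y \<in> carrier G \<Longrightarrow> h \<in> carrier G \<Longrightarrow> h \<otimes> (inv h \<otimes> y) = y"
  by (simp add: m_assoc[symmetric])
lemma cancel_left2[simp]: "y \<in> carrier G \<Longrightarrow> h \<in> carrier G \<Longrightarrow> inv h \<otimes> (h \<otimes> y) = y"
  by (simp add: m_assoc[symmetric])
lemma cact_mult:
  assumes "h \<in> carrier G" "h' \<in> carrier G"
  shows "cact G (h \<otimes> h') a = cact G h (cact G h' a)"
proof (rule ext)
  fix y show "cact G (h \<otimes> h') a y = cact G h (cact G h' a) y"
    using assms by (simp add: cact_def inv_mult_group m_assoc)
qed

lemma cact_one:
  assumes "a \<in> galg G"
  shows "cact G \<one> a = a"
proof (rule ext)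
  fix y show "cact G \<one> a y = a y" using assms by (simp add: cact_def galg_def)
qed

end

lemma gmult_galg: "gmult G a b \<in> galg G"
  by (simp add: gmult_def galg_def)

lemma gmult_add1: "gmult G (a + a') b = gmult G a b + gmult G a' b"
  by (rule ext) (simp add: gmult_def distrib_right sum.distrib)
lemma gmult_add2: "gmult G a (b + b') = gmult G a b + gmult G a b'"
  by (rule ext) (simp add: gmult_def distrib_left sum.distrib)
lemma gmult_smult1: "gmult G (\<lambda>y. c * a y) b = (\<lambda>y. c * gmult G a b y)"
  by (rule ext) (simp add: gmult_def sum_distrib_left mult.assoc)
lemma gmult_smult2: "gmult G a (\<lambda>y. c * b y) = (\<lambda>y. c * gmult G a b y)"
  by (rule ext) (simp add: gmult_def sum_distrib_left mult.left_commute)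
lemma gmult_of_int: "gmult G (\<lambda>y. of_int (a y)) (\<lambda>y. of_int (b y)) = (\<lambda>y. of_int (gmult G a b y) :: 'k::comm_ring_1)"
  by (rule ext) (simp add: gmult_def)
lemma gmult_dvd1: "(\<And>y. (p::int) dvd a y) \<Longrightarrow> p dvd gmult G a b z"
  by (simp add: gmult_def dvd_sum)
lemma gmult_dvd2: "(\<And>y. (p::int) dvd b y) \<Longrightarrow> p dvd gmult G a b z"
  by (simp add: gmult_def dvd_sum)

context group begin
lemma gmult_cact:
  assumes h: "h \<in> carrier G" and a: "a \<in> galg G" and b: "b \<in> galg G"
  shows "gmult G (cact G h a) (cact G h b) = cact G h (gmult G a b)"
proof (rule ext)
  fix z
  show "gmult G (cact G h a) (cact G h b) z = cact G h (gmult G a b) z"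
  proof (cases "z \<in> carrier G")
    case False then show ?thesis by (simp add: gmult_def cact_def)
  next
    case z: True
    have "gmult G (cact G h a) (cact G h b) z = (\<Sum>y\<in>carrier G. a (inv h \<otimes> y \<otimes> h) * b (inv h \<otimes> (inv y \<otimes> z) \<otimes> h))"
      using z h by (simp add: gmult_def cact_def)
    also have "\<dots> = (\<Sum>w\<in>carrier G. a w * b (inv w \<otimes> (inv h \<otimes> z \<otimes> h)))"
    proof (rule sum.reindex_bij_witness[of _ "\<lambda>w. h \<otimes> w \<otimes> inv h" "\<lambda>y. inv h \<otimes> y \<otimes> h"])
      fix y assume y: "y \<in> carrier G"
      show "h \<otimes> (inv h \<otimes> y \<otimes> h) \<otimes> inv h = y" using y h by (simp add: m_assoc)
      show "inv h \<otimes> y \<otimes> h \<in> carrier G" using y h by simp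
      have "inv (inv h \<otimes> y \<otimes> h) \<otimes> (inv h \<otimes> z \<otimes> h) = inv h \<otimes> (inv y \<otimes> z) \<otimes> h"
        using y h z by (simp add: inv_mult_group m_assoc)
      then show "a (inv h \<otimes> y \<otimes> h) * b (inv (inv h \<otimes> y \<otimes> h) \<otimes> (inv h \<otimes> z \<otimes> h)) =
         a (inv h \<otimes> y \<otimes> h) * b (inv h \<otimes> (inv y \<otimes> z) \<otimes> h)" by simp
    next
      fix w assume w: "w \<in> carrier G"
      show "inv h \<otimes> (h \<otimes> w \<otimes> inv h) \<otimes> h = w" using w h by (simp add: m_assoc)
      show "h \<otimes> w \<otimes> inv h \<in> carrier G" using w h by simp
    qed
    also have "\<dots> = cact G h (gmult G a b) z"
      using z h by (simp add: gmult_def cact_def)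
    finally show ?thesis .
  qed
qed

end

abbreviation CC :: "('g,'b) monoid_scheme \<Rightarrow> nat \<Rightarrow> ('g list \<Rightarrow> 'g \<Rightarrow> 'r::comm_ring_1) set" where
  "CC G n \<equiv> cochains G (carrier G) (cact G) (galg G) n"

abbreviation CB :: "('g,'b) monoid_scheme \<Rightarrow> nat \<Rightarrow> ('g list \<Rightarrow> 'g \<Rightarrow> 'r::comm_ring_1) set" where
  "CB G n \<equiv> cobs G (carrier G) (cact G) (galg G) n"

lemma CC_cobound: "group G \<Longrightarrow> f \<in> CC G n \<Longrightarrow> cobound G n f \<in> CC G (Suc n)"
  by (rule cobound_cochains) (auto simp: cact_add galg_add galg_neg)

lemma CC_cupc: "group G \<Longrightarrow> f \<in> CC G m \<Longrightarrow> g \<in> CC G n \<Longrightarrow> cupc G (gmult G) m n f g \<in> CC G (m + n)"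
  by (rule cupc_cochains) (auto simp: group.gmult_cact gmult_galg)

lemma CC_add: "f \<in> CC G n \<Longrightarrow> g \<in> CC G n \<Longrightarrow> f + g \<in> CC G n"
  by (simp add: cochains_def cact_add galg_add)
lemma CC_neg: "f \<in> CC G n \<Longrightarrow> - f \<in> CC G n"
  by (simp add: cochains_def cact_neg galg_neg)
lemma CC_diff: "f \<in> CC G n \<Longrightarrow> g \<in> CC G n \<Longrightarrow> f - g \<in> CC G n"
  by (simp add: cochains_def cact_diff galg_def)
lemma CC_zero[simp]: "0 \<in> CC G n"
  by (simp add: cochains_def)
lemma CC_comp: 
  assumes "\<phi> 0 = 0" "f \<in> CC G n"
  shows "(\<lambda>xs y. \<phi> (f xs y)) \<in> CC G n"
  using assms by (auto simp: cochains_def galg_def cact_def fun_eq_iff)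
lemma CC_smult: "f \<in> CC G n \<Longrightarrow> (\<lambda>xs y. c * f xs y) \<in> CC G n"
  by (rule CC_comp) simp_all
lemma CC_sum: "(\<And>i. i \<in> A \<Longrightarrow> F i \<in> CC G n) \<Longrightarrow> sum F A \<in> CC G n"
  by (rule sum_closed) (auto intro: CC_add)

lemma cobound_sum: "cobound G n (\<Sum>i\<in>A. (F i :: 'g list \<Rightarrow> 'm::ab_group_add)) = (\<Sum>i\<in>A. cobound G n (F i))"
  by (rule additive_sum[where \<phi>="cobound G n"]) (rule cobound_add)

lemma cobound_comp:
  fixes \<phi> :: "'a::ab_group_add \<Rightarrow> 'b::ab_group_add" and f :: "'c list \<Rightarrow> 'd \<Rightarrow> 'a"
  assumes "\<And>a b. \<phi> (a + b) = \<phi> a + \<phi> b"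
  shows "cobound G n (\<lambda>xs y. \<phi> (f xs y)) = (\<lambda>xs y. \<phi> (cobound G n f xs y))"
proof -
  have "cobound G n (\<lambda>xs. (\<lambda>a y. \<phi> (a y)) (f xs)) = (\<lambda>xs. (\<lambda>a y. \<phi> (a y)) (cobound G n f xs))"
    by (rule cobound_additive[where \<phi>="\<lambda>a y. \<phi> (a y)"]) (simp add: assms fun_eq_iff)
  then show ?thesis by simp
qed

lemma cobound_smult: "cobound G n (\<lambda>xs y. (c::'r::comm_ring_1) * f xs y) = (\<lambda>xs y. c * cobound G n f xs y)"
  by (rule cobound_comp[where \<phi>="\<lambda>a. c * a"]) (simp add: distrib_left)

lemma cobound_of_int: "cobound G n (\<lambda>xs y. (of_int (f xs y) :: 'k::comm_ring_1)) = (\<lambda>xs y. of_int (cobound G n f xs y))"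
  by (rule cobound_comp[where \<phi>="of_int"]) simp

lemma CB_zero[simp]: "0 \<in> CB G n"
proof (cases n)
  case 0 then show ?thesis by (simp add: cobs_def)
next
  case (Suc m)
  have "cobound G m 0 = 0" by simp
  then show ?thesis using Suc by (auto simp: cobs_def image_iff intro!: bexI[of _ 0])
qed

lemma CB_add: "f \<in> CB G n \<Longrightarrow> g \<in> CB G n \<Longrightarrow> f + g \<in> CB G n"
proof (cases n)
  case 0 then show "f \<in> CB G n \<Longrightarrow> g \<in> CB G n \<Longrightarrow> f + g \<in> CB G n" by (simp add: cobs_def)
next
  case (Suc m)
  assume "f \<in> CB G n" "g \<in> CB G n"
  then obtain a b where "a \<in> CC G m" "b \<in> CC G m" "f = cobound G m a" "g = cobound G m b"
    using Suc by (auto simp: cobs_def)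
  then have "f + g = cobound G m (a + b)" "a + b \<in> CC G m" by (simp_all add: cobound_add CC_add)
  then show ?thesis using Suc by (simp add: cobs_def)
qed

lemma CB_neg: "f \<in> CB G n \<Longrightarrow> - f \<in> CB G n"
proof (cases n)
  case 0 then show "f \<in> CB G n \<Longrightarrow> - f \<in> CB G n" by (simp add: cobs_def)
next
  case (Suc m)
  assume "f \<in> CB G n"
  then obtain a where "a \<in> CC G m" "f = cobound G m a"
    using Suc by (auto simp: cobs_def)
  then have "- f = cobound G m (- a)" "- a \<in> CC G m" by (simp_all add: cobound_neg CC_neg)
  then show ?thesis using Suc by (simp add: cobs_def)
qed

lemma CB_diff: "f \<in> CB G n \<Longrightarrow> g \<in> CB G n \<Longrightarrow> f - g \<in> CB G n"
  using CB_add[of f G n "- g"] CB_neg[of g G n] by simp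

lemma additive_zero:
  assumes "\<And>a b. \<phi> (a + b) = \<phi> a + \<phi> b"
  shows "\<phi> (0::'a::ab_group_add) = (0::'b::ab_group_add)"
proof -
  have "\<phi> 0 = \<phi> (0 + 0)" by simp
  also have "\<dots> = \<phi> 0 + \<phi> 0" by (rule assms)
  finally have e: "\<phi> 0 = \<phi> 0 + \<phi> 0" .
  show ?thesis using add_cancel_right_right[of "\<phi> 0" "\<phi> 0"] e by blast
qed

lemma CB_comp:
  assumes "\<And>a b. \<phi> (a + b) = \<phi> a + \<phi> b" "f \<in> CB G n"
  shows "(\<lambda>xs y. \<phi> (f xs y)) \<in> CB G n"
proof (cases n)
  case 0 
  have "\<phi> 0 = 0" using additive_zero[OF assms(1)] .
  moreover have "f = 0" using 0 assms(2) by (simp add: cobs_def)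
  ultimately have "(\<lambda>xs y. \<phi> (f xs y)) = 0" by (intro ext) simp
  then show ?thesis using 0 by (simp add: cobs_def)
next
  case (Suc m)
  then obtain b where b: "b \<in> CC G m" "f = cobound G m b" using assms(2) by (auto simp: cobs_def)
  have "\<phi> 0 = 0" using additive_zero[OF assms(1)] .
  then have "(\<lambda>xs y. \<phi> (b xs y)) \<in> CC G m" using b(1) by (rule CC_comp)
  moreover have "(\<lambda>xs y. \<phi> (f xs y)) = cobound G m (\<lambda>xs y. \<phi> (b xs y))"
    using b by (simp add: cobound_comp[OF assms(1)])
  ultimately show ?thesis using Suc by (auto simp: cobs_def)
qed

lemma CB_smult: "f \<in> CB G n \<Longrightarrow> (\<lambda>xs y. (c::'r::comm_ring_1) * f xs y) \<in> CB G n"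
  by (rule CB_comp) (simp_all add: distrib_left)

lemma CB_cobound: "group G \<Longrightarrow> f \<in> CC G n \<Longrightarrow> cobound G n f \<in> CB G (Suc n)"
  by (simp add: cobs_def)

lemma CB_CC: "group G \<Longrightarrow> f \<in> CB G n \<Longrightarrow> f \<in> CC G n"
  by (cases n) (auto simp: cobs_def intro: CC_cobound)

lemma cobound_CB: "f \<in> CB G n \<Longrightarrow> cobound G n f = 0"
  by (cases n) (auto simp: cobs_def cobound_cobound)

lemma gmult_diff1: "gmult G (a - a') b = gmult G a b - gmult G a' (b::'g\<Rightarrow>'r::comm_ring_1)"
  by (rule ext) (simp add: gmult_def left_diff_distrib sum_subtractf)
lemma gmult_diff2: "gmult G a (b - b') = gmult G a b - gmult G a (b'::'g\<Rightarrow>'r::comm_ring_1)"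
  by (rule ext) (simp add: gmult_def right_diff_distrib sum_subtractf)

lemma cupc_diff1: "cupc G (gmult G) m n (f - f') g = cupc G (gmult G) m n f g - cupc G (gmult G) m n f' (g::'g list\<Rightarrow>'g\<Rightarrow>'r::comm_ring_1)"
  by (rule ext) (simp add: cupc_def gmult_diff1)
lemma cupc_diff2: "cupc G (gmult G) m n f (g - g') = cupc G (gmult G) m n f g - cupc G (gmult G) m n f (g'::'g list\<Rightarrow>'g\<Rightarrow>'r::comm_ring_1)"
  by (rule ext) (simp add: cupc_def gmult_diff2)
lemma cupc_add1: "cupc G (gmult G) m n (f + f') g = cupc G (gmult G) m n f g + cupc G (gmult G) m n f' (g::'g list\<Rightarrow>'g\<Rightarrow>'r::comm_ring_1)"
  by (rule ext) (simp add: cupc_def gmult_add1)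
lemma cupc_add2: "cupc G (gmult G) m n f (g + g') = cupc G (gmult G) m n f g + cupc G (gmult G) m n f (g'::'g list\<Rightarrow>'g\<Rightarrow>'r::comm_ring_1)"
  by (rule ext) (simp add: cupc_def gmult_add2)
lemma cupc_smult1: "cupc G (gmult G) m n (\<lambda>xs y. c * f xs y) g = (\<lambda>xs y. c * cupc G (gmult G) m n f (g::'g list\<Rightarrow>'g\<Rightarrow>'r::comm_ring_1) xs y)"
  by (rule ext) (simp add: cupc_def gmult_smult1 fun_eq_iff)
lemma cupc_smult2: "cupc G (gmult G) m n f (\<lambda>xs y. c * g xs y) = (\<lambda>xs y. c * cupc G (gmult G) m n f (g::'g list\<Rightarrow>'g\<Rightarrow>'r::comm_ring_1) xs y)"
  by (rule ext) (simp add: cupc_def gmult_smult2 fun_eq_iff)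
lemma cupc_sg2: "cupc G (gmult G) m n f (\<lambda>xs. sg k (g xs)) = (\<lambda>xs. sg k (cupc G (gmult G) m n f (g::'g list\<Rightarrow>'g\<Rightarrow>'r::comm_ring_1) xs))"
proof -
  have "gmult G a (- b) = - gmult G a b" for a b :: "'g \<Rightarrow> 'r"
    using gmult_diff2[of G a 0 b] by (simp add: fun_eq_iff gmult_def)
  then show ?thesis by (intro ext) (simp add: cupc_def sg_def)
qed

lemma leibniz_gmult:
  "cobound G (m + n) (cupc G (gmult G) m n f g)
       = cupc G (gmult G) (Suc m) n (cobound G m f) g + (\<lambda>xs. sg m (cupc G (gmult G) m (Suc n) f (cobound G n g) xs))"
  for f g :: "'g list \<Rightarrow> 'g \<Rightarrow> 'r::comm_ring_1"
  by (rule cup_leibniz) (simp_all add: gmult_add1 gmult_add2)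

section \<open>Integer cochains modulo p\<close>

definition dvdp :: "int \<Rightarrow> ('g list \<Rightarrow> 'g \<Rightarrow> int) \<Rightarrow> bool" where
  "dvdp p F \<longleftrightarrow> (\<forall>xs y. p dvd F xs y)"

definition eqv :: "('g,'b) monoid_scheme \<Rightarrow> int \<Rightarrow> nat \<Rightarrow> ('g list \<Rightarrow> 'g \<Rightarrow> int) \<Rightarrow> ('g list \<Rightarrow> 'g \<Rightarrow> int) \<Rightarrow> bool" where
  "eqv G p n F F' \<longleftrightarrow> (\<exists>b\<in>CB G n. dvdp p (F - F' - b))"

lemma congp_dvdp: "congp p F b \<longleftrightarrow> dvdp p (F - b)"
  by (simp add: congp_def dvdp_def)

lemma dvdp_add: "dvdp p F \<Longrightarrow> dvdp p F' \<Longrightarrow> dvdp p (F + F')"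
  by (simp add: dvdp_def)
lemma dvdp_diff: "dvdp p F \<Longrightarrow> dvdp p F' \<Longrightarrow> dvdp p (F - F')"
  by (simp add: dvdp_def)
lemma dvdp_neg: "dvdp p F \<Longrightarrow> dvdp p (- F)"
  by (simp add: dvdp_def)
lemma dvdp_zero[simp]: "dvdp p 0"
  by (simp add: dvdp_def)
lemma dvdp_smult: "dvdp p F \<Longrightarrow> dvdp p (\<lambda>xs y. c * F xs y)"
  by (simp add: dvdp_def)
lemma dvdp_sg: "dvdp p F \<Longrightarrow> dvdp p (\<lambda>xs. sg k (F xs))"
  by (simp add: dvdp_def sg_def)
lemma dvdp_cupc1: "dvdp p f \<Longrightarrow> dvdp p (cupc G (gmult G) m n f g)"
  by (simp add: dvdp_def cupc_def gmult_dvd1)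
lemma dvdp_cupc2: "dvdp p g \<Longrightarrow> dvdp p (cupc G (gmult G) m n f g)"
  by (simp add: dvdp_def cupc_def gmult_dvd2)
lemma dvdp_cobound: "dvdp p F \<Longrightarrow> dvdp p (cobound G n F)"
proof -
  assume "dvdp p F"
  then have "(\<lambda>xs y. p * (F xs y div p)) = F" by (auto simp: dvdp_def fun_eq_iff)
  then have "cobound G n F = (\<lambda>xs y. p * cobound G n (\<lambda>xs y. F xs y div p) xs y)"
    by (metis cobound_smult)
  then show ?thesis by (simp add: dvdp_def)
qed

lemma eqv_refl: "eqv G p n F F"
  by (auto simp: eqv_def intro!: bexI[of _ 0])

lemma eqv_sym: "eqv G p n F F' \<Longrightarrow> eqv G p n F' F"
proof -
  assume "eqv G p n F F'"
  then obtain b where b: "b \<in> CB G n" "dvdp p (F - F' - b)" by (auto simp: eqv_def)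
  have "F' - F - (- b) = - (F - F' - b)" by (simp add: algebra_simps)
  then have "dvdp p (F' - F - (- b))" using dvdp_neg[OF b(2)] by metis
  then show ?thesis using CB_neg[OF b(1)] unfolding eqv_def by blast
qed

lemma eqv_trans: "eqv G p n F F' \<Longrightarrow> eqv G p n F' F'' \<Longrightarrow> eqv G p n F F''"
proof -
  assume "eqv G p n F F'" "eqv G p n F' F''"
  then obtain b b' where b: "b \<in> CB G n" "dvdp p (F - F' - b)" "b' \<in> CB G n" "dvdp p (F' - F'' - b')"
    by (auto simp: eqv_def)
  then have "dvdp p (F - F'' - (b + b'))" using dvdp_add[OF b(2) b(4)] by (simp add: algebra_simps)
  then show ?thesis using CB_add[OF b(1) b(3)] by (auto simp: eqv_def)
qed

lemma eqv_add: "eqv G p n F F' \<Longrightarrow> eqv G p n H H' \<Longrightarrow> eqv G p n (F + H) (F' + H')"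
proof -
  assume "eqv G p n F F'" "eqv G p n H H'"
  then obtain b b' where b: "b \<in> CB G n" "dvdp p (F - F' - b)" "b' \<in> CB G n" "dvdp p (H - H' - b')"
    by (auto simp: eqv_def)
  then have "dvdp p (F + H - (F' + H') - (b + b'))" using dvdp_add[OF b(2) b(4)] by (simp add: algebra_simps)
  then show ?thesis using CB_add[OF b(1) b(3)] by (auto simp: eqv_def)
qed

lemma eqv_smult: "eqv G p n F F' \<Longrightarrow> eqv G p n (\<lambda>xs y. c * F xs y) (\<lambda>xs y. c * F' xs y)"
proof -
  assume "eqv G p n F F'"
  then obtain b where b: "b \<in> CB G n" "dvdp p (F - F' - b)" by (auto simp: eqv_def)
  then have "dvdp p ((\<lambda>xs y. c * F xs y) - (\<lambda>xs y. c * F' xs y) - (\<lambda>xs y. c * b xs y))"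
    using dvdp_smult[OF b(2), of c] by (simp add: algebra_simps fun_diff_def)
  then show ?thesis using CB_smult[OF b(1), of c] by (auto simp: eqv_def)
qed

lemma eqv_CB: "b \<in> CB G n \<Longrightarrow> eqv G p n (F + b) F"
  by (auto simp: eqv_def intro!: bexI[of _ b])

lemma eqv_dvdp: "dvdp p (F - F') \<Longrightarrow> eqv G p n F F'"
  by (auto simp: eqv_def intro!: bexI[of _ 0])

lemma clsp_eqv: "eqv G p n F F' \<Longrightarrow> clsp G p n F = clsp G p n F'"
proof -
  have *: "clsp G p n F \<subseteq> clsp G p n F'" if "eqv G p n F F'" for F F'
  proof
    fix g assume "g \<in> clsp G p n F"
    then have g: "g \<in> CC G n" "eqv G p n g F" by (auto simp: clsp_def eqv_def congp_dvdp Cint_def)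
    then have "eqv G p n g F'" using eqv_trans that by blast
    then show "g \<in> clsp G p n F'" using g(1) by (auto simp: clsp_def eqv_def congp_dvdp Cint_def)
  qed
  assume "eqv G p n F F'"
  then show ?thesis using *[of F F'] *[of F' F] eqv_sym by blast
qed

lemma clsp_mem: "F \<in> CC G n \<Longrightarrow> F \<in> clsp G p n F"
  by (auto simp: clsp_def congp_dvdp Cint_def intro!: bexI[of _ 0])

lemma rep_mem: "x \<in> X \<Longrightarrow> rep X \<in> X"
  unfolding rep_def by (rule someI)

lemma rep_clsp: "F \<in> CC G n \<Longrightarrow> rep (clsp G p n F) \<in> CC G n \<and> eqv G p n (rep (clsp G p n F)) F"
proof -
  assume "F \<in> CC G n"
  then have "rep (clsp G p n F) \<in> clsp G p n F" by (rule rep_mem[OF clsp_mem])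
  then show ?thesis by (auto simp: clsp_def eqv_def congp_dvdp Cint_def)
qed

lemma clsp_rep: "F \<in> CC G n \<Longrightarrow> clsp G p n (rep (clsp G p n F)) = clsp G p n F"
  using rep_clsp clsp_eqv by blast

section \<open>The Bockstein on cochains\<close>

lemma bockc_eq: "dvdp p (cobound G n f) \<Longrightarrow> cobound G n f = (\<lambda>xs y. p * bockc G p n f xs y)"
  by (auto simp: dvdp_def bockc_def fun_eq_iff)

lemma bockc_CC: "group G \<Longrightarrow> f \<in> CC G n \<Longrightarrow> bockc G p n f \<in> CC G (Suc n)"
proof -
  assume "group G" "f \<in> CC G n"
  then have "cobound G n f \<in> CC G (Suc n)" by (rule CC_cobound)
  then have "(\<lambda>xs y. cobound G n f xs y div p) \<in> CC G (Suc n)" by (rule CC_comp[rotated]) simp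
  then show ?thesis by (simp add: bockc_def[abs_def])
qed

lemma bockc_cocycle:
  assumes "p \<noteq> 0" "dvdp p (cobound G n f)"
  shows "cobound G (Suc n) (bockc G p n f) = 0"
proof -
  have "(\<lambda>xs y. p * cobound G (Suc n) (bockc G p n f) xs y) = cobound G (Suc n) (cobound G n f)"
    by (simp add: bockc_eq[OF assms(2)] cobound_smult)
  also have "\<dots> = 0" by (rule cobound_cobound)
  finally show ?thesis using assms(1) by (auto simp: fun_eq_iff)
qed

lemma bockc_welldef:
  assumes G: "group G" and p: "p \<noteq> 0" and f: "f \<in> CC G n" "dvdp p (cobound G n f)"
    and g: "g \<in> CC G n" and e: "eqv G p n g f"
  shows "dvdp p (cobound G n g) \<and> bockc G p n g - bockc G p n f \<in> CB G (Suc n)"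
proof -
  obtain \<beta> where \<beta>: "\<beta> \<in> CB G n" "dvdp p (g - f - \<beta>)" using e by (auto simp: eqv_def)
  define c where "c = (\<lambda>xs y. (g - f - \<beta>) xs y div p)"
  have gf: "g - f - \<beta> = (\<lambda>xs y. p * c xs y)" using \<beta>(2) by (auto simp: dvdp_def c_def fun_eq_iff)
  have "g - f - \<beta> \<in> CC G n" using CC_diff[OF CC_diff[OF g f(1)] CB_CC[OF G \<beta>(1)]] .
  then have cC: "c \<in> CC G n" unfolding c_def by (rule CC_comp[rotated]) simp
  have "cobound G n g = cobound G n f + cobound G n \<beta> + cobound G n (g - f - \<beta>)"
    by (simp add: cobound_diff)
  also have "\<dots> = cobound G n f + (\<lambda>xs y. p * cobound G n c xs y)"
    by (simp add: cobound_CB[OF \<beta>(1)] gf cobound_smult)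
  also have "\<dots> = (\<lambda>xs y. p * (bockc G p n f xs y + cobound G n c xs y))"
    by (simp add: bockc_eq[OF f(2)] fun_eq_iff distrib_left)
  finally have eq: "cobound G n g = (\<lambda>xs y. p * (bockc G p n f xs y + cobound G n c xs y))" .
  then have "dvdp p (cobound G n g)" by (simp add: dvdp_def)
  moreover have "bockc G p n g = bockc G p n f + cobound G n c"
    using p by (simp add: bockc_def eq fun_eq_iff)
  ultimately show ?thesis using CB_cobound[OF G cC] by simp
qed

lemma bockc_eqv:
  assumes G: "group G" and p: "p \<noteq> 0" and f: "f \<in> CC G n" "dvdp p (cobound G n f)"
    and g: "g \<in> CC G n" and e: "eqv G p n g f"
  shows "eqv G p (Suc n) (bockc G p n g) (bockc G p n f)"
proof -
  have "bockc G p n g - bockc G p n f \<in> CB G (Suc n)" using bockc_welldef[OF assms] by simp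
  then have "eqv G p (Suc n) (bockc G p n f + (bockc G p n g - bockc G p n f)) (bockc G p n f)" by (rule eqv_CB)
  then show ?thesis by simp
qed

lemma Zp_iff: "f \<in> Zp G p n \<longleftrightarrow> f \<in> CC G n \<and> dvdp p (cobound G n f)"
  by (simp add: Zp_def Cint_def congp_dvdp)

lemma Hp_rep:
  assumes G: "group G" and p: "p \<noteq> 0" and X: "X \<in> Hp G p n"
  shows "rep X \<in> CC G n \<and> dvdp p (cobound G n (rep X)) \<and> X = clsp G p n (rep X)"
proof -
  obtain f where f: "f \<in> CC G n" "dvdp p (cobound G n f)" "X = clsp G p n f" using X by (auto simp: Hp_def Zp_iff)
  have r: "rep X \<in> CC G n" "eqv G p n (rep X) f" using rep_clsp[OF f(1), of p] f(3) by auto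
  then show ?thesis using bockc_welldef[OF G p f(1,2) r(1,2)] clsp_eqv[OF r(2)] f(3) by simp
qed

lemma bockc_Zp:
  assumes G: "group G" and p: "p \<noteq> 0" and f: "f \<in> CC G n" "dvdp p (cobound G n f)"
  shows "bockc G p n f \<in> Zp G p (Suc n)"
  using bockc_CC[OF G f(1)] bockc_cocycle[OF p f(2)] by (simp add: Zp_iff)

lemma BockG_Hp:
  assumes G: "group G" and p: "p \<noteq> 0" and X: "X \<in> Hp G p n"
  shows "BockG G p n X \<in> Hp G p (Suc n)"
  using Hp_rep[OF G p X] bockc_Zp[OF G p] by (simp add: BockG_def Hp_def)

lemma BockG_BockG:
  assumes G: "group G" and p: "p \<noteq> 0" and X: "X \<in> Hp G p n"
  shows "BockG G p (Suc n) (BockG G p n X) = clsp G p (Suc (Suc n)) 0"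
proof -
  define f where "f = rep X"
  have f: "f \<in> CC G n" "dvdp p (cobound G n f)" using Hp_rep[OF G p X] by (auto simp: f_def)
  define B where "B = bockc G p n f"
  have B: "B \<in> CC G (Suc n)" "cobound G (Suc n) B = 0"
    using bockc_CC[OF G f(1)] bockc_cocycle[OF p f(2)] by (auto simp: B_def)
  define g where "g = rep (BockG G p n X)"
  have g: "g \<in> CC G (Suc n)" "eqv G p (Suc n) g B"
    using rep_clsp[OF B(1), of p] by (auto simp: g_def BockG_def B_def f_def)
  have "bockc G p (Suc n) g - bockc G p (Suc n) B \<in> CB G (Suc (Suc n))"
    using bockc_welldef[OF G p B(1) _ g] B(2) by simp
  moreover have "bockc G p (Suc n) B = 0" using B(2) by (simp add: bockc_def fun_eq_iff)
  ultimately have "bockc G p (Suc n) g \<in> CB G (Suc (Suc n))" by simp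
  then have "eqv G p (Suc (Suc n)) (0 + bockc G p (Suc n) g) 0" by (rule eqv_CB)
  moreover have "BockG G p (Suc n) (BockG G p n X) = clsp G p (Suc (Suc n)) (bockc G p (Suc n) g)"
    by (simp add: BockG_def g_def)
  ultimately show ?thesis by (simp add: clsp_eqv)
qed

lemma sg_pow: "(\<lambda>xs. sg m (F xs)) = (\<lambda>xs y. (-1)^m * (F xs y :: 'r::comm_ring_1))"
  by (auto simp: sg_def fun_eq_iff)

lemma sg_sg_id: "sg m (sg m x) = x"
  by (simp add: sg_def)

lemma CB_sg: "x \<in> CB G n \<Longrightarrow> (\<lambda>xs. sg k (x xs)) \<in> CB G n"
proof -
  assume x: "x \<in> CB G n"
  have "(\<lambda>xs. - x xs) = - x" by (simp add: fun_eq_iff)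
  then show ?thesis using x CB_neg[OF x] by (cases "even k") (auto simp: sg_def)
qed

lemma bockc_cup:
  assumes p: "p \<noteq> 0" and f: "dvdp p (cobound G m f)" and g: "dvdp p (cobound G n g)"
  shows "dvdp p (cobound G (m+n) (cupc G (gmult G) m n f g)) \<and>
    bockc G p (m+n) (cupc G (gmult G) m n f g)
     = cupc G (gmult G) (Suc m) n (bockc G p m f) g + (\<lambda>xs. sg m (cupc G (gmult G) m (Suc n) f (bockc G p n g) xs))"
proof -
  define R where "R = cupc G (gmult G) (Suc m) n (bockc G p m f) g + (\<lambda>xs. sg m (cupc G (gmult G) m (Suc n) f (bockc G p n g) xs))"
  have "cobound G (m+n) (cupc G (gmult G) m n f g)
     = cupc G (gmult G) (Suc m) n (cobound G m f) g + (\<lambda>xs. sg m (cupc G (gmult G) m (Suc n) f (cobound G n g) xs))"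
    by (rule leibniz_gmult)
  also have "\<dots> = (\<lambda>xs y. p * R xs y)"
    by (simp add: bockc_eq[OF f] bockc_eq[OF g] cupc_smult1 cupc_smult2 R_def fun_eq_iff sg_def distrib_left)
  finally have e: "cobound G (m+n) (cupc G (gmult G) m n f g) = (\<lambda>xs y. p * R xs y)" .
  moreover have "bockc G p (m+n) (cupc G (gmult G) m n f g) = R" using p e by (simp add: bockc_def fun_eq_iff)
  ultimately show ?thesis by (simp add: dvdp_def R_def)
qed

lemma cup_eqv_left:
  assumes G: "group G" and e: "eqv G p m F F'" and g: "g \<in> CC G n" "dvdp p (cobound G n g)"
  shows "eqv G p (m+n) (cupc G (gmult G) m n F g) (cupc G (gmult G) m n F' g)"
proof -
  obtain \<beta> where \<beta>: "\<beta> \<in> CB G m" "dvdp p (F - F' - \<beta>)" using e by (auto simp: eqv_def)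
  show ?thesis
  proof (cases m)
    case 0
    then have "\<beta> = 0" using \<beta>(1) by (simp add: cobs_def)
    then have "dvdp p (cupc G (gmult G) m n F g - cupc G (gmult G) m n F' g)"
      using dvdp_cupc1[OF \<beta>(2)] by (simp add: cupc_diff1)
    then show ?thesis by (rule eqv_dvdp)
  next
    case (Suc m')
    then obtain b where b: "b \<in> CC G m'" "\<beta> = cobound G m' b" using \<beta>(1) by (auto simp: cobs_def)
    define B where "B = cobound G (m'+n) (cupc G (gmult G) m' n b g)"
    have BC: "B \<in> CB G (m+n)" using CB_cobound[OF G CC_cupc[OF G b(1) g(1)]] Suc by (simp add: B_def)
    have L: "B = cupc G (gmult G) m n \<beta> g + (\<lambda>xs. sg m' (cupc G (gmult G) m' (Suc n) b (cobound G n g) xs))"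
      using leibniz_gmult[of G m' n b g] by (simp add: B_def b(2) Suc)
    have "cupc G (gmult G) m n F g - cupc G (gmult G) m n F' g - B
        = cupc G (gmult G) m n (F - F' - \<beta>) g - (\<lambda>xs. sg m' (cupc G (gmult G) m' (Suc n) b (cobound G n g) xs))"
      by (simp add: L cupc_diff1 cupc_add1 algebra_simps)
    moreover have "dvdp p \<dots>"
      by (intro dvdp_diff dvdp_cupc1[OF \<beta>(2)] dvdp_sg dvdp_cupc2 g(2))
    ultimately show ?thesis using BC unfolding eqv_def by metis
  qed
qed

lemma cup_eqv_right:
  assumes G: "group G" and f: "f \<in> CC G m" "dvdp p (cobound G m f)" and e: "eqv G p n H H'"
  shows "eqv G p (m+n) (cupc G (gmult G) m n f H) (cupc G (gmult G) m n f H')"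
proof -
  obtain \<beta> where \<beta>: "\<beta> \<in> CB G n" "dvdp p (H - H' - \<beta>)" using e by (auto simp: eqv_def)
  show ?thesis
  proof (cases n)
    case 0
    then have "\<beta> = 0" using \<beta>(1) by (simp add: cobs_def)
    then have "dvdp p (cupc G (gmult G) m n f H - cupc G (gmult G) m n f H')"
      using dvdp_cupc2[OF \<beta>(2)] by (simp add: cupc_diff2)
    then show ?thesis by (rule eqv_dvdp)
  next
    case (Suc n')
    then obtain b where b: "b \<in> CC G n'" "\<beta> = cobound G n' b" using \<beta>(1) by (auto simp: cobs_def)
    define B where "B = (\<lambda>xs. sg m (cobound G (m+n') (cupc G (gmult G) m n' f b) xs))"
    have BC: "B \<in> CB G (m+n)" unfolding B_def
      using CB_sg[OF CB_cobound[OF G CC_cupc[OF G f(1) b(1)]]] Suc by simp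
    have L: "cobound G (m+n') (cupc G (gmult G) m n' f b) xs
       = cupc G (gmult G) (Suc m) n' (cobound G m f) b xs + sg m (cupc G (gmult G) m n f \<beta> xs)" for xs
      using leibniz_gmult[of G m n' f b] by (simp add: b(2) Suc)
    have "cupc G (gmult G) m n f H - cupc G (gmult G) m n f H' - B
        = cupc G (gmult G) m n f (H - H' - \<beta>) - (\<lambda>xs. sg m (cupc G (gmult G) (Suc m) n' (cobound G m f) b xs))"
      by (rule ext) (simp add: B_def L sg_add sg_sg_id cupc_diff2 cupc_add2 algebra_simps)
    moreover have "dvdp p \<dots>"
      by (intro dvdp_diff dvdp_cupc2[OF \<beta>(2)] dvdp_sg dvdp_cupc1 f(2))
    ultimately show ?thesis using BC unfolding eqv_def by metis
  qed
qed

lemma Hp_leibniz: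
  assumes G: "group G" and p: "p \<noteq> 0" and X: "X \<in> Hp G p m" and Y: "Y \<in> Hp G p n"
  shows "BockG G p (m + n) (Cup_p G p m n X Y)
           = Add_p G p (Suc (m + n))
               (Cup_p G p (Suc m) n (BockG G p m X) Y)
               (Smul_p G p (Suc (m + n)) ((-1) ^ m) (Cup_p G p m (Suc n) X (BockG G p n Y)))"
proof -
  define f where "f = rep X"
  define g where "g = rep Y"
  have f: "f \<in> CC G m" "dvdp p (cobound G m f)" using Hp_rep[OF G p X] by (auto simp: f_def)
  have g: "g \<in> CC G n" "dvdp p (cobound G n g)" using Hp_rep[OF G p Y] by (auto simp: g_def)
  define Bf where "Bf = bockc G p m f"
  define Bg where "Bg = bockc G p n g"
  have Bf: "Bf \<in> CC G (Suc m)" "cobound G (Suc m) Bf = 0" using bockc_CC[OF G f(1)] bockc_cocycle[OF p f(2)] by (auto simp: Bf_def)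
  have Bg: "Bg \<in> CC G (Suc n)" "cobound G (Suc n) Bg = 0" using bockc_CC[OF G g(1)] bockc_cocycle[OF p g(2)] by (auto simp: Bg_def)
  define fg where "fg = cupc G (gmult G) m n f g"
  have fg: "fg \<in> CC G (m+n)" unfolding fg_def by (rule CC_cupc[OF G f(1) g(1)])
  have bc: "dvdp p (cobound G (m+n) fg)" "bockc G p (m+n) fg = cupc G (gmult G) (Suc m) n Bf g + (\<lambda>xs. sg m (cupc G (gmult G) m (Suc n) f Bg xs))"
    using bockc_cup[OF p f(2) g(2)] by (simp_all add: fg_def Bf_def Bg_def)
  define h where "h = rep (Cup_p G p m n X Y)"
  have h: "h \<in> CC G (m+n)" "eqv G p (m+n) h fg"
    using rep_clsp[OF fg, of p] by (auto simp: h_def Cup_p_def fg_def f_def g_def)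
  have LHS: "BockG G p (m + n) (Cup_p G p m n X Y) = clsp G p (Suc (m+n)) (bockc G p (m+n) h)"
    by (simp add: BockG_def h_def)
  have l: "eqv G p (Suc (m+n)) (bockc G p (m+n) h) (bockc G p (m+n) fg)"
    by (rule bockc_eqv[OF G p fg bc(1) h])
  define u where "u = rep (BockG G p m X)"
  have u: "u \<in> CC G (Suc m)" "eqv G p (Suc m) u Bf"
    using rep_clsp[OF Bf(1), of p] by (auto simp: u_def BockG_def Bf_def f_def)
  have ug: "cupc G (gmult G) (Suc m) n u g \<in> CC G (Suc m + n)" by (rule CC_cupc[OF G u(1) g(1)])
  define a where "a = rep (Cup_p G p (Suc m) n (BockG G p m X) Y)"
  have a: "a \<in> CC G (Suc m + n)" "eqv G p (Suc m + n) a (cupc G (gmult G) (Suc m) n u g)"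
    using rep_clsp[OF ug, of p] by (auto simp: a_def Cup_p_def u_def g_def)
  have a2: "eqv G p (Suc (m + n)) a (cupc G (gmult G) (Suc m) n Bf g)"
    using eqv_trans[OF a(2) cup_eqv_left[OF G u(2) g]] by simp
  define v where "v = rep (BockG G p n Y)"
  have v: "v \<in> CC G (Suc n)" "eqv G p (Suc n) v Bg"
    using rep_clsp[OF Bg(1), of p] by (auto simp: v_def BockG_def Bg_def g_def)
  have fv: "cupc G (gmult G) m (Suc n) f v \<in> CC G (m + Suc n)" by (rule CC_cupc[OF G f(1) v(1)])
  define w where "w = rep (Cup_p G p m (Suc n) X (BockG G p n Y))"
  have w: "w \<in> CC G (m + Suc n)" "eqv G p (m + Suc n) w (cupc G (gmult G) m (Suc n) f v)"
    using rep_clsp[OF fv, of p] by (auto simp: w_def Cup_p_def v_def f_def)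
  have w2: "eqv G p (Suc (m + n)) w (cupc G (gmult G) m (Suc n) f Bg)"
    using eqv_trans[OF w(2) cup_eqv_right[OF G f v(2)]] by simp
  have swC: "(\<lambda>xs y. (-1)^m * w xs y) \<in> CC G (Suc (m+n))" using CC_smult[OF w(1)] by simp
  define z where "z = rep (Smul_p G p (Suc (m + n)) ((-1) ^ m) (Cup_p G p m (Suc n) X (BockG G p n Y)))"
  have z: "z \<in> CC G (Suc (m+n))" "eqv G p (Suc (m+n)) z (\<lambda>xs y. (-1)^m * w xs y)"
    using rep_clsp[OF swC, of p] by (auto simp: z_def Smul_p_def w_def)
  have z2: "eqv G p (Suc (m+n)) z (\<lambda>xs. sg m (cupc G (gmult G) m (Suc n) f Bg xs))"
    using eqv_trans[OF z(2) eqv_smult[OF w2]] by (simp add: sg_pow)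
  have RHS: "Add_p G p (Suc (m + n))
               (Cup_p G p (Suc m) n (BockG G p m X) Y)
               (Smul_p G p (Suc (m + n)) ((-1) ^ m) (Cup_p G p m (Suc n) X (BockG G p n Y)))
       = clsp G p (Suc (m+n)) (a + z)"
    by (simp add: Add_p_def a_def z_def)
  have "eqv G p (Suc (m+n)) (a + z) (bockc G p (m+n) fg)"
    using eqv_add[OF a2 z2] bc(2) by simp
  then have "eqv G p (Suc (m+n)) (bockc G p (m+n) h) (a + z)"
    using eqv_trans[OF l eqv_sym] by blast
  then show ?thesis using LHS RHS clsp_eqv by metis
qed

section \<open>F_p-linear algebra inside a field of characteristic p\<close>

definition lc :: "'k::field list \<Rightarrow> (nat \<Rightarrow> int) \<Rightarrow> 'k" where
  "lc e d = (\<Sum>j<length e. of_int (d j) * e ! j)"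

definition indep :: "nat \<Rightarrow> 'k::field list \<Rightarrow> bool" where
  "indep p e \<longleftrightarrow> (\<forall>d. lc e d = 0 \<longrightarrow> (\<forall>j<length e. int p dvd d j))"

lemma lc_append: "lc (e @ [v]) d = lc e d + of_int (d (length e)) * v"
  by (simp add: lc_def nth_append)

lemma lc_cong: "(\<And>j. j < length e \<Longrightarrow> d j = d' j) \<Longrightarrow> lc e d = lc e d'"
  by (simp add: lc_def)

lemma lc_zero[simp]: "lc e (\<lambda>j. 0) = 0"
  by (simp add: lc_def)

lemma lc_diff: "lc e d - lc e d' = lc e (\<lambda>j. d j - d' j)"
  by (simp add: lc_def sum_subtractf left_diff_distrib)

lemma lc_smult: "of_int c * lc e d = lc e (\<lambda>j. c * d j)"
  by (simp add: lc_def sum_distrib_left mult.assoc)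

lemma char_of_int: "CHAR('k::field) = p \<Longrightarrow> (of_int z = (0::'k)) \<longleftrightarrow> int p dvd z"
proof -
  assume a: "CHAR('k::field) = p"
  have "(of_int z = (0::'k)) = (int CHAR('k) dvd z)" by (rule of_int_eq_0_iff_char_dvd)
  then show ?thesis using a by simp
qed

lemma inverse_modp:
  assumes "prime p" "CHAR('k::field) = p" "\<not> int p dvd d"
  shows "\<exists>u. (of_int d :: 'k) * of_int u = 1"
proof -
  have "prime (int p)" using assms(1) by simp
  then have "coprime d (int p)" using assms(3) prime_imp_coprime[of "int p" d] by (simp add: ac_simps)
  then have "gcd d (int p) = 1" by simp
  then obtain u v where uv: "u * d + v * int p = 1" using bezout_int[of d "int p"] by auto
  have "(of_int (v * int p) :: 'k) = 0" by (rule char_of_int[OF assms(2), THEN iffD2]) simp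
  moreover have "(of_int (u * d) :: 'k) + of_int (v * int p) = 1"
    using arg_cong[OF uv, of "of_int :: int \<Rightarrow> 'k"] by (simp only: of_int_add of_int_1)
  ultimately have "(of_int (u * d) :: 'k) = 1" by (metis add.right_neutral)
  then show ?thesis by (auto simp: mult.commute)
qed

lemma basis_exists:
  assumes fin: "finite S" and p: "prime p" and ch: "CHAR('k::field) = p"
  shows "\<exists>e :: 'k list. indep p e \<and> (\<forall>v\<in>S. \<exists>d. v = lc e d)"
  using fin
proof (induction S rule: finite_induct)
  case empty
  have "indep p ([] :: 'k list)" by (simp add: indep_def)
  then show ?case by blast
next
  case (insert v S)
  then obtain e :: "'k list" where e: "indep p e" "\<forall>w\<in>S. \<exists>d. w = lc e d" by blast
  show ?case
  proof (cases "\<exists>d. v = lc e d")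
    case True then show ?thesis using e by blast
  next
    case False
    define N where "N = length e"
    have ind: "indep p (e @ [v])"
      unfolding indep_def
    proof (intro allI impI)
      fix d j assume d0: "lc (e @ [v]) d = 0" and j: "j < length (e @ [v])"
      have d0': "lc e d + of_int (d N) * v = 0" using d0 by (simp add: lc_append N_def)
      have dN: "int p dvd d N"
      proof (rule ccontr)
        assume "\<not> int p dvd d N"
        then obtain u where u: "(of_int (d N) :: 'k) * of_int u = 1" using inverse_modp[OF p ch] by blast
        have "of_int u * (of_int (d N) * v) = ((of_int (d N) :: 'k) * of_int u) * v" by (simp add: ac_simps)
        then have "v = of_int u * (of_int (d N) * v)" using u by simp
        also have "\<dots> = of_int u * (- lc e d)" using minus_unique[OF d0'] by simp
        also have "\<dots> = lc e (\<lambda>j. (- u) * d j)" using lc_smult[of "- u" e d] by simp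
        finally show False using False by blast
      qed
      then have "(of_int (d N) :: 'k) = 0" using char_of_int[OF ch] by simp
      then have "lc e d = 0" using d0' by simp
      then have "\<forall>j<length e. int p dvd d j" using e(1) by (simp add: indep_def)
      then show "int p dvd d j" using j dN by (auto simp: N_def less_Suc_eq)
    qed
    have "\<forall>w\<in>insert v S. \<exists>d. w = lc (e @ [v]) d"
    proof
      fix w assume "w \<in> insert v S"
      then show "\<exists>d. w = lc (e @ [v]) d"
      proof
        assume "w = v"
        then have "w = lc (e @ [v]) (\<lambda>j. if j = length e then 1 else 0)"
          by (simp add: lc_append lc_def)
        then show ?thesis by blast
      next
        assume "w \<in> S"
        then obtain d where d: "w = lc e d" using e(2) by blast
        have "lc (e @ [v]) (d(length e := 0)) = lc e d"
          by (simp add: lc_append) (rule lc_cong, simp)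
        then show ?thesis using d by metis
      qed
    qed
    then show ?thesis using ind by blast
  qed
qed

definition coord :: "'k::field list \<Rightarrow> 'k \<Rightarrow> nat \<Rightarrow> int" where
  "coord e v = (if v = 0 then (\<lambda>j. 0) else (SOME d. v = lc e d))"

lemma coord_0[simp]: "coord e 0 = (\<lambda>j. 0)"
  by (simp add: coord_def)

lemma coord_lc: "\<exists>d. v = lc e d \<Longrightarrow> v = lc e (coord e v)"
proof -
  assume ex: "\<exists>d. v = lc e d"
  show ?thesis unfolding coord_def using someI_ex[OF ex] by auto
qed

lemma indep_dvd:
  assumes "indep p e" "lc e d = lc e d'" "j < length e"
  shows "int p dvd d j - d' j"
proof -
  have "lc e (\<lambda>j. d j - d' j) = 0" using assms(2) lc_diff[of e d d'] by simp
  then show ?thesis using assms(1,3) by (auto simp: indep_def)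
qed

lemma lin_expand:
  fixes c :: "nat \<Rightarrow> 'k::field"
  assumes "\<And>j. j < l \<Longrightarrow> c j = lc e (a j)"
  shows "(\<Sum>j<l. c j * of_int (F j)) = lc e (\<lambda>i. \<Sum>j<l. a j i * F j)"
proof -
  have "(\<Sum>j<l. c j * of_int (F j)) = (\<Sum>j<l. \<Sum>i<length e. of_int (a j i) * e ! i * of_int (F j))"
    using assms by (simp add: lc_def sum_distrib_right)
  also have "\<dots> = (\<Sum>i<length e. \<Sum>j<l. of_int (a j i) * e ! i * of_int (F j))"
    by (rule sum.swap)
  also have "\<dots> = lc e (\<lambda>i. \<Sum>j<l. a j i * F j)"
    unfolding lc_def by (simp add: sum_distrib_left of_int_sum mult_ac)
  finally show ?thesis .
qed

lemma sum_fun_apply: "(sum g A) x = sum (\<lambda>j. g j x) A"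
  by (induction A rule: infinite_finite_induct) auto

lemma finite_tuples: "finite (carrier G) \<Longrightarrow> finite (tuples G n)"
  using finite_lists_length_eq[of "carrier G" n] by (simp add: tuples_def conj_commute)

definition kcombG :: "('k::field \<times> ('g list \<Rightarrow> 'g \<Rightarrow> int)) list \<Rightarrow> 'g list \<Rightarrow> 'g \<Rightarrow> 'k" where
  "kcombG L = (\<lambda>xs y. \<Sum>j<length L. fst (L ! j) * of_int (snd (L ! j) xs y))"

definition validL :: "('g,'b) monoid_scheme \<Rightarrow> int \<Rightarrow> nat \<Rightarrow> ('k \<times> ('g list \<Rightarrow> 'g \<Rightarrow> int)) list \<Rightarrow> bool" where
  "validL G p n L \<longleftrightarrow> (\<forall>j<length L. snd (L ! j) \<in> CC G n \<and> dvdp p (cobound G n (snd (L ! j))))"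

definition bmap :: "('g,'b) monoid_scheme \<Rightarrow> int \<Rightarrow> nat \<Rightarrow> ('k \<times> ('g list \<Rightarrow> 'g \<Rightarrow> int)) list \<Rightarrow> ('k \<times> ('g list \<Rightarrow> 'g \<Rightarrow> int)) list" where
  "bmap G p n L = map (\<lambda>(c, \<phi>). (c, bockc G p n \<phi>)) L"

lemma kcombG_sum: "kcombG L = (\<Sum>j<length L. (\<lambda>xs y. fst (L ! j) * of_int (snd (L ! j) xs y)))"
  by (simp add: kcombG_def fun_eq_iff sum_fun_apply)

lemma kcombG_CC:
  assumes "\<And>j. j < length L \<Longrightarrow> snd (L ! j) \<in> CC G n"
  shows "kcombG L \<in> CC G n"
  unfolding kcombG_sum
proof (rule CC_sum)
  fix j assume "j \<in> {..<length L}"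
  then have "(\<lambda>xs y. (of_int (snd (L ! j) xs y) :: 'a)) \<in> CC G n" using assms by (intro CC_comp[where \<phi>=of_int]) auto
  then show "(\<lambda>xs y. fst (L ! j) * of_int (snd (L ! j) xs y)) \<in> CC G n" by (rule CC_smult)
qed

lemma cobound_kcombG: "cobound G n (kcombG L) = kcombG (map (\<lambda>(c, \<phi>). (c, cobound G n \<phi>)) L)"
proof -
  have e: "cobound G n (\<lambda>xs y. c * (of_int (\<phi> xs y) :: 'k::field)) = (\<lambda>xs y. c * of_int (cobound G n \<phi> xs y))" for c \<phi>
  proof -
    have "cobound G n (\<lambda>xs y. c * (\<lambda>xs y. (of_int (\<phi> xs y) :: 'k)) xs y) = (\<lambda>xs y. c * cobound G n (\<lambda>xs y. (of_int (\<phi> xs y) :: 'k)) xs y)"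
      by (rule cobound_smult)
    then show ?thesis by (simp add: cobound_of_int)
  qed
  show ?thesis
    by (simp add: kcombG_sum cobound_sum e case_prod_beta)
qed

lemma sum_split_add: "(\<Sum>j<a+(b::nat). F j) = (\<Sum>j<a. F j) + (\<Sum>j<b. F (a + j))"
  by (induction b) (simp_all add: add.assoc)

lemma kcombG_append: "kcombG (L @ L') = kcombG L + kcombG L'"
  by (simp add: kcombG_def fun_eq_iff nth_append sum_split_add)

lemma kcombG_scale: "kcombG (map (\<lambda>(c, \<phi>). (a * c, \<phi>)) L) = (\<lambda>xs y. a * kcombG L xs y)"
  by (simp add: kcombG_def fun_eq_iff sum_distrib_left case_prod_beta mult.assoc)

lemma kcombG_basis: "kcombG (map (\<lambda>i. (e ! i, F i)) [0..<length e]) xs y = lc e (\<lambda>i. F i xs y)"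
  by (simp add: kcombG_def lc_def mult.commute)

lemma bmap_append: "bmap G p n (L @ L') = bmap G p n L @ bmap G p n L'"
  by (simp add: bmap_def)
lemma bmap_scale: "bmap G p n (map (\<lambda>(c, \<phi>). (a * c, \<phi>)) L) = map (\<lambda>(c, \<phi>). (a * c, \<phi>)) (bmap G p n L)"
  by (simp add: bmap_def case_prod_beta)
lemma length_bmap[simp]: "length (bmap G p n L) = length L"
  by (simp add: bmap_def)
lemma nth_bmap: "j < length L \<Longrightarrow> bmap G p n L ! j = (fst (L ! j), bockc G p n (snd (L ! j)))"
  by (simp add: bmap_def case_prod_beta)

lemma validL_append: "validL G p n L \<Longrightarrow> validL G p n L' \<Longrightarrow> validL G p n (L @ L')"
  by (auto simp: validL_def nth_append)
lemma validL_scale: "validL G p n L \<Longrightarrow> validL G p n (map (\<lambda>(c, \<phi>). (a * c, \<phi>)) L)"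
  by (auto simp: validL_def case_prod_beta)

lemma bmap_valid:
  assumes "group G" "p \<noteq> 0" "validL G p n L"
  shows "validL G p (Suc n) (bmap G p n L)"
  unfolding validL_def
proof (intro allI impI)
  fix j assume j: "j < length (bmap G p n L)"
  then have "snd (L ! j) \<in> CC G n" "dvdp p (cobound G n (snd (L ! j)))" using assms(3) by (auto simp: validL_def)
  then show "snd (bmap G p n L ! j) \<in> CC G (Suc n) \<and> dvdp p (cobound G (Suc n) (snd (bmap G p n L ! j)))"
  proof -
    have "cobound G (Suc n) (bockc G p n (snd (L ! j))) = 0" by (rule bockc_cocycle[OF assms(2)]) fact
    then show ?thesis using j bockc_CC[OF assms(1) \<open>snd (L ! j) \<in> CC G n\<close>] by (simp add: nth_bmap)
  qed
qed

lemma kcombG_bmap_cocycle: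
  assumes "group G" "p \<noteq> 0" "validL G p n L"
  shows "cobound G (Suc n) (kcombG (bmap G p n L)) = 0"
proof -
  have "cobound G (Suc n) (kcombG (bmap G p n L)) = kcombG (map (\<lambda>(c, \<phi>). (c, cobound G (Suc n) \<phi>)) (bmap G p n L))"
    by (rule cobound_kcombG)
  also have "\<dots> = 0"
  proof -
    have z: "cobound G (Suc n) (bockc G p n (snd (L!j))) = 0" if "j < length L" for j
      using assms(3) that by (intro bockc_cocycle[OF assms(2)]) (auto simp: validL_def)
    show ?thesis by (auto simp: kcombG_def fun_eq_iff nth_bmap z intro!: sum.neutral)
  qed
  finally show ?thesis .
qed

text \<open>decomposition of a k-cochain along an F_p-basis\<close>

definition decL :: "'k::field list \<Rightarrow> ('g list \<Rightarrow> 'g \<Rightarrow> 'k) \<Rightarrow> ('k \<times> ('g list \<Rightarrow> 'g \<Rightarrow> int)) list" where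
  "decL e f = map (\<lambda>i. (e ! i, \<lambda>xs y. coord e (f xs y) i)) [0..<length e]"

lemma kcombG_decL:
  assumes "\<And>xs y. \<exists>d. f xs y = lc e d"
  shows "kcombG (decL e f) = f"
proof (rule ext, rule ext)
  fix xs y
  have "kcombG (decL e f) xs y = lc e (coord e (f xs y))"
    unfolding decL_def kcombG_basis by simp
  then show "kcombG (decL e f) xs y = f xs y" using coord_lc[OF assms] by simp
qed

lemma decL_CC: "f \<in> CC G n \<Longrightarrow> j < length (decL e f) \<Longrightarrow> snd (decL e f ! j) \<in> CC G n"
  unfolding decL_def by (simp add: CC_comp[where \<phi>="\<lambda>a. coord e a j"])

lemma values_basis:
  assumes G: "finite (carrier G)" and f: "f \<in> CC G n" and V: "finite V" and p: "prime p" and ch: "CHAR('k::field) = p"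
  shows "\<exists>e::'k list. indep p e \<and> (\<forall>v\<in>V. \<exists>d. v = lc e d) \<and> (\<forall>xs y. \<exists>d. f xs y = lc e d)"
proof -
  define S where "S = V \<union> (\<lambda>(xs, y). f xs y) ` (tuples G (Suc n) \<times> carrier G)"
  have "finite S" using V G finite_tuples[OF G] by (simp add: S_def)
  then obtain e :: "'k list" where e: "indep p e" "\<forall>v\<in>S. \<exists>d. v = lc e d" using basis_exists[OF _ p ch] by blast
  have "\<exists>d. f xs y = lc e d" for xs y
  proof (cases "xs \<in> tuples G (Suc n) \<and> y \<in> carrier G")
    case True then show ?thesis using e(2) by (auto simp: S_def)
  next
    case False
    then have "f xs y = 0" using cochainsD(1,2)[OF f] by (cases "xs \<in> tuples G (Suc n)") (auto simp: galg_def)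
    then show ?thesis by (metis lc_zero)
  qed
  then show ?thesis using e by (auto simp: S_def)
qed

lemma decomposition:
  assumes G: "group G" "finite (carrier G)" and f: "f \<in> CC G n" "cobound G n f = 0"
    and p: "prime p" and ch: "CHAR('k::field) = p"
  shows "\<exists>L. validL G (int p) n L \<and> kcombG L = (f :: 'g list \<Rightarrow> 'g \<Rightarrow> 'k)"
proof -
  obtain e :: "'k list" where e: "indep p e" "\<forall>xs y. \<exists>d. f xs y = lc e d"
    using values_basis[OF G(2) f(1) finite.emptyI p ch] by blast
  define L where "L = decL e f"
  have kL: "kcombG L = f" unfolding L_def by (rule kcombG_decL) (use e in auto)
  have "validL G (int p) n L"
    unfolding validL_def
  proof (intro allI impI conjI)
    fix j assume j: "j < length L"
    show "snd (L ! j) \<in> CC G n" unfolding L_def by (rule decL_CC[OF f(1) j[unfolded L_def]])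
    have jj: "j < length e" using j by (simp add: L_def decL_def)
    show "dvdp (int p) (cobound G n (snd (L ! j)))"
      unfolding dvdp_def
    proof (intro allI)
      fix xs y
      have "0 = cobound G n (kcombG L) xs y" using kL f(2) by simp
      also have "\<dots> = lc e (\<lambda>i. cobound G n (\<lambda>xs y. coord e (f xs y) i) xs y)"
        by (simp add: cobound_kcombG L_def decL_def kcombG_basis[of e "\<lambda>i. cobound G n (\<lambda>xs y. coord e (f xs y) i)", symmetric] comp_def)
      finally have "lc e (\<lambda>i. cobound G n (\<lambda>xs y. coord e (f xs y) i) xs y) = lc e (\<lambda>i. 0)" by simp
      from indep_dvd[OF e(1) this jj] show "int p dvd cobound G n (snd (L ! j)) xs y"
        using jj by (simp add: L_def decL_def)
    qed
  qed
  then show ?thesis using kL by blast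
qed

lemma W0:
  fixes G :: "('g,'b) monoid_scheme" and L :: "('k::field \<times> ('g list \<Rightarrow> 'g \<Rightarrow> int)) list"
  assumes G: "group G" "finite (carrier G)" and p: "prime p" and ch: "CHAR('k::field) = p"
    and L: "validL G (int p) n L" and K: "kcombG L \<in> CB G n"
  shows "kcombG (bmap G (int p) n L) \<in> CB G (Suc n)"
proof -
  have p0: "int p \<noteq> 0" using p by (auto simp: prime_gt_0_nat)
  obtain b :: "'g list \<Rightarrow> 'g \<Rightarrow> 'k" where b: "b \<in> CC G (n - 1)" "kcombG L = (if n = 0 then 0 else cobound G (n - 1) b)"
  proof (cases n)
    case 0 then show ?thesis using K that[of 0] by (simp add: cobs_def)
  next
    case (Suc n') then show ?thesis using K that by (auto simp: cobs_def)
  qed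
  obtain e :: "'k list" where e: "indep p e" "\<forall>v\<in>fst ` set L. \<exists>d. v = lc e d" "\<forall>xs y. \<exists>d. b xs y = lc e d"
    using values_basis[OF G(2) b(1) _ p ch, of "fst ` set L"] by blast
  define N where "N = length e"
  define l where "l = length L"
  define c where "c j = fst (L ! j)" for j
  define \<phi> where "\<phi> j = snd (L ! j)" for j
  define a where "a j = coord e (c j)" for j
  have ca: "c j = lc e (a j)" if "j < l" for j
    using coord_lc[of "c j" e] e(2) that by (auto simp: a_def c_def l_def)
  have \<phi>: "\<phi> j \<in> CC G n" "dvdp (int p) (cobound G n (\<phi> j))" if "j < l" for j
    using L that by (auto simp: validL_def \<phi>_def l_def)
  define \<Psi> where "\<Psi> i = (\<lambda>xs y. \<Sum>j<l. a j i * \<phi> j xs y)" for i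
  define bi where "bi i = (\<lambda>xs y. coord e (b xs y) i)" for i
  define \<beta> where "\<beta> i = (if n = 0 then 0 else cobound G (n - 1) (bi i))" for i
  have kL: "kcombG L xs y = (\<Sum>j<l. c j * of_int (\<phi> j xs y))" for xs y
    by (simp add: kcombG_def c_def \<phi>_def l_def)
  have one: "kcombG L xs y = lc e (\<lambda>i. \<Psi> i xs y)" for xs y
    unfolding kL \<Psi>_def by (rule lin_expand) (rule ca)
  have two: "kcombG L xs y = lc e (\<lambda>i. \<beta> i xs y)" for xs y
  proof (cases "n = 0")
    case True then show ?thesis using b(2) by (simp add: \<beta>_def)
  next
    case False
    have bd: "b = kcombG (decL e b)" by (rule kcombG_decL[symmetric]) (use e(3) in auto)
    have "kcombG L xs y = cobound G (n - 1) (kcombG (decL e b)) xs y" using b(2) False bd by simp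
    also have "\<dots> = kcombG (map (\<lambda>i. (e ! i, cobound G (n - 1) (bi i))) [0..<length e]) xs y"
      by (simp add: cobound_kcombG decL_def bi_def comp_def)
    also have "\<dots> = lc e (\<lambda>i. \<beta> i xs y)" by (simp add: kcombG_basis \<beta>_def False)
    finally show ?thesis .
  qed
  have dv: "int p dvd \<Psi> i xs y - \<beta> i xs y" if "i < N" for i xs y
    using indep_dvd[OF e(1), of "\<lambda>i. \<Psi> i xs y" "\<lambda>i. \<beta> i xs y" i] one two that by (simp add: N_def)
  have \<Psi>sum: "\<Psi> i = (\<Sum>j<l. (\<lambda>xs y. a j i * \<phi> j xs y))" for i
    by (simp add: \<Psi>_def fun_eq_iff sum_fun_apply)
  have \<Psi>C: "\<Psi> i \<in> CC G n" for i
    unfolding \<Psi>sum by (rule CC_sum) (auto intro: CC_smult \<phi>)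
  have cb\<Psi>: "cobound G n (\<Psi> i) = (\<lambda>xs y. int p * (\<Sum>j<l. a j i * bockc G (int p) n (\<phi> j) xs y))" for i
  proof -
    have "cobound G n (\<Psi> i) = (\<Sum>j<l. (\<lambda>xs y. a j i * cobound G n (\<phi> j) xs y))"
      unfolding \<Psi>sum by (simp add: cobound_sum cobound_smult)
    also have "\<dots> = (\<Sum>j<l. (\<lambda>xs y. a j i * (int p * bockc G (int p) n (\<phi> j) xs y)))"
      by (intro sum.cong refl) (simp add: bockc_eq[OF \<phi>(2)])
    finally show ?thesis by (simp add: fun_eq_iff sum_fun_apply sum_distrib_left ac_simps)
  qed
  have B\<Psi>: "bockc G (int p) n (\<Psi> i) = (\<lambda>xs y. \<Sum>j<l. a j i * bockc G (int p) n (\<phi> j) xs y)" for i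
    using p0 by (simp add: bockc_def cb\<Psi> fun_eq_iff)
  have "\<exists>\<gamma>. \<gamma> \<in> CC G n \<and> bockc G (int p) n (\<Psi> i) = cobound G n \<gamma>" if "i < N" for i
  proof -
    have biC: "bi i \<in> CC G (n - 1)" unfolding bi_def by (rule CC_comp[OF _ b(1)]) simp
    have \<beta>B: "\<beta> i \<in> CB G n"
    proof (cases n)
      case 0 then show ?thesis by (simp add: \<beta>_def)
    next
      case (Suc n') then show ?thesis using CB_cobound[OF G(1) biC] by (simp add: \<beta>_def)
    qed
    have "dvdp (int p) (\<Psi> i - 0 - \<beta> i)" using dv[OF that] by (simp add: dvdp_def)
    then have "eqv G (int p) n (\<Psi> i) 0" using \<beta>B by (auto simp: eqv_def)
    from bockc_welldef[OF G(1) p0 CC_zero _ \<Psi>C this]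
    have "bockc G (int p) n (\<Psi> i) - bockc G (int p) n 0 \<in> CB G (Suc n)" by (simp add: dvdp_def)
    moreover have "bockc G (int p) n 0 = 0" by (simp add: bockc_def fun_eq_iff)
    ultimately show ?thesis by (auto simp: cobs_def)
  qed
  then obtain \<gamma> where \<gamma>: "\<And>i. i < N \<Longrightarrow> \<gamma> i \<in> CC G n \<and> bockc G (int p) n (\<Psi> i) = cobound G n (\<gamma> i)"
    by metis
  define M where "M = map (\<lambda>i. (e ! i, \<gamma> i)) [0..<N]"
  have MC: "kcombG M \<in> CC G n" by (rule kcombG_CC) (auto simp: M_def \<gamma>)
  have "kcombG (bmap G (int p) n L) = cobound G n (kcombG M)"
  proof (rule ext, rule ext)
    fix xs y
    have "kcombG (bmap G (int p) n L) xs y = (\<Sum>j<l. c j * of_int (bockc G (int p) n (\<phi> j) xs y))"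
      by (simp add: kcombG_def nth_bmap c_def \<phi>_def l_def)
    also have "\<dots> = lc e (\<lambda>i. \<Sum>j<l. a j i * bockc G (int p) n (\<phi> j) xs y)"
      by (rule lin_expand) (rule ca)
    also have "\<dots> = lc e (\<lambda>i. cobound G n (\<gamma> i) xs y)"
    proof (rule lc_cong)
      fix j assume "j < length e"
      then have "j < N" by (simp add: N_def)
      then have "bockc G (int p) n (\<Psi> j) xs y = cobound G n (\<gamma> j) xs y" using \<gamma> by simp
      then show "(\<Sum>ja<l. a ja j * bockc G (int p) n (\<phi> ja) xs y) = cobound G n (\<gamma> j) xs y"
        by (simp add: B\<Psi>)
    qed
    also have "\<dots> = kcombG (map (\<lambda>i. (e ! i, cobound G n (\<gamma> i))) [0..<length e]) xs y"
      by (simp add: kcombG_basis)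
    also have "\<dots> = cobound G n (kcombG M) xs y"
      by (simp add: cobound_kcombG M_def N_def comp_def)
    finally show "kcombG (bmap G (int p) n L) xs y = cobound G n (kcombG M) xs y" .
  qed
  then show ?thesis using CB_cobound[OF G(1) MC] by simp
qed

lemma kcombG_neg: "kcombG (map (\<lambda>(c, \<phi>). (- c, \<phi>)) L) = - kcombG L"
  by (simp add: kcombG_def fun_eq_iff case_prod_beta sum_negf)
lemma bmap_neg: "bmap G p n (map (\<lambda>(c, \<phi>). (- c, \<phi>)) L) = map (\<lambda>(c, \<phi>). (- c, \<phi>)) (bmap G p n L)"
  by (simp add: bmap_def case_prod_beta)
lemma validL_neg: "validL G p n L \<Longrightarrow> validL G p n (map (\<lambda>(c, \<phi>). (- c, \<phi>)) L)"
  by (auto simp: validL_def case_prod_beta)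

lemma W:
  fixes G :: "('g,'b) monoid_scheme" and L L' :: "('k::field \<times> ('g list \<Rightarrow> 'g \<Rightarrow> int)) list"
  assumes G: "group G" "finite (carrier G)" and p: "prime p" and ch: "CHAR('k::field) = p"
    and L: "validL G (int p) n L" and L': "validL G (int p) n L'" and K: "kcombG L - kcombG L' \<in> CB G n"
  shows "kcombG (bmap G (int p) n L) - kcombG (bmap G (int p) n L') \<in> CB G (Suc n)"
proof -
  define M where "M = L @ map (\<lambda>(c, \<phi>). (- c, \<phi>)) L'"
  have M: "validL G (int p) n M" unfolding M_def by (intro validL_append validL_neg L L')
  have "kcombG M = kcombG L - kcombG L'" by (simp add: M_def kcombG_append kcombG_neg)
  then have "kcombG (bmap G (int p) n M) \<in> CB G (Suc n)" using W0[OF G p ch M] K by simp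
  moreover have "kcombG (bmap G (int p) n M) = kcombG (bmap G (int p) n L) - kcombG (bmap G (int p) n L')"
    by (simp add: M_def bmap_append bmap_neg kcombG_append kcombG_neg)
  ultimately show ?thesis by simp
qed

definition eqk :: "('g,'b) monoid_scheme \<Rightarrow> nat \<Rightarrow> ('g list \<Rightarrow> 'g \<Rightarrow> 'r::comm_ring_1) \<Rightarrow> ('g list \<Rightarrow> 'g \<Rightarrow> 'r) \<Rightarrow> bool" where
  "eqk G n f g \<longleftrightarrow> f - g \<in> CB G n"

lemma eqk_refl: "eqk G n f f" by (simp add: eqk_def)
lemma eqk_sym: "eqk G n f g \<Longrightarrow> eqk G n g f"
  using CB_neg[of "f - g" G n] by (simp add: eqk_def)
lemma eqk_trans: "eqk G n f g \<Longrightarrow> eqk G n g h \<Longrightarrow> eqk G n f h"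
  using CB_add[of "f - g" G n "g - h"] by (simp add: eqk_def)
lemma eqk_add: "eqk G n f g \<Longrightarrow> eqk G n f' g' \<Longrightarrow> eqk G n (f + f') (g + g')"
  using CB_add[of "f - g" G n "f' - g'"] by (simp add: eqk_def algebra_simps)
lemma eqk_smult: "eqk G n f g \<Longrightarrow> eqk G n (\<lambda>xs y. c * f xs y) (\<lambda>xs y. c * g xs y)"
proof -
  assume "eqk G n f g"
  then have "(\<lambda>xs y. c * (f - g) xs y) \<in> CB G n" unfolding eqk_def by (rule CB_smult)
  moreover have "(\<lambda>xs y. c * (f - g) xs y) = (\<lambda>xs y. c * f xs y) - (\<lambda>xs y. c * g xs y)"
    by (simp add: fun_eq_iff algebra_simps)
  ultimately show ?thesis by (simp add: eqk_def)
qed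
lemma eqk_CB: "b \<in> CB G n \<Longrightarrow> eqk G n (f + b) f"
  by (simp add: eqk_def)
lemma eqk_eq: "f = g \<Longrightarrow> eqk G n f g" by (simp add: eqk_refl)

lemma clsk_eqk: "eqk G n f f' \<Longrightarrow> clsk G n f = clsk G n f'"
proof -
  have *: "clsk G n f \<subseteq> clsk G n f'" if e: "eqk G n f f'" for f f' :: "'a list \<Rightarrow> 'a \<Rightarrow> 'k::field"
  proof
    fix g assume "g \<in> clsk G n f"
    then have "g \<in> CC G n" "eqk G n g f" by (auto simp: clsk_def Ck_def eqk_def)
    then show "g \<in> clsk G n f'" using eqk_trans[OF _ e] by (auto simp: clsk_def Ck_def eqk_def)
  qed
  assume "eqk G n f f'"
  then show ?thesis using *[of f f'] *[of f' f] eqk_sym by blast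
qed

lemma rep_clsk: "f \<in> CC G n \<Longrightarrow> rep (clsk G n f) \<in> CC G n \<and> eqk G n (rep (clsk G n f)) f"
proof -
  assume f: "f \<in> CC G n"
  then have "f \<in> clsk G n f" by (simp add: clsk_def Ck_def)
  then have "rep (clsk G n f) \<in> clsk G n f" by (rule rep_mem)
  then show ?thesis by (simp add: clsk_def Ck_def eqk_def)
qed

lemma eqk_cocycle: "eqk G n f g \<Longrightarrow> cobound G n g = 0 \<Longrightarrow> cobound G n f = 0"
  unfolding eqk_def using cobound_CB[of "f - g" G n] by (simp add: cobound_diff)

lemma Hk_rep: "X \<in> Hk G r \<Longrightarrow> rep X \<in> CC G r \<and> cobound G r (rep X) = 0 \<and> X = clsk G r (rep X)"
proof -
  assume "X \<in> Hk G r"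
  then obtain f where f: "f \<in> CC G r" "cobound G r f = 0" "X = clsk G r f" by (auto simp: Hk_def Ck_def)
  then show ?thesis using rep_clsk[OF f(1)] eqk_cocycle clsk_eqk by metis
qed

lemma Hk_I: "f \<in> CC G r \<Longrightarrow> cobound G r f = 0 \<Longrightarrow> clsk G r f \<in> Hk G r"
  by (auto simp: Hk_def Ck_def)

section \<open>The Bockstein on H(G,kG)\<close>

definition decOf :: "('g,'b) monoid_scheme \<Rightarrow> nat \<Rightarrow> nat \<Rightarrow> ('g list \<Rightarrow> 'g \<Rightarrow> 'k::field) \<Rightarrow> ('k \<times> ('g list \<Rightarrow> 'g \<Rightarrow> int)) list" where
  "decOf G p r f = (SOME L. validL G (int p) r L \<and> kcombG L = f)"

definition betak :: "('g,'b) monoid_scheme \<Rightarrow> nat \<Rightarrow> nat \<Rightarrow> ('g list \<Rightarrow> 'g \<Rightarrow> 'k::field) set \<Rightarrow> ('g list \<Rightarrow> 'g \<Rightarrow> 'k) set" where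
  "betak G p r X = clsk G (Suc r) (kcombG (bmap G (int p) r (decOf G p r (rep X))))"

locale kset =
  fixes G :: "('g,'b) monoid_scheme" and p :: nat and kw :: "'k::field itself"
  assumes grp: "group G" and fin: "finite (carrier G)" and pr: "prime p" and ch: "CHAR('k) = p"
begin

lemma p0: "int p \<noteq> 0" using pr by (auto simp: prime_gt_0_nat)

lemma decOf_spec:
  assumes "f \<in> CC G r" "cobound G r f = 0"
  shows "validL G (int p) r (decOf G p r f) \<and> kcombG (decOf G p r f) = (f :: 'g list \<Rightarrow> 'g \<Rightarrow> 'k)"
  using decomposition[OF grp fin assms pr ch] unfolding decOf_def by (rule someI_ex)

lemma betak_clsk:
  assumes f: "f \<in> CC G r" "cobound G r f = 0" and L: "validL G (int p) r L" "eqk G r (kcombG L) (f :: 'g list \<Rightarrow> 'g \<Rightarrow> 'k)"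
  shows "betak G p r (clsk G r f) = clsk G (Suc r) (kcombG (bmap G (int p) r L))"
proof -
  define g where "g = rep (clsk G r f)"
  have g: "g \<in> CC G r" "eqk G r g f" using rep_clsk[OF f(1)] by (auto simp: g_def)
  have gc: "cobound G r g = 0" using eqk_cocycle[OF g(2) f(2)] .
  define L' where "L' = decOf G p r g"
  have L': "validL G (int p) r L'" "kcombG L' = g" using decOf_spec[OF g(1) gc] by (auto simp: L'_def)
  have "eqk G r (kcombG L) (kcombG L')" using eqk_trans[OF L(2) eqk_sym[OF g(2)]] L'(2) by simp
  then have "eqk G (Suc r) (kcombG (bmap G (int p) r L)) (kcombG (bmap G (int p) r L'))"
    unfolding eqk_def by (rule W[OF grp fin pr ch L(1) L'(1)])
  then show ?thesis by (simp add: betak_def g_def[symmetric] L'_def[symmetric] clsk_eqk)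
qed

lemma betak_Hk:
  assumes X: "X \<in> Hk G r"
  shows "betak G p r X \<in> (Hk G (Suc r) :: ('g list \<Rightarrow> 'g \<Rightarrow> 'k) set set)"
proof -
  define f :: "'g list \<Rightarrow> 'g \<Rightarrow> 'k" where "f = rep X"
  have f: "f \<in> CC G r" "cobound G r f = 0" using Hk_rep[OF X] by (auto simp: f_def)
  define L where "L = decOf G p r f"
  have L: "validL G (int p) r L" using decOf_spec[OF f] by (simp add: L_def)
  have "kcombG (bmap G (int p) r L) \<in> CC G (Suc r)"
    using bmap_valid[OF grp p0 L] by (intro kcombG_CC) (auto simp: validL_def)
  moreover have "cobound G (Suc r) (kcombG (bmap G (int p) r L)) = 0" by (rule kcombG_bmap_cocycle[OF grp p0 L])
  ultimately show ?thesis by (simp add: betak_def f_def[symmetric] L_def[symmetric] Hk_I)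
qed

lemma betak_betak:
  assumes X: "X \<in> Hk G r"
  shows "betak G p (Suc r) (betak G p r X) = (clsk G (Suc (Suc r)) 0 :: ('g list \<Rightarrow> 'g \<Rightarrow> 'k) set)"
proof -
  define f :: "'g list \<Rightarrow> 'g \<Rightarrow> 'k" where "f = rep X"
  have f: "f \<in> CC G r" "cobound G r f = 0" using Hk_rep[OF X] by (auto simp: f_def)
  define L where "L = decOf G p r f"
  have L: "validL G (int p) r L" using decOf_spec[OF f] by (simp add: L_def)
  have BL: "validL G (int p) (Suc r) (bmap G (int p) r L)" by (rule bmap_valid[OF grp p0 L])
  have KC: "kcombG (bmap G (int p) r L) \<in> CC G (Suc r)" using BL by (intro kcombG_CC) (auto simp: validL_def)
  have Kc: "cobound G (Suc r) (kcombG (bmap G (int p) r L)) = 0" by (rule kcombG_bmap_cocycle[OF grp p0 L])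
  have "betak G p (Suc r) (betak G p r X) = clsk G (Suc (Suc r)) (kcombG (bmap G (int p) (Suc r) (bmap G (int p) r L)))"
    unfolding betak_def[of G p r] f_def[symmetric] L_def[symmetric]
    by (rule betak_clsk[OF KC Kc BL eqk_refl])
  also have "kcombG (bmap G (int p) (Suc r) (bmap G (int p) r L)) = 0"
  proof -
    have z: "bockc G (int p) (Suc r) (bockc G (int p) r (snd (L ! j))) = 0" if "j < length L" for j
    proof -
      have "cobound G (Suc r) (bockc G (int p) r (snd (L ! j))) = 0"
        using L that by (intro bockc_cocycle[OF p0]) (auto simp: validL_def)
      then show ?thesis by (simp add: bockc_def fun_eq_iff)
    qed
    show ?thesis by (auto simp: kcombG_def fun_eq_iff nth_bmap z intro!: sum.neutral)
  qed
  finally show ?thesis .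
qed

lemma betak_linear:
  assumes X: "X \<in> Hk G r" and Y: "Y \<in> Hk G r"
  shows "betak G p r (Add_k G r (Smul_k G r c X) Y)
       = Add_k G (Suc r) (Smul_k G (Suc r) c (betak G p r X)) (betak G p r (Y :: ('g list \<Rightarrow> 'g \<Rightarrow> 'k) set))"
proof -
  define f where "f = rep X"
  define g where "g = rep Y"
  have f: "f \<in> CC G r" "cobound G r f = 0" using Hk_rep[OF X] by (auto simp: f_def)
  have g: "g \<in> CC G r" "cobound G r g = 0" using Hk_rep[OF Y] by (auto simp: g_def)
  define LX where "LX = decOf G p r f"
  define LY where "LY = decOf G p r g"
  have LX: "validL G (int p) r LX" "kcombG LX = f" using decOf_spec[OF f] by (auto simp: LX_def)
  have LY: "validL G (int p) r LY" "kcombG LY = g" using decOf_spec[OF g] by (auto simp: LY_def)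
  define KX where "KX = kcombG (bmap G (int p) r LX)"
  define KY where "KY = kcombG (bmap G (int p) r LY)"
  have KXC: "KX \<in> CC G (Suc r)" unfolding KX_def using bmap_valid[OF grp p0 LX(1)] by (intro kcombG_CC) (auto simp: validL_def)
  have KYC: "KY \<in> CC G (Suc r)" unfolding KY_def using bmap_valid[OF grp p0 LY(1)] by (intro kcombG_CC) (auto simp: validL_def)
  have bX: "betak G p r X = clsk G (Suc r) KX" by (simp add: betak_def KX_def LX_def f_def)
  have bY: "betak G p r Y = clsk G (Suc r) KY" by (simp add: betak_def KY_def LY_def g_def)
  have cf: "(\<lambda>xs y. c * f xs y) \<in> CC G r" using CC_smult[OF f(1)] .
  define s where "s = rep (clsk G r (\<lambda>xs y. c * f xs y))"
  have s: "s \<in> CC G r" "eqk G r s (\<lambda>xs y. c * f xs y)" using rep_clsk[OF cf] by (auto simp: s_def)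
  have sg: "s + g \<in> CC G r" using CC_add[OF s(1) g(1)] .
  have sgc: "cobound G r (s + g) = 0"
  proof -
    have "cobound G r (\<lambda>xs y. c * f xs y) = 0" using f(2) by (simp add: cobound_smult fun_eq_iff)
    then have "cobound G r s = 0" using eqk_cocycle[OF s(2)] by simp
    then show ?thesis using g(2) by (simp add: cobound_add)
  qed
  define L where "L = map (\<lambda>(c', \<phi>). (c * c', \<phi>)) LX @ LY"
  have L: "validL G (int p) r L" unfolding L_def by (intro validL_append validL_scale LX(1) LY(1))
  have kL: "eqk G r (kcombG L) (s + g)"
    using eqk_add[OF eqk_sym[OF s(2)] eqk_refl[of G r g]]
    by (simp add: L_def kcombG_append kcombG_scale LX(2) LY(2))
  have "Add_k G r (Smul_k G r c X) Y = clsk G r (s + g)"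
    by (simp add: Add_k_def Smul_k_def s_def f_def g_def)
  then have LHS: "betak G p r (Add_k G r (Smul_k G r c X) Y) = clsk G (Suc r) (kcombG (bmap G (int p) r L))"
    using betak_clsk[OF sg sgc L kL] by simp
  have kB: "kcombG (bmap G (int p) r L) = (\<lambda>xs y. c * KX xs y) + KY"
    by (simp add: L_def bmap_append bmap_scale kcombG_append kcombG_scale KX_def KY_def)
  define u where "u = rep (clsk G (Suc r) KX)"
  have u: "u \<in> CC G (Suc r)" "eqk G (Suc r) u KX" using rep_clsk[OF KXC] by (auto simp: u_def)
  define v where "v = rep (clsk G (Suc r) KY)"
  have v: "v \<in> CC G (Suc r)" "eqk G (Suc r) v KY" using rep_clsk[OF KYC] by (auto simp: v_def)
  have cu: "(\<lambda>xs y. c * u xs y) \<in> CC G (Suc r)" using CC_smult[OF u(1)] .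
  define w where "w = rep (clsk G (Suc r) (\<lambda>xs y. c * u xs y))"
  have w: "eqk G (Suc r) w (\<lambda>xs y. c * u xs y)" using rep_clsk[OF cu] by (auto simp: w_def)
  have RHS: "Add_k G (Suc r) (Smul_k G (Suc r) c (betak G p r X)) (betak G p r Y) = clsk G (Suc r) (w + v)"
    by (simp add: Add_k_def Smul_k_def bX bY u_def v_def w_def)
  have "eqk G (Suc r) (w + v) ((\<lambda>xs y. c * KX xs y) + KY)"
    by (intro eqk_add v(2) eqk_trans[OF w eqk_smult[OF u(2)]])
  then show ?thesis using LHS RHS kB clsk_eqk by metis
qed

end

lemma sg_apply: "sg m (F::'a \<Rightarrow> 'b::ab_group_add) y = sg m (F y)"
  by (simp add: sg_def)

lemma kcombG_list: "kcombG L xs y = (\<Sum>x\<leftarrow>L. fst x * of_int (snd x xs y))"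
  by (simp add: kcombG_def sum_list_sum_nth atLeast0LessThan)

lemma sum_list_fun_apply: "(sum_list (map F xs)) y = sum_list (map (\<lambda>x. F x y) xs)"
  by (induction xs) auto

lemma gmult_zero1: "gmult G 0 b = (0::'g\<Rightarrow>'r::comm_ring_1)"
  by (simp add: gmult_def fun_eq_iff)
lemma gmult_zero2: "gmult G a 0 = (0::'g\<Rightarrow>'r::comm_ring_1)"
  by (simp add: gmult_def fun_eq_iff)
lemma gmult_sum_list1: "gmult G (sum_list (map F xs)) b = sum_list (map (\<lambda>x. gmult G (F x) (b::'g\<Rightarrow>'r::comm_ring_1)) xs)"
  by (induction xs) (simp only: list.map sum_list.Nil gmult_zero1, simp only: list.map sum_list.Cons gmult_add1)
lemma gmult_sum_list2: "gmult G a (sum_list (map F xs)) = sum_list (map (\<lambda>x. gmult G (a::'g\<Rightarrow>'r::comm_ring_1) (F x)) xs)"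
  by (induction xs) (simp only: list.map sum_list.Nil gmult_zero2, simp only: list.map sum_list.Cons gmult_add2)
lemma sum_list_swap: "(\<Sum>x\<leftarrow>A. \<Sum>z\<leftarrow>B. f x z) = (\<Sum>z\<leftarrow>B. \<Sum>x\<leftarrow>A. (f x z :: 'a::comm_monoid_add))"
  by (induction A) (simp_all add: sum_list_addf)

lemma sum_list_sg: "sum_list (map (\<lambda>x. sg m (F x)) xs) = sg m (sum_list (map F xs))"
  by (induction xs) (auto simp: sg_add)

lemma kcombG_fun: "kcombG L xs = sum_list (map (\<lambda>x. (\<lambda>y. fst x * of_int (snd x xs y))) L)"
  by (simp add: fun_eq_iff kcombG_list sum_list_fun_apply)

lemma cup_kcombG:
  "cupc G (gmult G) m n (kcombG LX) (kcombG LY) xs y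
    = (\<Sum>x\<leftarrow>LX. \<Sum>z\<leftarrow>LY. fst x * fst z * (of_int (cupc G (gmult G) m n (snd x) (snd z) xs y) :: 'k::field))"
proof (cases "xs \<in> tuples G (m + n + 1)")
  case False then show ?thesis by (simp add: cupc_def)
next
  case True
  have e: "gmult G (\<lambda>y. fst x * of_int (a y)) (\<lambda>y. fst z * of_int (b y)) y
      = fst x * fst z * (of_int (gmult G a b y) :: 'k)" for x z :: "'k \<times> 'c" and a b
    using gmult_of_int[of G a b, where 'k='k] by (simp add: gmult_smult1 gmult_smult2 fun_eq_iff mult.assoc)
  show ?thesis using True
    by (simp add: cupc_def kcombG_fun gmult_sum_list1 gmult_sum_list2 sum_list_fun_apply e sum_list_swap[where A=LY])
qed

definition prodL :: "(('g list \<Rightarrow> 'g \<Rightarrow> int) \<Rightarrow> ('g list \<Rightarrow> 'g \<Rightarrow> int) \<Rightarrow> ('g list \<Rightarrow> 'g \<Rightarrow> int))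
   \<Rightarrow> ('k::field \<times> ('g list \<Rightarrow> 'g \<Rightarrow> int)) list \<Rightarrow> ('k \<times> ('g list \<Rightarrow> 'g \<Rightarrow> int)) list \<Rightarrow> ('k \<times> ('g list \<Rightarrow> 'g \<Rightarrow> int)) list" where
  "prodL op LX LY = concat (map (\<lambda>x. map (\<lambda>z. (fst x * fst z, op (snd x) (snd z))) LY) LX)"

lemma sum_list_concat': "sum_list (concat xss) = sum_list (map sum_list xss)"
  by (induction xss) auto

lemma kcombG_prodL: "kcombG (prodL op LX LY) xs y = (\<Sum>x\<leftarrow>LX. \<Sum>z\<leftarrow>LY. fst x * fst z * of_int (op (snd x) (snd z) xs y))"
  by (simp add: kcombG_list prodL_def sum_list_concat' map_concat comp_def)

lemma validL_set: "validL G p n L \<longleftrightarrow> (\<forall>x\<in>set L. snd x \<in> CC G n \<and> dvdp p (cobound G n (snd x)))"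
  unfolding validL_def by (metis in_set_conv_nth)

lemma bmap_prodL: "bmap G p n (prodL op LX LY) = prodL (\<lambda>a b. bockc G p n (op a b)) LX LY"
  by (simp add: bmap_def prodL_def map_concat comp_def case_prod_beta)

lemma kcombG_cup:
  "kcombG (prodL (cupc G (gmult G) m n) LX LY) = cupc G (gmult G) m n (kcombG LX) (kcombG (LY :: ('k::field \<times> _) list))"
  by (simp add: fun_eq_iff kcombG_prodL cup_kcombG)

lemma validL_prodL:
  assumes G: "group G" and p: "p \<noteq> 0" and LX: "validL G p m LX" and LY: "validL G p n LY"
  shows "validL G p (m + n) (prodL (cupc G (gmult G) m n) LX LY)"
proof -
  have "snd w \<in> CC G (m+n) \<and> dvdp p (cobound G (m+n) (snd w))" if w: "w \<in> set (prodL (cupc G (gmult G) m n) LX LY)" for w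
  proof -
    obtain x z where xz: "x \<in> set LX" "z \<in> set LY" "snd w = cupc G (gmult G) m n (snd x) (snd z)"
      using w by (auto simp: prodL_def)
    have x: "snd x \<in> CC G m" "dvdp p (cobound G m (snd x))" using LX xz(1) by (auto simp: validL_set)
    have z: "snd z \<in> CC G n" "dvdp p (cobound G n (snd z))" using LY xz(2) by (auto simp: validL_set)
    show ?thesis using xz(3) CC_cupc[OF G x(1) z(1)] bockc_cup[OF p x(2) z(2)] by simp
  qed
  then show ?thesis by (simp add: validL_set)
qed

lemma kcombG_bmap_prodL:
  assumes G: "group G" and p: "p \<noteq> 0" and LX: "validL G p m LX" and LY: "validL G p n (LY :: ('k::field \<times> _) list)"
  shows "kcombG (bmap G p (m+n) (prodL (cupc G (gmult G) m n) LX LY))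
    = cupc G (gmult G) (Suc m) n (kcombG (bmap G p m LX)) (kcombG LY)
      + (\<lambda>xs. sg m (cupc G (gmult G) m (Suc n) (kcombG LX) (kcombG (bmap G p n LY)) xs))"
proof (rule ext, rule ext)
  fix xs y
  have sgof: "(of_int (sg m a) :: 'k) = sg m (of_int a)" for a by (simp add: sg_def)
  have sgm: "c * sg m (t :: 'k) = sg m (c * t)" for c t by (simp add: sg_def)
  have inner: "bockc G p (m+n) (cupc G (gmult G) m n (snd x) (snd z)) xs y
     = cupc G (gmult G) (Suc m) n (bockc G p m (snd x)) (snd z) xs y + sg m (cupc G (gmult G) m (Suc n) (snd x) (bockc G p n (snd z)) xs y)"
    if "x \<in> set LX" "z \<in> set LY" for x z
  proof -
    have "dvdp p (cobound G m (snd x))" "dvdp p (cobound G n (snd z))" using LX LY that by (auto simp: validL_set)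
    from bockc_cup[OF p this] show ?thesis by (simp add: fun_eq_iff sg_apply)
  qed
  have "kcombG (bmap G p (m+n) (prodL (cupc G (gmult G) m n) LX LY)) xs y
     = (\<Sum>x\<leftarrow>LX. \<Sum>z\<leftarrow>LY. fst x * fst z * of_int (bockc G p (m+n) (cupc G (gmult G) m n (snd x) (snd z)) xs y))"
    by (simp add: bmap_prodL kcombG_prodL)
  also have "\<dots> = (\<Sum>x\<leftarrow>LX. \<Sum>z\<leftarrow>LY. fst x * fst z * of_int (cupc G (gmult G) (Suc m) n (bockc G p m (snd x)) (snd z) xs y)
        + sg m (fst x * fst z * of_int (cupc G (gmult G) m (Suc n) (snd x) (bockc G p n (snd z)) xs y)))"
    by (intro arg_cong[where f=sum_list] map_cong refl) (simp add: inner sgof sgm distrib_left)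
  also have "\<dots> = (\<Sum>x\<leftarrow>LX. \<Sum>z\<leftarrow>LY. fst x * fst z * of_int (cupc G (gmult G) (Suc m) n (bockc G p m (snd x)) (snd z) xs y))
      + sg m (\<Sum>x\<leftarrow>LX. \<Sum>z\<leftarrow>LY. fst x * fst z * of_int (cupc G (gmult G) m (Suc n) (snd x) (bockc G p n (snd z)) xs y))"
    by (simp add: sum_list_addf sum_list_sg)
  also have "\<dots> = cupc G (gmult G) (Suc m) n (kcombG (bmap G p m LX)) (kcombG LY) xs y
      + sg m (cupc G (gmult G) m (Suc n) (kcombG LX) (kcombG (bmap G p n LY)) xs y)"
    by (simp add: cup_kcombG bmap_def comp_def case_prod_beta)
  finally show "kcombG (bmap G p (m+n) (prodL (cupc G (gmult G) m n) LX LY)) xs y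
    = (cupc G (gmult G) (Suc m) n (kcombG (bmap G p m LX)) (kcombG LY)
      + (\<lambda>xs. sg m (cupc G (gmult G) m (Suc n) (kcombG LX) (kcombG (bmap G p n LY)) xs))) xs y" by (simp add: sg_apply)
qed

lemma cupc_zero1: "cupc G (gmult G) m n 0 g = (0 :: 'g list \<Rightarrow> 'g \<Rightarrow> 'r::comm_ring_1)"
  by (simp add: cupc_def gmult_def fun_eq_iff)
lemma cupc_zero2: "cupc G (gmult G) m n f 0 = (0 :: 'g list \<Rightarrow> 'g \<Rightarrow> 'r::comm_ring_1)"
  by (simp add: cupc_def gmult_def fun_eq_iff)

lemma cup_cocycle:
  "cobound G m f = 0 \<Longrightarrow> cobound G n g = 0 \<Longrightarrow> cobound G (m+n) (cupc G (gmult G) m n f g) = (0 :: 'g list \<Rightarrow> 'g \<Rightarrow> 'r::comm_ring_1)"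
proof -
  assume a: "cobound G m f = 0" and b: "cobound G n g = 0"
  have "cobound G (m+n) (cupc G (gmult G) m n f g) = cupc G (gmult G) (Suc m) n (cobound G m f) g + (\<lambda>xs. sg m (cupc G (gmult G) m (Suc n) f (cobound G n g) xs))"
    by (rule leibniz_gmult)
  also have "\<dots> = 0 + (\<lambda>xs. sg m ((0::'g list \<Rightarrow> 'g \<Rightarrow> 'r) xs))" by (simp only: a b cupc_zero1 cupc_zero2)
  finally show ?thesis by (simp add: fun_eq_iff)
qed

lemma cup_eqk_left:
  assumes G: "group G" and e: "eqk G m u u'" and g: "g \<in> CC G n" "cobound G n g = 0"
  shows "eqk G (m+n) (cupc G (gmult G) m n u g) (cupc G (gmult G) m n u' (g :: 'g list \<Rightarrow> 'g \<Rightarrow> 'r::comm_ring_1))"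
proof (cases m)
  case 0
  then have "u - u' = 0" using e by (simp add: eqk_def cobs_def)
  then have "u = u'" by simp
  then show ?thesis by (simp add: eqk_refl)
next
  case (Suc m')
  then obtain b where b: "b \<in> CC G m'" "u - u' = cobound G m' b" using e by (auto simp: eqk_def cobs_def)
  have "cupc G (gmult G) m n u g - cupc G (gmult G) m n u' g = cupc G (gmult G) (Suc m') n (cobound G m' b) g"
    by (simp add: cupc_diff1[symmetric] b(2) Suc)
  also have "\<dots> = cobound G (m' + n) (cupc G (gmult G) m' n b g)"
    by (simp add: leibniz_gmult g(2) cupc_zero2 fun_eq_iff)
  finally show ?thesis using CB_cobound[OF G CC_cupc[OF G b(1) g(1)]] Suc by (simp add: eqk_def)
qed

lemma cup_eqk_right:
  assumes G: "group G" and f: "f \<in> CC G m" "cobound G m f = 0" and e: "eqk G n v v'"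
  shows "eqk G (m+n) (cupc G (gmult G) m n f v) (cupc G (gmult G) m n f (v' :: 'g list \<Rightarrow> 'g \<Rightarrow> 'r::comm_ring_1))"
proof (cases n)
  case 0
  then have "v - v' = 0" using e by (simp add: eqk_def cobs_def)
  then have "v = v'" by simp
  then show ?thesis by (simp add: eqk_refl)
next
  case (Suc n')
  then obtain b where b: "b \<in> CC G n'" "v - v' = cobound G n' b" using e by (auto simp: eqk_def cobs_def)
  have "cupc G (gmult G) m n f v - cupc G (gmult G) m n f v' = cupc G (gmult G) m (Suc n') f (cobound G n' b)"
    by (simp add: cupc_diff2[symmetric] b(2) Suc)
  also have "\<dots> = (\<lambda>xs. sg m (cobound G (m + n') (cupc G (gmult G) m n' f b) xs))"
    by (simp add: leibniz_gmult f(2) cupc_zero1 fun_eq_iff sg_sg_id)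
  finally show ?thesis using CB_sg[OF CB_cobound[OF G CC_cupc[OF G f(1) b(1)]]] Suc by (simp add: eqk_def)
qed

context kset begin

lemma betak_leibniz:
  assumes X: "X \<in> Hk G m" and Y: "Y \<in> Hk G n"
  shows "betak G p (m + n) (Cup_k G m n X Y)
     = Add_k G (Suc (m + n)) (Cup_k G (Suc m) n (betak G p m X) Y)
        (Smul_k G (Suc (m + n)) ((-1) ^ m) (Cup_k G m (Suc n) X (betak G p n (Y :: ('g list \<Rightarrow> 'g \<Rightarrow> 'k) set))))"
proof -
  define f where "f = rep X"
  define g where "g = rep Y"
  have f: "f \<in> CC G m" "cobound G m f = 0" using Hk_rep[OF X] by (auto simp: f_def)
  have g: "g \<in> CC G n" "cobound G n g = 0" using Hk_rep[OF Y] by (auto simp: g_def)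
  define LX where "LX = decOf G p m f"
  define LY where "LY = decOf G p n g"
  have LX: "validL G (int p) m LX" "kcombG LX = f" using decOf_spec[OF f] by (auto simp: LX_def)
  have LY: "validL G (int p) n LY" "kcombG LY = g" using decOf_spec[OF g] by (auto simp: LY_def)
  define KX where "KX = kcombG (bmap G (int p) m LX)"
  define KY where "KY = kcombG (bmap G (int p) n LY)"
  have KXC: "KX \<in> CC G (Suc m)" unfolding KX_def using bmap_valid[OF grp p0 LX(1)] by (intro kcombG_CC) (auto simp: validL_def)
  have KYC: "KY \<in> CC G (Suc n)" unfolding KY_def using bmap_valid[OF grp p0 LY(1)] by (intro kcombG_CC) (auto simp: validL_def)
  have bX: "betak G p m X = clsk G (Suc m) KX" by (simp add: betak_def KX_def LX_def f_def)
  have bY: "betak G p n Y = clsk G (Suc n) KY" by (simp add: betak_def KY_def LY_def g_def)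
  define fg where "fg = cupc G (gmult G) m n f g"
  have fgC: "fg \<in> CC G (m+n)" unfolding fg_def by (rule CC_cupc[OF grp f(1) g(1)])
  have fgc: "cobound G (m+n) fg = 0" unfolding fg_def by (rule cup_cocycle[OF f(2) g(2)])
  define L where "L = prodL (cupc G (gmult G) m n) LX LY"
  have L: "validL G (int p) (m+n) L" unfolding L_def by (rule validL_prodL[OF grp p0 LX(1) LY(1)])
  have kL: "kcombG L = fg" by (simp add: L_def kcombG_cup LX(2) LY(2) fg_def)
  have LHS: "betak G p (m + n) (Cup_k G m n X Y) = clsk G (Suc (m+n)) (kcombG (bmap G (int p) (m+n) L))"
    using betak_clsk[OF fgC fgc L eqk_eq[OF kL]] by (simp add: Cup_k_def fg_def f_def g_def)
  have kB: "kcombG (bmap G (int p) (m+n) L) = cupc G (gmult G) (Suc m) n KX g + (\<lambda>xs. sg m (cupc G (gmult G) m (Suc n) f KY xs))"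
    unfolding L_def KX_def KY_def using kcombG_bmap_prodL[OF grp p0 LX(1) LY(1)] by (simp add: LX(2) LY(2))
  define u where "u = rep (clsk G (Suc m) KX)"
  have u: "u \<in> CC G (Suc m)" "eqk G (Suc m) u KX" using rep_clsk[OF KXC] by (auto simp: u_def)
  have ugC: "cupc G (gmult G) (Suc m) n u g \<in> CC G (Suc m + n)" by (rule CC_cupc[OF grp u(1) g(1)])
  define a where "a = rep (clsk G (Suc m + n) (cupc G (gmult G) (Suc m) n u g))"
  have a: "eqk G (Suc m + n) a (cupc G (gmult G) (Suc m) n u g)" using rep_clsk[OF ugC] by (auto simp: a_def)
  have a2: "eqk G (Suc (m + n)) a (cupc G (gmult G) (Suc m) n KX g)"
    using eqk_trans[OF a cup_eqk_left[OF grp u(2) g]] by simp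
  define v where "v = rep (clsk G (Suc n) KY)"
  have v: "v \<in> CC G (Suc n)" "eqk G (Suc n) v KY" using rep_clsk[OF KYC] by (auto simp: v_def)
  have fvC: "cupc G (gmult G) m (Suc n) f v \<in> CC G (m + Suc n)" by (rule CC_cupc[OF grp f(1) v(1)])
  define w where "w = rep (clsk G (m + Suc n) (cupc G (gmult G) m (Suc n) f v))"
  have w: "w \<in> CC G (m + Suc n)" "eqk G (m + Suc n) w (cupc G (gmult G) m (Suc n) f v)" using rep_clsk[OF fvC] by (auto simp: w_def)
  have w2: "eqk G (Suc (m + n)) w (cupc G (gmult G) m (Suc n) f KY)"
    using eqk_trans[OF w(2) cup_eqk_right[OF grp f v(2)]] by simp
  have swC: "(\<lambda>xs y. (-1)^m * w xs y) \<in> CC G (Suc (m+n))" using CC_smult[OF w(1)] by simp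
  define z where "z = rep (clsk G (Suc (m+n)) (\<lambda>xs y. (-1)^m * w xs y))"
  have z: "eqk G (Suc (m+n)) z (\<lambda>xs y. (-1)^m * w xs y)" using rep_clsk[OF swC] by (auto simp: z_def)
  have z2: "eqk G (Suc (m+n)) z (\<lambda>xs. sg m (cupc G (gmult G) m (Suc n) f KY xs))"
    using eqk_trans[OF z eqk_smult[OF w2]] by (simp add: sg_pow)
  have RHS: "Add_k G (Suc (m + n)) (Cup_k G (Suc m) n (betak G p m X) Y)
        (Smul_k G (Suc (m + n)) ((-1) ^ m) (Cup_k G m (Suc n) X (betak G p n Y))) = clsk G (Suc (m+n)) (a + z)"
    by (simp add: Add_k_def Smul_k_def Cup_k_def bX bY a_def z_def u_def v_def w_def f_def g_def)
  have "eqk G (Suc (m+n)) (a + z) (kcombG (bmap G (int p) (m+n) L))"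
    using eqk_add[OF a2 z2] kB by simp
  then show ?thesis using LHS RHS clsk_eqk eqk_sym by metis
qed

end

definition trg :: "('g,'b) monoid_scheme \<Rightarrow> 'g set \<Rightarrow> ('g list \<Rightarrow> 'g \<Rightarrow> 'r::comm_ring_1) \<Rightarrow> 'g list \<Rightarrow> 'g \<Rightarrow> 'r" where
  "trg G H f = (\<lambda>xs. if set xs \<subseteq> carrier G
      then (\<Sum>t\<in>ltransversal G H. cact G t (f (map (\<lambda>x. inv\<^bsub>G\<^esub> t \<otimes>\<^bsub>G\<^esub> x) xs)))
      else 0)"

definition thg :: "'g \<Rightarrow> ('g list \<Rightarrow> 'r::comm_ring_1) \<Rightarrow> 'g list \<Rightarrow> 'g \<Rightarrow> 'r" where
  "thg g f = (\<lambda>xs y. if y = g then f xs else 0)"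

lemma trc_trg: "trc G H f = trg G H f"
  by (simp add: trc_def trg_def)
lemma thetac_thg: "thetac G g f = thg g f"
  by (simp add: thetac_def thg_def)

locale tset = group G for G :: "('g,'b) monoid_scheme" (structure) +
  fixes g :: 'g
  assumes fin: "finite (carrier G)" and gG: "g \<in> carrier G"
begin

abbreviation "HH \<equiv> centralizer G g"
abbreviation "TT \<equiv> ltransversal G HH"

lemma HH_sub: "HH \<subseteq> carrier G" by (auto simp: centralizer_def)

lemma HH_mult: "a \<in> HH \<Longrightarrow> b \<in> HH \<Longrightarrow> a \<otimes> b \<in> HH"
  using gG by (auto simp: centralizer_def m_assoc) (metis m_assoc)

lemma HH_inv: "a \<in> HH \<Longrightarrow> inv a \<in> HH"
proof -
  assume a: "a \<in> HH"
  then have ac: "a \<in> carrier G" "a \<otimes> g = g \<otimes> a" by (auto simp: centralizer_def)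
  have "inv a \<otimes> g = inv a \<otimes> (g \<otimes> a) \<otimes> inv a" using ac gG by (simp add: m_assoc)
  also have "\<dots> = inv a \<otimes> (a \<otimes> g) \<otimes> inv a" using ac by simp
  also have "\<dots> = g \<otimes> inv a" using ac(1) gG by (simp add: m_assoc[symmetric])
  finally show ?thesis using ac by (simp add: centralizer_def)
qed

lemma HH_one: "\<one> \<in> HH" using gG by (simp add: centralizer_def)

lemma HH_comm: "s \<in> HH \<Longrightarrow> s \<otimes> g \<otimes> inv s = g"
  using gG by (auto simp: centralizer_def m_assoc)

lemma lcos_iff: "t \<in> carrier G \<Longrightarrow> x \<in> carrier G \<Longrightarrow> x \<in> t <# HH \<longleftrightarrow> inv t \<otimes> x \<in> HH"
proof
  assume t: "t \<in> carrier G" and x: "x \<in> carrier G" and "x \<in> t <# HH"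
  then obtain h where h: "h \<in> HH" "x = t \<otimes> h" by (auto simp: l_coset_def)
  then show "inv t \<otimes> x \<in> HH" using t HH_sub by (auto simp: m_assoc[symmetric])
next
  assume t: "t \<in> carrier G" and x: "x \<in> carrier G" and "inv t \<otimes> x \<in> HH"
  moreover have "x = t \<otimes> (inv t \<otimes> x)" using t x by simp
  ultimately show "x \<in> t <# HH" unfolding l_coset_def by blast
qed

definition rp :: "'g \<Rightarrow> 'g" where
  "rp x = (SOME t. t \<in> {t \<in> carrier G. inv x \<otimes> t \<in> HH})"

lemma rp_mem: "x \<in> carrier G \<Longrightarrow> rp x \<in> carrier G \<and> inv x \<otimes> rp x \<in> HH"
proof -
  assume x: "x \<in> carrier G"
  have "x \<in> {t \<in> carrier G. inv x \<otimes> t \<in> HH}" using x HH_one by simp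
  then show ?thesis unfolding rp_def by (metis (mono_tags, lifting) mem_Collect_eq someI)
qed

lemma rp_eq: "x \<in> carrier G \<Longrightarrow> y \<in> carrier G \<Longrightarrow> inv x \<otimes> y \<in> HH \<Longrightarrow> rp x = rp y"
proof -
  assume x: "x \<in> carrier G" and y: "y \<in> carrier G" and xy: "inv x \<otimes> y \<in> HH"
  have "{t \<in> carrier G. inv x \<otimes> t \<in> HH} = {t \<in> carrier G. inv y \<otimes> t \<in> HH}"
  proof (intro Collect_cong conj_cong refl iffI)
    fix t assume t: "t \<in> carrier G" and "inv x \<otimes> t \<in> HH"
    then have "inv (inv x \<otimes> y) \<otimes> (inv x \<otimes> t) \<in> HH" using HH_mult HH_inv xy by blast
    then show "inv y \<otimes> t \<in> HH" using x y t by (simp add: inv_mult_group m_assoc)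
  next
    fix t assume t: "t \<in> carrier G" and "inv y \<otimes> t \<in> HH"
    then have "(inv x \<otimes> y) \<otimes> (inv y \<otimes> t) \<in> HH" using HH_mult xy by blast
    then show "inv x \<otimes> t \<in> HH" using x y t by (simp add: m_assoc)
  qed
  then show ?thesis by (simp add: rp_def)
qed

lemma TT_prop: "TT \<subseteq> carrier G \<and> (\<forall>x\<in>carrier G. \<exists>!t. t \<in> TT \<and> x \<in> t <# HH)"
proof -
  define T0 where "T0 = rp ` carrier G"
  have "T0 \<subseteq> carrier G \<and> (\<forall>x\<in>carrier G. \<exists>!t. t \<in> T0 \<and> x \<in> t <# HH)"
  proof (intro conjI ballI)
    show "T0 \<subseteq> carrier G" using rp_mem by (auto simp: T0_def)
  next
    fix x assume x: "x \<in> carrier G"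
    have r: "rp x \<in> carrier G" "inv x \<otimes> rp x \<in> HH" using rp_mem[OF x] by auto
    have "inv (rp x) \<otimes> x \<in> HH" using HH_inv[OF r(2)] x r(1) by (simp add: inv_mult_group)
    then have ex: "rp x \<in> T0 \<and> x \<in> rp x <# HH" using x r by (auto simp: T0_def lcos_iff)
    show "\<exists>!t. t \<in> T0 \<and> x \<in> t <# HH"
    proof (rule ex1I[of _ "rp x"])
      show "rp x \<in> T0 \<and> x \<in> rp x <# HH" by (rule ex)
    next
      fix t assume t: "t \<in> T0 \<and> x \<in> t <# HH"
      then obtain y where y: "y \<in> carrier G" "t = rp y" by (auto simp: T0_def)
      have ry: "rp y \<in> carrier G" "inv y \<otimes> rp y \<in> HH" using rp_mem[OF y(1)] by auto
      have "inv t \<otimes> x \<in> HH" using t y ry x lcos_iff by auto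
      then have "(inv y \<otimes> rp y) \<otimes> (inv t \<otimes> x) \<in> HH" using HH_mult ry by blast
      then have "inv y \<otimes> x \<in> HH" using y ry x by (simp add: m_assoc)
      then show "t = rp x" using rp_eq[OF y(1) x] y by simp
    qed
  qed
  then show ?thesis unfolding ltransversal_def by (rule someI)
qed

lemma TT_sub: "TT \<subseteq> carrier G" using TT_prop by blast
lemma TT_fin: "finite TT" using finite_subset[OF TT_sub fin] .

lemma TT_uniq: "x \<in> carrier G \<Longrightarrow> \<exists>!t. t \<in> TT \<and> inv t \<otimes> x \<in> HH"
proof -
  assume x: "x \<in> carrier G"
  have e: "\<And>t. (t \<in> TT \<and> x \<in> t <# HH) = (t \<in> TT \<and> inv t \<otimes> x \<in> HH)"
    using TT_sub lcos_iff x by blast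
  from TT_prop x have "\<exists>!t. t \<in> TT \<and> x \<in> t <# HH" by blast
  then show ?thesis by (simp only: e)
qed

end

lemma sum_list_sum_swap: "(\<Sum>x\<leftarrow>L. \<Sum>t\<in>T. f x t) = (\<Sum>t\<in>T. \<Sum>x\<leftarrow>L. (f x t :: 'a::comm_monoid_add))"
  by (induction L) (simp_all add: sum.distrib)

context tset begin

lemma trg_apply: "trg G HH F xs y = (if set xs \<subseteq> carrier G \<and> y \<in> carrier G
   then (\<Sum>t\<in>TT. F (map (\<lambda>x. inv t \<otimes> x) xs) (inv t \<otimes> y \<otimes> t)) else 0)"
  by (simp add: trg_def cact_def sum_fun_apply)

lemma inv_TT: "t \<in> TT \<Longrightarrow> inv t \<in> carrier G"
  using TT_sub by auto

lemma map_inv_tuples: "t \<in> TT \<Longrightarrow> xs \<in> tuples G k \<Longrightarrow> map (\<lambda>x. inv t \<otimes> x) xs \<in> tuples G k"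
  by (rule map_mult_tuples[OF is_group inv_TT])

lemma trg_zero: "F \<in> cochains G HH act M n \<Longrightarrow> xs \<notin> tuples G (Suc n) \<Longrightarrow> trg G HH F xs = 0"
proof -
  assume F: "F \<in> cochains G HH act M n" and xs: "xs \<notin> tuples G (Suc n)"
  show ?thesis
  proof (cases "set xs \<subseteq> carrier G")
    case False then show ?thesis by (simp add: trg_def)
  next
    case True
    then have "length xs \<noteq> Suc n" using xs by (simp add: tuples_iff)
    then have "F (map (\<lambda>x. inv t \<otimes> x) xs) = 0" for t using cochainsD(1)[OF F] by (simp add: tuples_iff)
    then show ?thesis by (simp add: trg_def)
  qed
qed

definition sig :: "'g \<Rightarrow> 'g \<Rightarrow> 'g" where
  "sig h t = (THE t'. t' \<in> TT \<and> inv t' \<otimes> (inv h \<otimes> t) \<in> HH)"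

lemma sig_prop: "h \<in> carrier G \<Longrightarrow> t \<in> TT \<Longrightarrow> sig h t \<in> TT \<and> inv (sig h t) \<otimes> (inv h \<otimes> t) \<in> HH"
  unfolding sig_def using TT_sub by (intro theI'[OF TT_uniq]) auto

lemma sig_inj: "h \<in> carrier G \<Longrightarrow> inj_on (sig h) TT"
proof (rule inj_onI)
  fix t1 t2 assume h: "h \<in> carrier G" and t: "t1 \<in> TT" "t2 \<in> TT" and e: "sig h t1 = sig h t2"
  have tc: "t1 \<in> carrier G" "t2 \<in> carrier G" using t TT_sub by auto
  define \<sigma> where "\<sigma> = sig h t1"
  have \<sigma>: "\<sigma> \<in> TT" "inv \<sigma> \<otimes> (inv h \<otimes> t1) \<in> HH" "inv \<sigma> \<otimes> (inv h \<otimes> t2) \<in> HH"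
    using sig_prop[OF h t(1)] sig_prop[OF h t(2)] e by (auto simp: \<sigma>_def)
  have \<sigma>c: "\<sigma> \<in> carrier G" using \<sigma>(1) TT_sub by auto
  have "inv (inv \<sigma> \<otimes> (inv h \<otimes> t2)) \<otimes> (inv \<sigma> \<otimes> (inv h \<otimes> t1)) \<in> HH"
    using HH_mult HH_inv \<sigma>(2,3) by blast
  moreover have "inv (inv \<sigma> \<otimes> (inv h \<otimes> t2)) \<otimes> (inv \<sigma> \<otimes> (inv h \<otimes> t1)) = inv t2 \<otimes> t1"
    using h tc \<sigma>c by (simp add: inv_mult_group m_assoc)
  ultimately have "inv t2 \<otimes> t1 \<in> HH" by simp
  moreover have "inv t1 \<otimes> t1 \<in> HH" using tc HH_one by simp
  ultimately show "t1 = t2" using TT_uniq[OF tc(1)] t by blast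
qed

lemma sig_bij: "h \<in> carrier G \<Longrightarrow> sig h ` TT = TT"
  by (rule endo_inj_surj[OF TT_fin]) (use sig_prop sig_inj in auto)

lemma trg_CC:
  assumes F: "F \<in> cochains G HH (cact G) (galg G) n"
  shows "trg G HH F \<in> CC G n"
proof (rule cochainsI)
  fix xs assume "xs \<notin> tuples G (Suc n)"
  then show "trg G HH F xs = 0" by (rule trg_zero[OF F])
next
  fix xs assume "xs \<in> tuples G (Suc n)"
  show "trg G HH F xs \<in> galg G" by (simp add: trg_def cact_galg galg_def cact_def sum_fun_apply)
next
  fix h xs assume h: "h \<in> carrier G" and xs: "xs \<in> tuples G (Suc n)"
  have hx: "map (\<lambda>x. h \<otimes> x) xs \<in> tuples G (Suc n)" by (rule map_mult_tuples[OF is_group h xs])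
  define term' where "term' t = cact G t (F (map (\<lambda>x. inv t \<otimes> x) xs))" for t
  have key: "cact G t (F (map (\<lambda>x. inv t \<otimes> x) (map (\<lambda>x. h \<otimes> x) xs))) = cact G h (term' (sig h t))"
    if t: "t \<in> TT" for t
  proof -
    define \<sigma> where "\<sigma> = sig h t"
    define s where "s = inv \<sigma> \<otimes> (inv h \<otimes> t)"
    have \<sigma>: "\<sigma> \<in> TT" "s \<in> HH" using sig_prop[OF h t] by (auto simp: \<sigma>_def s_def)
    have tc: "t \<in> carrier G" using t TT_sub by auto
    have \<sigma>c: "\<sigma> \<in> carrier G" using \<sigma>(1) TT_sub by auto
    have sinv: "inv s = inv t \<otimes> (h \<otimes> \<sigma>)" using h tc \<sigma>c by (simp add: s_def inv_mult_group m_assoc)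
    have sc: "inv s \<in> carrier G" "inv s \<in> HH" using HH_inv[OF \<sigma>(2)] HH_sub by auto
    have m: "map (\<lambda>x. inv t \<otimes> x) (map (\<lambda>x. h \<otimes> x) xs) = map (\<lambda>x. inv s \<otimes> x) (map (\<lambda>x. inv \<sigma> \<otimes> x) xs)"
      using xs h tc \<sigma>c by (auto simp: tuples_iff sinv m_assoc)
    have mt: "map (\<lambda>x. inv \<sigma> \<otimes> x) xs \<in> tuples G (Suc n)" by (rule map_inv_tuples[OF \<sigma>(1) xs])
    have "F (map (\<lambda>x. inv t \<otimes> x) (map (\<lambda>x. h \<otimes> x) xs)) = cact G (inv s) (F (map (\<lambda>x. inv \<sigma> \<otimes> x) xs))"
      using cochainsD(3)[OF F sc(2) mt] by (simp only: m)
    then have "cact G t (F (map (\<lambda>x. inv t \<otimes> x) (map (\<lambda>x. h \<otimes> x) xs))) = cact G t (cact G (inv s) (F (map (\<lambda>x. inv \<sigma> \<otimes> x) xs)))"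
      by simp
    also have "\<dots> = cact G (t \<otimes> inv s) (F (map (\<lambda>x. inv \<sigma> \<otimes> x) xs))"
      using cact_mult[OF tc sc(1)] by metis
    also have "t \<otimes> inv s = h \<otimes> \<sigma>" using tc h \<sigma>c by (simp add: sinv)
    also have "cact G (h \<otimes> \<sigma>) (F (map (\<lambda>x. inv \<sigma> \<otimes> x) xs)) = cact G h (term' \<sigma>)"
      using cact_mult[OF h \<sigma>c] by (simp add: term'_def)
    finally show ?thesis by (simp add: \<sigma>_def)
  qed
  have "trg G HH F (map (\<lambda>x. h \<otimes> x) xs) = (\<Sum>t\<in>TT. cact G h (term' (sig h t)))"
    using hx key by (simp add: trg_def tuples_iff)
  also have "\<dots> = cact G h (\<Sum>t\<in>TT. term' (sig h t))" by (simp add: cact_sum)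
  also have "(\<Sum>t\<in>TT. term' (sig h t)) = (\<Sum>t\<in>sig h ` TT. term' t)"
    by (rule sum.reindex[OF sig_inj[OF h], symmetric, unfolded comp_def])
  also have "\<dots> = (\<Sum>t\<in>TT. term' t)" by (simp add: sig_bij[OF h])
  finally show "trg G HH F (map (\<lambda>x. h \<otimes> x) xs) = cact G h (trg G HH F xs)"
    using xs by (simp add: trg_def term'_def tuples_iff)
qed

lemma trg_cobound: "cobound G n (trg G HH F) = trg G HH (cobound G n F)"
proof (rule ext)
  fix xs
  show "cobound G n (trg G HH F) xs = trg G HH (cobound G n F) xs"
  proof (cases "xs \<in> tuples G (n+2)")
    case True
    have sc: "cact G t (sg i a) = sg i (cact G t a)" for t i a by (simp add: sg_def cact_neg)
    have "cobound G n (trg G HH F) xs = (\<Sum>i\<le>n+1. sg i (\<Sum>t\<in>TT. cact G t (F (map (\<lambda>x. inv t \<otimes> x) (del_at i xs)))))"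
    proof -
      have d: "set (del_at i xs) \<subseteq> carrier G" for i using True set_del_at[of i xs] by (auto simp: tuples_iff)
      show ?thesis using True by (simp add: cobound_sg trg_def d del: sum.atMost_Suc)
    qed
    also have "\<dots> = (\<Sum>t\<in>TT. \<Sum>i\<le>n+1. sg i (cact G t (F (map (\<lambda>x. inv t \<otimes> x) (del_at i xs)))))"
      by (simp add: sg_sum sum.swap[of _ TT] del: sum.atMost_Suc)
    also have "\<dots> = trg G HH (cobound G n F) xs"
      using True map_inv_tuples[of _ xs "n+2"]
      by (simp add: trg_def tuples_iff cobound_sg cact_sum sc del_at_map del: sum.atMost_Suc)
    finally show ?thesis .
  next
    case False
    have "cobound G n F (map (\<lambda>x. inv t \<otimes> x) xs) = 0" if "set xs \<subseteq> carrier G" for t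
      using False that by (simp add: cobound_sg tuples_iff del: sum.atMost_Suc)
    then show ?thesis using False by (simp add: cobound_sg trg_def del: sum.atMost_Suc)
  qed
qed

end

abbreviation CT :: "('g,'b) monoid_scheme \<Rightarrow> 'g set \<Rightarrow> nat \<Rightarrow> ('g list \<Rightarrow> 'r::comm_ring_1) set" where
  "CT G H n \<equiv> cochains G H (\<lambda>h a. a) UNIV n"
abbreviation CBT :: "('g,'b) monoid_scheme \<Rightarrow> 'g set \<Rightarrow> nat \<Rightarrow> ('g list \<Rightarrow> 'r::comm_ring_1) set" where
  "CBT G H n \<equiv> cobs G H (\<lambda>h a. a) UNIV n"

lemma CT_add: "f \<in> CT G H n \<Longrightarrow> g \<in> CT G H n \<Longrightarrow> f + g \<in> CT G H n"
  by (simp add: cochains_def)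
lemma CT_neg: "f \<in> CT G H n \<Longrightarrow> - f \<in> CT G H n"
  by (simp add: cochains_def)
lemma CT_diff: "f \<in> CT G H n \<Longrightarrow> g \<in> CT G H n \<Longrightarrow> f - g \<in> CT G H n"
  by (simp add: cochains_def)
lemma CT_comp: "\<psi> 0 = 0 \<Longrightarrow> f \<in> CT G H n \<Longrightarrow> (\<lambda>xs. \<psi> (f xs)) \<in> CT G H n"
  by (simp add: cochains_def)
lemma CT_cobound: "group G \<Longrightarrow> H \<subseteq> carrier G \<Longrightarrow> f \<in> CT G H n \<Longrightarrow> cobound G n f \<in> CT G H (Suc n)"
  by (rule cobound_cochains) auto
lemma CT_zero: "0 \<in> CT G H n"
  by (simp add: cochains_def)

lemma CBT_CT: "group G \<Longrightarrow> H \<subseteq> carrier G \<Longrightarrow> f \<in> CBT G H n \<Longrightarrow> f \<in> CT G H n"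
  by (cases n) (auto simp: cobs_def CT_zero intro: CT_cobound)
lemma cobound_CBT: "f \<in> CBT G H n \<Longrightarrow> cobound G n f = 0"
  by (cases n) (auto simp: cobs_def cobound_cobound)
lemma CBT_add: "f \<in> CBT G H n \<Longrightarrow> g \<in> CBT G H n \<Longrightarrow> f + g \<in> CBT G H n"
proof (cases n)
  case 0 then show "f \<in> CBT G H n \<Longrightarrow> g \<in> CBT G H n \<Longrightarrow> f + g \<in> CBT G H n" by (simp add: cobs_def)
next
  case (Suc m)
  assume "f \<in> CBT G H n" "g \<in> CBT G H n"
  then obtain a b where "a \<in> CT G H m" "b \<in> CT G H m" "f = cobound G m a" "g = cobound G m b"
    using Suc by (auto simp: cobs_def)
  then have "f + g = cobound G m (a + b)" "a + b \<in> CT G H m" by (simp_all add: cobound_add CT_add)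
  then show ?thesis using Suc by (simp add: cobs_def)
qed
lemma CBT_neg: "f \<in> CBT G H n \<Longrightarrow> - f \<in> CBT G H n"
proof (cases n)
  case 0 then show "f \<in> CBT G H n \<Longrightarrow> - f \<in> CBT G H n" by (simp add: cobs_def)
next
  case (Suc m)
  assume "f \<in> CBT G H n"
  then obtain a where "a \<in> CT G H m" "f = cobound G m a" using Suc by (auto simp: cobs_def)
  then have "- f = cobound G m (- a)" "- a \<in> CT G H m" by (simp_all add: cobound_neg CT_neg)
  then show ?thesis using Suc by (simp add: cobs_def)
qed
lemma CBT_zero: "0 \<in> CBT G H n"
proof (cases n)
  case 0 then show ?thesis by (simp add: cobs_def)
next
  case (Suc m)
  have "cobound G m 0 = 0" by simp
  then show ?thesis using Suc CT_zero by (auto simp: cobs_def image_iff intro!: bexI[of _ 0])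
qed

definition eqt :: "('g,'b) monoid_scheme \<Rightarrow> 'g set \<Rightarrow> nat \<Rightarrow> ('g list \<Rightarrow> 'r::comm_ring_1) \<Rightarrow> ('g list \<Rightarrow> 'r) \<Rightarrow> bool" where
  "eqt G H n f g \<longleftrightarrow> f - g \<in> CBT G H n"

lemma eqt_sym: "eqt G H n f g \<Longrightarrow> eqt G H n g f"
  using CBT_neg[of "f - g" G H n] by (simp add: eqt_def)
lemma eqt_trans: "eqt G H n f g \<Longrightarrow> eqt G H n g h \<Longrightarrow> eqt G H n f h"
  using CBT_add[of "f - g" G H n "g - h"] by (simp add: eqt_def)

lemma clst_eqt: "eqt G H n f f' \<Longrightarrow> clst G H n f = clst G H n f'"
proof -
  have *: "clst G H n f \<subseteq> clst G H n f'" if e: "eqt G H n f f'" for f f' :: "'a list \<Rightarrow> 'k::field"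
  proof
    fix g assume "g \<in> clst G H n f"
    then have "g \<in> CT G H n" "eqt G H n g f" by (auto simp: clst_def Ct_def eqt_def)
    then show "g \<in> clst G H n f'" using eqt_trans[OF _ e] by (auto simp: clst_def Ct_def eqt_def)
  qed
  assume "eqt G H n f f'"
  then show ?thesis using *[of f f'] *[of f' f] eqt_sym by blast
qed

lemma rep_clst: "f \<in> CT G H n \<Longrightarrow> rep (clst G H n f) \<in> CT G H n \<and> eqt G H n (rep (clst G H n f)) f"
proof -
  assume f: "f \<in> CT G H n"
  then have "f \<in> clst G H n f" using CBT_zero by (simp add: clst_def Ct_def)
  then have "rep (clst G H n f) \<in> clst G H n f" by (rule rep_mem)
  then show ?thesis by (simp add: clst_def Ct_def eqt_def)
qed

lemma Ht_rep: "X \<in> Ht G H r \<Longrightarrow> rep X \<in> CT G H r \<and> cobound G r (rep X) = 0 \<and> X = clst G H r (rep X)"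
proof -
  assume "X \<in> Ht G H r"
  then obtain f where f: "f \<in> CT G H r" "cobound G r f = 0" "X = clst G H r f" by (auto simp: Ht_def Ct_def)
  have r: "rep X \<in> CT G H r" "eqt G H r (rep X) f" using rep_clst[OF f(1)] f(3) by auto
  have "cobound G r (rep X) = cobound G r (rep X - f) + cobound G r f" by (simp add: cobound_diff)
  also have "\<dots> = 0" using r(2) f(2) cobound_CBT by (auto simp: eqt_def)
  finally show ?thesis using r clst_eqt f(3) by metis
qed

lemma kcomb_sum: "kcomb L = (\<Sum>j<length L. (\<lambda>xs. fst (L ! j) * of_int (snd (L ! j) xs)))"
  by (simp add: kcomb_def fun_eq_iff sum_fun_apply)

lemma cobound_kcomb: "cobound G n (kcomb L) = kcomb (map (\<lambda>(c, \<phi>). (c, cobound G n \<phi>)) L)"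
proof -
  have e: "cobound G n (\<lambda>xs. c * (of_int (\<phi> xs) :: 'k::field)) = (\<lambda>xs. c * of_int (cobound G n \<phi> xs))" for c \<phi>
    by (rule cobound_additive[where \<phi>="\<lambda>a. c * of_int a"]) (simp add: distrib_left)
  show ?thesis by (simp add: kcomb_sum cobound_sum e case_prod_beta)
qed

lemma kcomb_CT: "(\<And>j. j < length L \<Longrightarrow> snd (L ! j) \<in> CT G H n) \<Longrightarrow> kcomb L \<in> CT G H n"
  by (simp add: cochains_def kcomb_def)

lemma decomposition_T:
  assumes G: "group G" "finite (carrier G)" and f: "f \<in> CT G H r" "cobound G r f = 0"
    and p: "prime p" and ch: "CHAR('k::field) = p"
  shows "\<exists>L. (\<forall>j<length L. snd (L ! j) \<in> Ztp G H (int p) r) \<and> kcomb L = (f :: 'g list \<Rightarrow> 'k)"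
proof -
  have "finite (f ` tuples G (Suc r))" using finite_tuples[OF G(2)] by simp
  then obtain e :: "'k list" where e: "indep p e" "\<forall>v\<in>f ` tuples G (Suc r). \<exists>d. v = lc e d"
    using basis_exists[OF _ p ch] by blast
  have ex: "\<exists>d. f xs = lc e d" for xs
    using e(2) cochainsD(1)[OF f(1), of xs] by (cases "xs \<in> tuples G (Suc r)") (auto, metis lc_zero)
  define L where "L = map (\<lambda>i. (e ! i, \<lambda>xs. coord e (f xs) i)) [0..<length e]"
  have kb: "kcomb (map (\<lambda>i. (e ! i, F i)) [0..<length e]) xs = lc e (\<lambda>i. F i xs)" for F xs
    by (simp add: kcomb_def lc_def mult.commute)
  have kL: "kcomb L = f" using coord_lc[OF ex] by (simp add: fun_eq_iff L_def kb)
  have "snd (L ! j) \<in> Ztp G H (int p) r" if j: "j < length L" for j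
  proof -
    have jj: "j < length e" using j by (simp add: L_def)
    have C: "(\<lambda>xs. coord e (f xs) j) \<in> CT G H r" by (rule CT_comp[OF _ f(1)]) simp
    have "int p dvd cobound G r (\<lambda>xs. coord e (f xs) j) xs" for xs
    proof -
      have "0 = cobound G r (kcomb L) xs" using kL f(2) by simp
      also have "\<dots> = lc e (\<lambda>i. cobound G r (\<lambda>xs. coord e (f xs) i) xs)"
        by (simp add: cobound_kcomb L_def comp_def kb)
      finally have "lc e (\<lambda>i. cobound G r (\<lambda>xs. coord e (f xs) i) xs) = lc e (\<lambda>i. 0)" by simp
      from indep_dvd[OF e(1) this jj] show ?thesis by simp
    qed
    then show ?thesis using C jj by (simp add: Ztp_def L_def)
  qed
  then show ?thesis using kL by blast
qed

context tset begin

lemma thg_cochains: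
  assumes f: "f \<in> CT G HH n"
  shows "thg g f \<in> cochains G HH (cact G) (galg G) n"
proof (rule cochainsI)
  fix xs assume "xs \<notin> tuples G (Suc n)"
  then show "thg g f xs = 0" using cochainsD(1)[OF f] by (simp add: thg_def fun_eq_iff)
next
  fix xs show "thg g f xs \<in> galg G" using gG by (auto simp: thg_def galg_def)
next
  fix s xs assume s: "s \<in> HH" and xs: "xs \<in> tuples G (Suc n)"
  have sc: "s \<in> carrier G" using s HH_sub by auto
  have "(inv s \<otimes> y \<otimes> s = g) \<longleftrightarrow> y = g" if y: "y \<in> carrier G" for y
  proof
    assume "inv s \<otimes> y \<otimes> s = g"
    then have "s \<otimes> (inv s \<otimes> y \<otimes> s) \<otimes> inv s = s \<otimes> g \<otimes> inv s" by simp
    then show "y = g" using HH_comm[OF s] sc y by (simp add: m_assoc)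
  next
    assume "y = g"
    then show "inv s \<otimes> y \<otimes> s = g" using HH_comm[OF HH_inv[OF s]] sc by simp
  qed
  then show "thg g f (map (\<lambda>x. s \<otimes> x) xs) = cact G s (thg g f xs)"
    using cochainsD(3)[OF f s xs] gG by (auto simp: thg_def cact_def fun_eq_iff)
qed

lemma thg_cobound: "cobound G n (thg g f) = thg g (cobound G n (f :: 'g list \<Rightarrow> 'r::comm_ring_1))"
proof -
  have "cobound G n (\<lambda>xs. (\<lambda>a y. if y = g then a else (0::'r)) (f xs)) = (\<lambda>xs. (\<lambda>a y. if y = g then a else 0) (cobound G n f xs))"
    by (rule cobound_additive) (simp add: fun_eq_iff)
  then show ?thesis by (simp add: thg_def)
qed

lemma trg_comp:
  assumes "\<And>a b. \<psi> (a + b) = \<psi> a + \<psi> b"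
  shows "trg G HH (\<lambda>xs y. \<psi> (F xs y)) = (\<lambda>xs y. \<psi> (trg G HH F xs y))"
proof -
  have z: "\<psi> 0 = 0" using additive_zero[OF assms] .
  show ?thesis by (simp add: fun_eq_iff trg_apply z additive_sum[of \<psi>, OF assms])
qed

lemma trg_add: "trg G HH (F + F') = trg G HH F + trg G HH (F' :: 'g list \<Rightarrow> 'g \<Rightarrow> 'r::comm_ring_1)"
  by (simp add: fun_eq_iff trg_apply sum.distrib)

lemma trg_diff: "trg G HH (F - F') = trg G HH F - trg G HH (F' :: 'g list \<Rightarrow> 'g \<Rightarrow> 'r::comm_ring_1)"
  by (simp add: fun_eq_iff trg_apply sum_subtractf)

lemma trg_dvdp: "dvdp p F \<Longrightarrow> dvdp p (trg G HH F)"
  by (simp add: dvdp_def trg_apply dvd_sum)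

lemma trg_kcombG: "trg G HH (kcombG L) = kcombG (map (\<lambda>(c, \<phi>). (c, trg G HH \<phi>)) (L :: ('k::field \<times> _) list))"
proof (rule ext, rule ext)
  fix xs y
  have z: "sum_list (map (\<lambda>x. 0) L') = (0::'k)" for L' :: "('k \<times> ('g list \<Rightarrow> 'g \<Rightarrow> int)) list" by (induction L') auto
  show "trg G HH (kcombG L) xs y = kcombG (map (\<lambda>(c, \<phi>). (c, trg G HH \<phi>)) L) xs y"
  proof (cases "set xs \<subseteq> carrier G \<and> y \<in> carrier G")
    case True then show ?thesis
      by (simp add: trg_apply kcombG_list comp_def case_prod_beta of_int_sum sum_distrib_left sum_list_sum_swap)
  next
    case False
    have "trg G HH \<phi> xs y = 0" for \<phi> :: "'g list \<Rightarrow> 'g \<Rightarrow> int" by (simp only: trg_apply if_not_P[OF False])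
    moreover have "trg G HH (kcombG L) xs y = 0" by (simp only: trg_apply if_not_P[OF False])
    ultimately show ?thesis by (simp add: kcombG_list comp_def case_prod_beta z)
  qed
qed

lemma thg_kcomb: "thg g (kcomb L) = kcombG (map (\<lambda>(c, \<phi>). (c, thg g \<phi>)) L)"
  by (simp add: fun_eq_iff thg_def kcomb_def kcombG_def case_prod_beta)

lemma thg_diff: "thg g (f - f') = thg g f - thg g (f' :: 'g list \<Rightarrow> 'r::comm_ring_1)"
  by (simp add: fun_eq_iff thg_def)

end

locale gset = kset G p kw + tset G g for G :: "('g,'b) monoid_scheme" and p :: nat and kw :: "'k::field itself" and g :: 'g
begin

abbreviation TR :: "('g list \<Rightarrow> 'r::comm_ring_1) \<Rightarrow> 'g list \<Rightarrow> 'g \<Rightarrow> 'r" where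
  "TR f \<equiv> trg G HH (thg g f)"

lemma TR_CC: "f \<in> CT G HH n \<Longrightarrow> TR f \<in> CC G n"
  by (rule trg_CC[OF thg_cochains])

lemma TR_cobound: "cobound G n (TR f) = TR (cobound G n f)"
  by (simp add: trg_cobound thg_cobound)

lemma TR_diff: "TR (f - f') = TR f - TR (f' :: 'g list \<Rightarrow> 'r::comm_ring_1)"
  by (simp add: thg_diff trg_diff)

lemma TR_zero: "TR (0 :: 'g list \<Rightarrow> 'r::comm_ring_1) = 0"
  by (simp add: fun_eq_iff trg_apply thg_def zero_fun_def)

lemma TR_CB: "b \<in> CBT G HH n \<Longrightarrow> TR b \<in> CB G n"
proof (cases n)
  case 0
  assume "b \<in> CBT G HH n"
  then have "b = 0" using 0 by (simp add: cobs_def)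
  then show ?thesis by (simp add: TR_zero)
next
  case (Suc m)
  assume "b \<in> CBT G HH n"
  then obtain b' where b': "b' \<in> CT G HH m" "b = cobound G m b'" using Suc by (auto simp: cobs_def)
  then have "TR b = cobound G m (TR b')" by (simp add: TR_cobound)
  then show ?thesis using CB_cobound[OF is_group TR_CC[OF b'(1)]] Suc by simp
qed

lemma TR_smult: "TR (\<lambda>xs. c * F xs) = (\<lambda>xs y. c * TR F xs y)"
proof -
  have "thg g (\<lambda>xs. c * F xs) = (\<lambda>xs y. c * thg g F xs y)" by (simp add: thg_def fun_eq_iff)
  moreover have "trg G HH (\<lambda>xs y. c * thg g F xs y) = (\<lambda>xs y. c * trg G HH (thg g F) xs y)"
    by (rule trg_comp[where \<psi>="\<lambda>a. c * a"]) (simp add: distrib_left)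
  ultimately show ?thesis by simp
qed

lemma TR_kcomb: "TR (kcomb L) = kcombG (map (\<lambda>(c, \<phi>). (c, TR \<phi>)) (L :: ('k \<times> _) list))"
  by (simp add: thg_kcomb trg_kcombG comp_def split_def)

lemma TR_bock:
  assumes "\<phi> \<in> Ztp G HH (int p) r"
  shows "bockc G (int p) r (TR \<phi>) = TR (\<lambda>xs. cobound G r \<phi> xs div int p)"
proof -
  have e: "cobound G r \<phi> = (\<lambda>xs. int p * (cobound G r \<phi> xs div int p))"
    using assms by (auto simp: Ztp_def fun_eq_iff)
  have "cobound G r (TR \<phi>) = TR (\<lambda>xs. int p * (cobound G r \<phi> xs div int p))"
    by (subst e[symmetric]) (rule TR_cobound)
  also have "\<dots> = (\<lambda>xs y. int p * TR (\<lambda>xs. cobound G r \<phi> xs div int p) xs y)" by (rule TR_smult)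
  finally show ?thesis using p0 by (simp add: bockc_def fun_eq_iff)
qed

lemma gamma_eq: "gamma G g n Y = clsk G n (TR (rep Y :: 'g list \<Rightarrow> 'k))"
  by (simp add: gamma_def trc_trg thetac_thg)

theorem gamma_compat:
  assumes X: "X \<in> (Ht G HH r :: ('g list \<Rightarrow> 'k) set set)"
  shows "betak G p r (gamma G g r X) = gamma G g (Suc r) (BockH G HH (int p) r X)"
proof -
  define f where "f = rep X"
  have f: "f \<in> CT G HH r" "cobound G r f = 0" "X = clst G HH r f" using Ht_rep[OF X] by (auto simp: f_def)
  define P where "P L \<longleftrightarrow> (\<forall>j<length L. snd (L ! j) \<in> Ztp G HH (int p) r) \<and> clst G HH r (kcomb L) = X"
    for L :: "('k \<times> ('g list \<Rightarrow> int)) list"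
  obtain L1 where L1: "\<forall>j<length L1. snd (L1 ! j) \<in> Ztp G HH (int p) r" "kcomb L1 = f"
    using decomposition_T[OF is_group fin f(1,2) pr ch] by blast
  have "P L1" using L1 f(3) by (simp add: P_def)
  define L0 where "L0 = (SOME L. P L)"
  have P0: "P L0" unfolding L0_def by (rule someI[of P, OF \<open>P L1\<close>])
  have Z: "\<forall>x\<in>set L0. snd x \<in> Ztp G HH (int p) r" using P0 unfolding P_def by (metis in_set_conv_nth)
  have ZC: "snd x \<in> CT G HH r" "\<forall>xs. int p dvd cobound G r (snd x) xs" if "x \<in> set L0" for x
    using Z that by (auto simp: Ztp_def)
  define BL0 where "BL0 = map (\<lambda>(c, \<phi>). (c, \<lambda>xs. cobound G r \<phi> xs div int p)) L0"
  have BockH: "BockH G HH (int p) r X = clst G HH (Suc r) (kcomb BL0)"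
    by (simp add: BockH_def Let_def BL0_def L0_def P_def)
  have k0C: "kcomb L0 \<in> CT G HH r" by (rule kcomb_CT) (use ZC nth_mem in blast)
  have "f \<in> clst G HH r f" using f(1) CBT_zero by (simp add: clst_def Ct_def)
  then have "rep X \<in> clst G HH r (kcomb L0)" using P0 f(3) by (auto simp: P_def intro: rep_mem)
  then have rX: "eqt G HH r f (kcomb L0)" by (simp add: clst_def eqt_def f_def)
  define TL where "TL = map (\<lambda>(c, \<phi>). (c, TR \<phi>)) L0"
  have TLv: "validL G (int p) r TL"
  proof -
    have "TR (snd x) \<in> CC G r \<and> dvdp (int p) (cobound G r (TR (snd x)))" if "x \<in> set L0" for x
    proof -
      have "dvdp (int p) (thg g (cobound G r (snd x)))" using ZC(2)[OF that] by (simp add: dvdp_def thg_def)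
      then show ?thesis using TR_CC[OF ZC(1)[OF that]] by (simp add: TR_cobound trg_dvdp)
    qed
    then show ?thesis by (auto simp: validL_set TL_def)
  qed
  have kTL: "kcombG TL = TR (kcomb L0)" by (simp add: TR_kcomb TL_def)
  have TRf: "TR f \<in> CC G r" "cobound G r (TR f) = 0" using TR_CC[OF f(1)] f(2) by (simp_all add: TR_cobound TR_zero)
  have "eqk G r (TR f) (kcombG TL)"
    using TR_CB[of "f - kcomb L0" r] rX kTL TR_diff[of f "kcomb L0"] by (simp add: eqt_def eqk_def)
  then have e1: "eqk G r (kcombG TL) (TR f)" by (rule eqk_sym)
  have LHS: "betak G p r (gamma G g r X) = clsk G (Suc r) (kcombG (bmap G (int p) r TL))"
    unfolding gamma_eq f_def[symmetric] by (rule betak_clsk[OF TRf TLv e1])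
  have kB: "kcombG (bmap G (int p) r TL) = TR (kcomb BL0)"
  proof -
    have "bmap G (int p) r TL = map (\<lambda>(c, \<phi>). (c, TR (\<lambda>xs. cobound G r \<phi> xs div int p))) L0"
      using Z by (auto simp: bmap_def TL_def case_prod_beta TR_bock)
    then show ?thesis by (simp add: TR_kcomb BL0_def comp_def split_def)
  qed
  have kBC: "kcomb BL0 \<in> CT G HH (Suc r)"
  proof (rule kcomb_CT)
    fix j assume j: "j < length BL0"
    then have "L0 ! j \<in> set L0" by (simp add: BL0_def)
    then have "cobound G r (snd (L0 ! j)) \<in> CT G HH (Suc r)" using ZC CT_cobound[OF is_group HH_sub] by blast
    then have "(\<lambda>xs. cobound G r (snd (L0 ! j)) xs div int p) \<in> CT G HH (Suc r)" by (rule CT_comp[rotated]) simp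
    then show "snd (BL0 ! j) \<in> CT G HH (Suc r)" using j by (simp add: BL0_def case_prod_beta)
  qed
  define u where "u = rep (clst G HH (Suc r) (kcomb BL0))"
  have u: "eqt G HH (Suc r) u (kcomb BL0)" using rep_clst[OF kBC] by (simp add: u_def)
  have "eqk G (Suc r) (TR u) (TR (kcomb BL0))"
    using TR_CB[of "u - kcomb BL0" "Suc r"] u TR_diff[of u "kcomb BL0"] by (simp add: eqt_def eqk_def)
  then have RHS: "gamma G g (Suc r) (BockH G HH (int p) r X) = clsk G (Suc r) (TR (kcomb BL0))"
    by (simp add: gamma_eq BockH u_def[symmetric] clsk_eqk)
  show ?thesis using LHS RHS kB by simp
qed

end

theorem theorem2p4:
  fixes G :: "('g, 'b) monoid_scheme" and p :: nat and R :: "'g set"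
  assumes "group G" and "finite (carrier G)" and "prime p" and "p dvd order G"
    and "R \<subseteq> carrier G" and "\<one>\<^bsub>G\<^esub> \<in> R"
    and "\<forall>x\<in>carrier G. \<exists>!g. g \<in> R \<and> (\<exists>h\<in>carrier G. x = h \<otimes>\<^bsub>G\<^esub> g \<otimes>\<^bsub>G\<^esub> inv\<^bsub>G\<^esub> h)"
  shows
    "(\<forall>n. \<forall>X\<in>Hp G (int p) n. BockG G (int p) n X \<in> Hp G (int p) (Suc n))
     \<and> (\<forall>n. \<forall>X\<in>Hp G (int p) n.
           BockG G (int p) (Suc n) (BockG G (int p) n X) = clsp G (int p) (Suc (Suc n)) 0)
     \<and> (\<forall>m n. \<forall>X\<in>Hp G (int p) m. \<forall>Y\<in>Hp G (int p) n.
           BockG G (int p) (m + n) (Cup_p G (int p) m n X Y)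
           = Add_p G (int p) (Suc (m + n))
               (Cup_p G (int p) (Suc m) n (BockG G (int p) m X) Y)
               (Smul_p G (int p) (Suc (m + n)) ((-1) ^ m) (Cup_p G (int p) m (Suc n) X (BockG G (int p) n Y))))
     \<and> (\<forall>(k_witness :: 'k::field itself). CHAR('k) = p \<longrightarrow>
         (\<exists>\<beta> :: nat \<Rightarrow> ('g list \<Rightarrow> 'g \<Rightarrow> 'k) set \<Rightarrow> ('g list \<Rightarrow> 'g \<Rightarrow> 'k) set.
            (\<forall>r. \<forall>X\<in>Hk G r. \<beta> r X \<in> Hk G (Suc r))
          \<and> (\<forall>r c. \<forall>X\<in>Hk G r. \<forall>Y\<in>Hk G r.
               \<beta> r (Add_k G r (Smul_k G r c X) Y) = Add_k G (Suc r) (Smul_k G (Suc r) c (\<beta> r X)) (\<beta> r Y))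
          \<and> (\<forall>g\<in>R. \<forall>r. \<forall>X\<in>Ht G (centralizer G g) r.
               \<beta> r (gamma G g r X) = gamma G g (Suc r) (BockH G (centralizer G g) (int p) r X))
          \<and> (\<forall>r. \<forall>X\<in>Hk G r. \<beta> (Suc r) (\<beta> r X) = clsk G (Suc (Suc r)) 0)
          \<and> (\<forall>m n. \<forall>X\<in>Hk G m. \<forall>Y\<in>Hk G n.
               \<beta> (m + n) (Cup_k G m n X Y)
               = Add_k G (Suc (m + n)) (Cup_k G (Suc m) n (\<beta> m X) Y)
                   (Smul_k G (Suc (m + n)) ((-1) ^ m) (Cup_k G m (Suc n) X (\<beta> n Y))))))"
proof -
  have G: "group G" and fin: "finite (carrier G)" and pr: "prime p" using assms by auto
  have p0: "int p \<noteq> 0" using pr by (auto simp: prime_gt_0_nat)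
  have i: "\<forall>n. \<forall>X\<in>Hp G (int p) n. BockG G (int p) n X \<in> Hp G (int p) (Suc n)"
    using BockG_Hp[OF G p0] by blast
  have ii: "\<forall>n. \<forall>X\<in>Hp G (int p) n.
           BockG G (int p) (Suc n) (BockG G (int p) n X) = clsp G (int p) (Suc (Suc n)) 0"
    using BockG_BockG[OF G p0] by blast
  have iii: "\<forall>m n. \<forall>X\<in>Hp G (int p) m. \<forall>Y\<in>Hp G (int p) n.
           BockG G (int p) (m + n) (Cup_p G (int p) m n X Y)
           = Add_p G (int p) (Suc (m + n))
               (Cup_p G (int p) (Suc m) n (BockG G (int p) m X) Y)
               (Smul_p G (int p) (Suc (m + n)) ((-1) ^ m) (Cup_p G (int p) m (Suc n) X (BockG G (int p) n Y)))"
    using Hp_leibniz[OF G p0] by blast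
  have iv: "\<forall>(k_witness :: 'k::field itself). CHAR('k) = p \<longrightarrow>
         (\<exists>\<beta> :: nat \<Rightarrow> ('g list \<Rightarrow> 'g \<Rightarrow> 'k) set \<Rightarrow> ('g list \<Rightarrow> 'g \<Rightarrow> 'k) set.
            (\<forall>r. \<forall>X\<in>Hk G r. \<beta> r X \<in> Hk G (Suc r))
          \<and> (\<forall>r c. \<forall>X\<in>Hk G r. \<forall>Y\<in>Hk G r.
               \<beta> r (Add_k G r (Smul_k G r c X) Y) = Add_k G (Suc r) (Smul_k G (Suc r) c (\<beta> r X)) (\<beta> r Y))
          \<and> (\<forall>g\<in>R. \<forall>r. \<forall>X\<in>Ht G (centralizer G g) r.
               \<beta> r (gamma G g r X) = gamma G g (Suc r) (BockH G (centralizer G g) (int p) r X))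
          \<and> (\<forall>r. \<forall>X\<in>Hk G r. \<beta> (Suc r) (\<beta> r X) = clsk G (Suc (Suc r)) 0)
          \<and> (\<forall>m n. \<forall>X\<in>Hk G m. \<forall>Y\<in>Hk G n.
               \<beta> (m + n) (Cup_k G m n X Y)
               = Add_k G (Suc (m + n)) (Cup_k G (Suc m) n (\<beta> m X) Y)
                   (Smul_k G (Suc (m + n)) ((-1) ^ m) (Cup_k G m (Suc n) X (\<beta> n Y)))))"
  proof (intro allI impI)
    fix kw :: "'k::field itself"
    assume ch: "CHAR('k) = p"
    interpret K: kset G p kw using G fin pr ch by (simp add: kset_def)
    have gam: "\<forall>g\<in>R. \<forall>r. \<forall>X\<in>Ht G (centralizer G g) r.
               betak G p r (gamma G g r X) = gamma G g (Suc r) (BockH G (centralizer G g) (int p) r (X :: ('g list \<Rightarrow> 'k) set))"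
    proof (intro ballI allI)
      fix g r X assume g: "g \<in> R" and X: "X \<in> (Ht G (centralizer G g) r :: ('g list \<Rightarrow> 'k) set set)"
      have gG: "g \<in> carrier G" using g assms(5) by auto
      interpret GS: gset G p kw g using K.kset_axioms G fin gG by (simp add: gset_def tset_def tset_axioms_def)
      show "betak G p r (gamma G g r X) = gamma G g (Suc r) (BockH G (centralizer G g) (int p) r X)"
        by (rule GS.gamma_compat[OF X])
    qed
    show "\<exists>\<beta> :: nat \<Rightarrow> ('g list \<Rightarrow> 'g \<Rightarrow> 'k) set \<Rightarrow> ('g list \<Rightarrow> 'g \<Rightarrow> 'k) set.
            (\<forall>r. \<forall>X\<in>Hk G r. \<beta> r X \<in> Hk G (Suc r))
          \<and> (\<forall>r c. \<forall>X\<in>Hk G r. \<forall>Y\<in>Hk G r.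
               \<beta> r (Add_k G r (Smul_k G r c X) Y) = Add_k G (Suc r) (Smul_k G (Suc r) c (\<beta> r X)) (\<beta> r Y))
          \<and> (\<forall>g\<in>R. \<forall>r. \<forall>X\<in>Ht G (centralizer G g) r.
               \<beta> r (gamma G g r X) = gamma G g (Suc r) (BockH G (centralizer G g) (int p) r X))
          \<and> (\<forall>r. \<forall>X\<in>Hk G r. \<beta> (Suc r) (\<beta> r X) = clsk G (Suc (Suc r)) 0)
          \<and> (\<forall>m n. \<forall>X\<in>Hk G m. \<forall>Y\<in>Hk G n.
               \<beta> (m + n) (Cup_k G m n X Y)
               = Add_k G (Suc (m + n)) (Cup_k G (Suc m) n (\<beta> m X) Y)
                   (Smul_k G (Suc (m + n)) ((-1) ^ m) (Cup_k G m (Suc n) X (\<beta> n Y))))"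
      using K.betak_Hk K.betak_linear gam K.betak_betak K.betak_leibniz
      by (intro exI[of _ "betak G p"] conjI allI ballI) auto
  qed
  show ?thesis using i ii iii iv by blast
qed

end
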